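(* Let $\Lambda$ be an artin algebra, $n\ge2$, and let $f\colon X\to Y$ be an irreducible morphism in $\mathbf{C_n}({\rm proj}\,\Lambda)$ with $X$ or $Y$ indecomposable. (a) If $f$ is of type (ret), then ${\rm Ker}\,f$ is a non-zero indecomposable complex belonging to $\mathbf{C_n}({\rm proj}\,\Lambda)$. (b) If $f$ is of type (sec), then ${\rm Coker}\,f$ is an indecomposable complex belonging to $\mathbf{C_n}({\rm proj}\,\Lambda)$.
   Context: For an artin algebra $\Lambda$ and $n\ge 2$, $\mathbf{C_n}({\rm proj}\,\Lambda)$ is the full subcategory of the category of complexes of finitely generated right $\Lambda$-modules consisting of complexes $X=(X^i,d^i_X)$ with $X^i$ projective for all $i$ and $X^i=0$ for $i\notin\{1,\dots,n\}$; morphisms are chain maps. Kernels and cokernels are computed degreewise with induced differentials. A morphism in $\mathbf{C_n}({\rm proj}\,\Lambda)$ is irreducible if it is neither a section nor a retraction, and whenever $f=gh$ then $h$ is a section or $g$ is a retraction. An irreducible $f=\{f^i\}$ is of type (sec) if every $f^i$ is a section in ${\rm proj}\,\Lambda$, and of type (ret) if every $f^i$ is a retraction in ${\rm proj}\,\Lambda$. *)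

theory Defs
  imports "HOL-Algebra.Ideal"
begin

definition artinian_ring :: "('c, 'x) ring_scheme \<Rightarrow> bool" where
  "artinian_ring R \<longleftrightarrow> ring R \<and>
     (\<forall>I :: nat \<Rightarrow> 'c set. (\<forall>k. ideal (I k) R) \<and> (\<forall>k. I (Suc k) \<subseteq> I k)
         \<longrightarrow> (\<exists>N. \<forall>k\<ge>N. I k = I N))"

definition artin_algebra :: "('c, 'x) ring_scheme \<Rightarrow> ('c \<Rightarrow> 'r) \<Rightarrow> ('r, 'y) ring_scheme \<Rightarrow> bool" where
  "artin_algebra R phi L \<longleftrightarrow> ring L \<and> cring R \<and> artinian_ring R \<and>
     phi \<in> ring_hom R L \<and>
     (\<forall>c\<in>carrier R. \<forall>a\<in>carrier L. phi c \<otimes>\<^bsub>L\<^esub> a = a \<otimes>\<^bsub>L\<^esub> phi c) \<and>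
     (\<exists>S. finite S \<and> S \<subseteq> carrier L \<and>
        (\<forall>a\<in>carrier L. \<exists>c \<in> S \<rightarrow> carrier R.
            a = (\<Oplus>\<^bsub>L\<^esub>s\<in>S. phi (c s) \<otimes>\<^bsub>L\<^esub> s)))"

record ('a, 'r) rmodule = "'a ring" +
  rsmult :: "'a \<Rightarrow> 'r \<Rightarrow> 'a"

definition right_module :: "('r, 'y) ring_scheme \<Rightarrow> ('a, 'r, 'z) rmodule_scheme \<Rightarrow> bool" where
  "right_module L M \<longleftrightarrow> ring L \<and> abelian_group M \<and>
     (\<forall>x\<in>carrier M. \<forall>a\<in>carrier L. rsmult M x a \<in> carrier M) \<and>
     (\<forall>x\<in>carrier M. \<forall>y\<in>carrier M. \<forall>a\<in>carrier L.
        rsmult M (x \<oplus>\<^bsub>M\<^esub> y) a = rsmult M x a \<oplus>\<^bsub>M\<^esub> rsmult M y a) \<and>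
     (\<forall>x\<in>carrier M. \<forall>a\<in>carrier L. \<forall>b\<in>carrier L.
        rsmult M x (a \<oplus>\<^bsub>L\<^esub> b) = rsmult M x a \<oplus>\<^bsub>M\<^esub> rsmult M x b) \<and>
     (\<forall>x\<in>carrier M. \<forall>a\<in>carrier L. \<forall>b\<in>carrier L.
        rsmult M x (a \<otimes>\<^bsub>L\<^esub> b) = rsmult M (rsmult M x a) b) \<and>
     (\<forall>x\<in>carrier M. rsmult M x \<one>\<^bsub>L\<^esub> = x)"

text \<open>Module homomorphisms, taken extensional (undefined off the carrier) so that
  equality of morphisms is equality of functions.\<close>
definition mod_hom :: "('r, 'y) ring_scheme \<Rightarrow> ('a, 'r, 'z) rmodule_scheme
     \<Rightarrow> ('b, 'r, 'w) rmodule_scheme \<Rightarrow> ('a \<Rightarrow> 'b) set" where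
  "mod_hom L M N = {f. f \<in> carrier M \<rightarrow> carrier N \<and> f \<in> extensional (carrier M) \<and>
     (\<forall>x\<in>carrier M. \<forall>y\<in>carrier M. f (x \<oplus>\<^bsub>M\<^esub> y) = f x \<oplus>\<^bsub>N\<^esub> f y) \<and>
     (\<forall>x\<in>carrier M. \<forall>a\<in>carrier L. f (rsmult M x a) = rsmult N (f x) a)}"

definition submodule :: "('r, 'y) ring_scheme \<Rightarrow> 'a set \<Rightarrow> ('a, 'r, 'z) rmodule_scheme \<Rightarrow> bool" where
  "submodule L A M \<longleftrightarrow> A \<subseteq> carrier M \<and> \<zero>\<^bsub>M\<^esub> \<in> A \<and>
     (\<forall>x\<in>A. \<forall>y\<in>A. x \<oplus>\<^bsub>M\<^esub> y \<in> A) \<and> (\<forall>x\<in>A. \<ominus>\<^bsub>M\<^esub> x \<in> A) \<and>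
     (\<forall>x\<in>A. \<forall>a\<in>carrier L. rsmult M x a \<in> A)"

definition free_mod :: "('r, 'y) ring_scheme \<Rightarrow> nat \<Rightarrow> (nat \<Rightarrow> 'r, 'r) rmodule" where
  "free_mod L m = \<lparr> carrier = {0..<m} \<rightarrow>\<^sub>E carrier L,
      monoid.mult = (\<lambda>v w. undefined), one = undefined,
      zero = (\<lambda>i\<in>{0..<m}. \<zero>\<^bsub>L\<^esub>),
      add = (\<lambda>v w. \<lambda>i\<in>{0..<m}. v i \<oplus>\<^bsub>L\<^esub> w i),
      rsmult = (\<lambda>v a. \<lambda>i\<in>{0..<m}. v i \<otimes>\<^bsub>L\<^esub> a) \<rparr>"

text \<open>\<open>proj \<Lambda>\<close> = add \<open>\<Lambda>_\<Lambda>\<close>: the modules isomorphic to a direct summand of some \<open>\<Lambda>^m\<close>,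
  i.e. admitting a split epimorphism from a finitely generated free module.\<close>
definition fg_projective :: "('r, 'y) ring_scheme \<Rightarrow> ('a, 'r, 'z) rmodule_scheme \<Rightarrow> bool" where
  "fg_projective L P \<longleftrightarrow> right_module L P \<and>
     (\<exists>m p s. p \<in> mod_hom L (free_mod L m) P \<and> s \<in> mod_hom L P (free_mod L m) \<and>
              (\<forall>x\<in>carrier P. p (s x) = x))"

definition mod_section :: "('r, 'y) ring_scheme \<Rightarrow> ('a, 'r, 'z) rmodule_scheme
     \<Rightarrow> ('b, 'r, 'w) rmodule_scheme \<Rightarrow> ('a \<Rightarrow> 'b) \<Rightarrow> bool" where
  "mod_section L M N u \<longleftrightarrow> u \<in> mod_hom L M N \<and>
     (\<exists>r\<in>mod_hom L N M. \<forall>x\<in>carrier M. r (u x) = x)"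

definition mod_retraction :: "('r, 'y) ring_scheme \<Rightarrow> ('a, 'r, 'z) rmodule_scheme
     \<Rightarrow> ('b, 'r, 'w) rmodule_scheme \<Rightarrow> ('a \<Rightarrow> 'b) \<Rightarrow> bool" where
  "mod_retraction L M N u \<longleftrightarrow> u \<in> mod_hom L M N \<and>
     (\<exists>s\<in>mod_hom L N M. \<forall>y\<in>carrier N. u (s y) = y)"

record ('a, 'r) cplx =
  obj :: "int \<Rightarrow> ('a, 'r) rmodule"
  diff :: "int \<Rightarrow> 'a \<Rightarrow> 'a"

definition is_complex :: "('r, 'y) ring_scheme \<Rightarrow> ('a, 'r) cplx \<Rightarrow> bool" where
  "is_complex L X \<longleftrightarrow> (\<forall>i. right_module L (obj X i) \<and>
       diff X i \<in> mod_hom L (obj X i) (obj X (i + 1)) \<and>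
       (\<forall>x\<in>carrier (obj X i). diff X (i + 1) (diff X i x) = \<zero>\<^bsub>obj X (i + 2)\<^esub>))"

definition zero_mod :: "('a, 'r, 'z) rmodule_scheme \<Rightarrow> bool" where
  "zero_mod M \<longleftrightarrow> carrier M = {\<zero>\<^bsub>M\<^esub>}"

definition in_Cn :: "('r, 'y) ring_scheme \<Rightarrow> nat \<Rightarrow> ('a, 'r) cplx \<Rightarrow> bool" where
  "in_Cn L n X \<longleftrightarrow> is_complex L X \<and> (\<forall>i. fg_projective L (obj X i)) \<and>
     (\<forall>i. (i < 1 \<or> int n < i) \<longrightarrow> zero_mod (obj X i))"

definition chain_map :: "('r, 'y) ring_scheme \<Rightarrow> ('a, 'r) cplx \<Rightarrow> ('b, 'r) cplx
     \<Rightarrow> (int \<Rightarrow> 'a \<Rightarrow> 'b) \<Rightarrow> bool" where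
  "chain_map L X Y f \<longleftrightarrow> (\<forall>i. f i \<in> mod_hom L (obj X i) (obj Y i) \<and>
     (\<forall>x\<in>carrier (obj X i). f (i + 1) (diff X i x) = diff Y i (f i x)))"

definition cmp :: "('a, 'r) cplx \<Rightarrow> (int \<Rightarrow> 'b \<Rightarrow> 'c) \<Rightarrow> (int \<Rightarrow> 'a \<Rightarrow> 'b) \<Rightarrow> int \<Rightarrow> 'a \<Rightarrow> 'c" where
  "cmp X g h = (\<lambda>i. \<lambda>x\<in>carrier (obj X i). g i (h i x))"

definition cid :: "('a, 'r) cplx \<Rightarrow> int \<Rightarrow> 'a \<Rightarrow> 'a" where
  "cid X = (\<lambda>i. \<lambda>x\<in>carrier (obj X i). x)"

definition is_section :: "('r, 'y) ring_scheme \<Rightarrow> ('a, 'r) cplx \<Rightarrow> ('b, 'r) cplx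
     \<Rightarrow> (int \<Rightarrow> 'a \<Rightarrow> 'b) \<Rightarrow> bool" where
  "is_section L X Y f \<longleftrightarrow> chain_map L X Y f \<and>
     (\<exists>r. chain_map L Y X r \<and> cmp X r f = cid X)"

definition is_retraction :: "('r, 'y) ring_scheme \<Rightarrow> ('a, 'r) cplx \<Rightarrow> ('b, 'r) cplx
     \<Rightarrow> (int \<Rightarrow> 'a \<Rightarrow> 'b) \<Rightarrow> bool" where
  "is_retraction L X Y f \<longleftrightarrow> chain_map L X Y f \<and>
     (\<exists>s. chain_map L Y X s \<and> cmp Y f s = cid Y)"

text \<open>The intermediate object Z ranges over
  complexes whose modules have carriers in \<open>nat \<Rightarrow> 'r\<close>; every object of
  \<open>C_n(proj \<Lambda>)\<close> is isomorphic to such a complex (all terms are summands of some \<open>\<Lambda>^m\<close>).\<close>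
definition irreducible :: "('r, 'y) ring_scheme \<Rightarrow> nat \<Rightarrow> ('a, 'r) cplx \<Rightarrow> ('b, 'r) cplx
     \<Rightarrow> (int \<Rightarrow> 'a \<Rightarrow> 'b) \<Rightarrow> bool" where
  "irreducible L n X Y f \<longleftrightarrow> in_Cn L n X \<and> in_Cn L n Y \<and> chain_map L X Y f \<and>
     \<not> is_section L X Y f \<and> \<not> is_retraction L X Y f \<and>
     (\<forall>(Z :: (nat \<Rightarrow> 'r, 'r) cplx) g h. in_Cn L n Z \<and> chain_map L X Z h \<and> chain_map L Z Y g \<and>
         f = cmp X g h \<longrightarrow> is_section L X Z h \<or> is_retraction L Z Y g)"

definition type_sec :: "('r, 'y) ring_scheme \<Rightarrow> nat \<Rightarrow> ('a, 'r) cplx \<Rightarrow> ('b, 'r) cplx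
     \<Rightarrow> (int \<Rightarrow> 'a \<Rightarrow> 'b) \<Rightarrow> bool" where
  "type_sec L n X Y f \<longleftrightarrow> irreducible L n X Y f \<and>
     (\<forall>i. mod_section L (obj X i) (obj Y i) (f i))"

definition type_ret :: "('r, 'y) ring_scheme \<Rightarrow> nat \<Rightarrow> ('a, 'r) cplx \<Rightarrow> ('b, 'r) cplx
     \<Rightarrow> (int \<Rightarrow> 'a \<Rightarrow> 'b) \<Rightarrow> bool" where
  "type_ret L n X Y f \<longleftrightarrow> irreducible L n X Y f \<and>
     (\<forall>i. mod_retraction L (obj X i) (obj Y i) (f i))"

definition indecomposable :: "('r, 'y) ring_scheme \<Rightarrow> ('a, 'r) cplx \<Rightarrow> bool" where
  "indecomposable L X \<longleftrightarrow> is_complex L X \<and> \<not> (\<forall>i. zero_mod (obj X i)) \<and>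
     (\<forall>A B :: int \<Rightarrow> 'a set.
        (\<forall>i. submodule L (A i) (obj X i) \<and> submodule L (B i) (obj X i) \<and>
             diff X i ` A i \<subseteq> A (i + 1) \<and> diff X i ` B i \<subseteq> B (i + 1) \<and>
             A i \<inter> B i = {\<zero>\<^bsub>obj X i\<^esub>} \<and>
             carrier (obj X i) = {a \<oplus>\<^bsub>obj X i\<^esub> b | a b. a \<in> A i \<and> b \<in> B i})
        \<longrightarrow> (\<forall>i. A i = {\<zero>\<^bsub>obj X i\<^esub>}) \<or> (\<forall>i. B i = {\<zero>\<^bsub>obj X i\<^esub>}))"

definition ker_cplx :: "('a, 'r) cplx \<Rightarrow> ('b, 'r) cplx \<Rightarrow> (int \<Rightarrow> 'a \<Rightarrow> 'b) \<Rightarrow> ('a, 'r) cplx" where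
  "ker_cplx X Y f =
     (let K = (\<lambda>i. {x \<in> carrier (obj X i). f i x = \<zero>\<^bsub>obj Y i\<^esub>})
      in \<lparr> obj = (\<lambda>i. (obj X i)\<lparr>carrier := K i\<rparr>),
           diff = (\<lambda>i. \<lambda>x\<in>K i. diff X i x) \<rparr>)"

definition coset_of :: "('a, 'r) cplx \<Rightarrow> ('b, 'r) cplx \<Rightarrow> (int \<Rightarrow> 'a \<Rightarrow> 'b) \<Rightarrow> int \<Rightarrow> 'b \<Rightarrow> 'b set" where
  "coset_of X Y f i y = {y \<oplus>\<^bsub>obj Y i\<^esub> z | z. z \<in> f i ` carrier (obj X i)}"

definition coker_cplx :: "('a, 'r) cplx \<Rightarrow> ('b, 'r) cplx \<Rightarrow> (int \<Rightarrow> 'a \<Rightarrow> 'b) \<Rightarrow> ('b set, 'r) cplx" where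
  "coker_cplx X Y f =
     \<lparr> obj = (\<lambda>i. \<lparr> carrier = coset_of X Y f i ` carrier (obj Y i),
                    monoid.mult = (\<lambda>U V. undefined), one = undefined,
                    zero = coset_of X Y f i \<zero>\<^bsub>obj Y i\<^esub>,
                    add = (\<lambda>U V. {u \<oplus>\<^bsub>obj Y i\<^esub> v | u v. u \<in> U \<and> v \<in> V}),
                    rsmult = (\<lambda>U a. \<Union>u\<in>U. coset_of X Y f i (rsmult (obj Y i) u a)) \<rparr>),
       diff = (\<lambda>i. \<lambda>U\<in>coset_of X Y f i ` carrier (obj Y i).
                  \<Union>u\<in>U. coset_of X Y f (i + 1) (diff Y i u)) \<rparr>"

end

theory Submission
  imports Defs
begin

locale rmod =
  fixes L :: "('r,'y) ring_scheme" and M :: "('a,'r,'z) rmodule_scheme" (structure)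
  assumes rm: "right_module L M"
begin

sublocale abelian_group M using rm unfolding right_module_def by simp

lemma ringL: "ring L" using rm unfolding right_module_def by simp

lemma smult_closed[simp,intro]: "x \<in> carrier M \<Longrightarrow> a \<in> carrier L \<Longrightarrow> rsmult M x a \<in> carrier M"
  using rm unfolding right_module_def by blast

lemma smult_add1: "x \<in> carrier M \<Longrightarrow> y \<in> carrier M \<Longrightarrow> a \<in> carrier L \<Longrightarrow>
   rsmult M (x \<oplus> y) a = rsmult M x a \<oplus> rsmult M y a"
  using rm unfolding right_module_def by blast

lemma smult_zero[simp]: "a \<in> carrier L \<Longrightarrow> rsmult M \<zero> a = \<zero>"
proof -
  assume a: "a \<in> carrier L"
  have "rsmult M \<zero> a = rsmult M (\<zero> \<oplus> \<zero>) a" by simp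
  also have "\<dots> = rsmult M \<zero> a \<oplus> rsmult M \<zero> a" by (rule smult_add1) (simp_all add: a)
  finally have "rsmult M \<zero> a \<oplus> rsmult M \<zero> a = rsmult M \<zero> a" by simp
  thus ?thesis using a by (metis add.l_cancel_one smult_closed zero_closed)
qed

end

lemma rmodI_sub:
  assumes "right_module L M" "submodule L S M"
  shows "right_module L (M\<lparr>carrier := S\<rparr>)"
proof -
  interpret rmod L M by (rule rmod.intro) fact
  have S: "S \<subseteq> carrier M" "\<zero>\<^bsub>M\<^esub> \<in> S" "\<And>x y. x \<in> S \<Longrightarrow> y \<in> S \<Longrightarrow> x \<oplus>\<^bsub>M\<^esub> y \<in> S"
    "\<And>x. x \<in> S \<Longrightarrow> \<ominus>\<^bsub>M\<^esub> x \<in> S" "\<And>x a. x \<in> S \<Longrightarrow> a \<in> carrier L \<Longrightarrow> rsmult M x a \<in> S"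
    using assms(2) unfolding submodule_def by blast+
  have ag: "abelian_group (M\<lparr>carrier := S\<rparr>)"
  proof (rule abelian_groupI, goal_cases)
    case (1 x y) then show ?case using S by simp
  next
    case 2 then show ?case using S by simp
  next
    case (3 x y z) then show ?case using S by (simp add: a_assoc subsetD)
  next
    case (4 x y) then show ?case using S by (simp add: a_comm subsetD)
  next
    case (5 x) then show ?case using S by (simp add: subsetD)
  next
    case (6 x) then show ?case using S by (auto intro!: bexI[of _ "\<ominus>\<^bsub>M\<^esub> x"] simp: l_neg subsetD)
  qed
  show ?thesis using assms(1) ag S unfolding right_module_def by (auto simp: subsetD)
qed

lemma mod_homI:
  assumes "\<And>x. x \<in> carrier M \<Longrightarrow> f x \<in> carrier N"
    "\<And>x. x \<notin> carrier M \<Longrightarrow> f x = undefined"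
    "\<And>x y. x \<in> carrier M \<Longrightarrow> y \<in> carrier M \<Longrightarrow> f (x \<oplus>\<^bsub>M\<^esub> y) = f x \<oplus>\<^bsub>N\<^esub> f y"
    "\<And>x a. x \<in> carrier M \<Longrightarrow> a \<in> carrier L \<Longrightarrow> f (rsmult M x a) = rsmult N (f x) a"
  shows "f \<in> mod_hom L M N"
  using assms unfolding mod_hom_def extensional_def by auto

lemma hom_closed[intro]: "f \<in> mod_hom L M N \<Longrightarrow> x \<in> carrier M \<Longrightarrow> f x \<in> carrier N"
  unfolding mod_hom_def by auto
lemma hom_add: "f \<in> mod_hom L M N \<Longrightarrow> x \<in> carrier M \<Longrightarrow> y \<in> carrier M \<Longrightarrow> f (x \<oplus>\<^bsub>M\<^esub> y) = f x \<oplus>\<^bsub>N\<^esub> f y"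
  unfolding mod_hom_def by auto
lemma hom_smult: "f \<in> mod_hom L M N \<Longrightarrow> x \<in> carrier M \<Longrightarrow> a \<in> carrier L \<Longrightarrow> f (rsmult M x a) = rsmult N (f x) a"
  unfolding mod_hom_def by auto
lemma hom_ext: "f \<in> mod_hom L M N \<Longrightarrow> x \<notin> carrier M \<Longrightarrow> f x = undefined"
  unfolding mod_hom_def extensional_def by auto
lemma hom_eqI: "f \<in> mod_hom L M N \<Longrightarrow> g \<in> mod_hom L M N' \<Longrightarrow> (\<And>x. x \<in> carrier M \<Longrightarrow> f x = g x) \<Longrightarrow> f = g"
proof (rule ext)
  fix x assume a: "f \<in> mod_hom L M N" "g \<in> mod_hom L M N'" "\<And>x. x \<in> carrier M \<Longrightarrow> f x = g x"
  show "f x = g x"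
  proof (cases "x \<in> carrier M")
    case True thus ?thesis using a by simp
  next
    case False thus ?thesis using a hom_ext by metis
  qed
qed

lemma hom_zero:
  assumes "right_module L M" "right_module L N" "f \<in> mod_hom L M N"
  shows "f \<zero>\<^bsub>M\<^esub> = \<zero>\<^bsub>N\<^esub>"
proof -
  interpret M: rmod L M by (rule rmod.intro) fact
  interpret N: rmod L N by (rule rmod.intro) fact
  have c: "f \<zero>\<^bsub>M\<^esub> \<in> carrier N" using assms(3) by blast
  have "f \<zero>\<^bsub>M\<^esub> = f (\<zero>\<^bsub>M\<^esub> \<oplus>\<^bsub>M\<^esub> \<zero>\<^bsub>M\<^esub>)" by simp
  also have "\<dots> = f \<zero>\<^bsub>M\<^esub> \<oplus>\<^bsub>N\<^esub> f \<zero>\<^bsub>M\<^esub>" by (rule hom_add[OF assms(3)]) simp_all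
  finally have "f \<zero>\<^bsub>M\<^esub> \<oplus>\<^bsub>N\<^esub> f \<zero>\<^bsub>M\<^esub> = f \<zero>\<^bsub>M\<^esub>" by simp
  thus ?thesis using c N.add.l_cancel_one by blast
qed

lemma hom_neg:
  assumes "right_module L M" "right_module L N" "f \<in> mod_hom L M N" "x \<in> carrier M"
  shows "f (\<ominus>\<^bsub>M\<^esub> x) = \<ominus>\<^bsub>N\<^esub> f x"
proof -
  interpret M: rmod L M by (rule rmod.intro) fact
  interpret N: rmod L N by (rule rmod.intro) fact
  have "f (\<ominus>\<^bsub>M\<^esub> x) \<oplus>\<^bsub>N\<^esub> f x = f (\<ominus>\<^bsub>M\<^esub> x \<oplus>\<^bsub>M\<^esub> x)"
    by (rule hom_add[OF assms(3), symmetric]) (simp_all add: assms)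
  also have "\<dots> = \<zero>\<^bsub>N\<^esub>" using assms hom_zero by (simp add: M.l_neg)
  finally have e: "f (\<ominus>\<^bsub>M\<^esub> x) \<oplus>\<^bsub>N\<^esub> f x = \<zero>\<^bsub>N\<^esub>" .
  have c: "f (\<ominus>\<^bsub>M\<^esub> x) \<in> carrier N" "f x \<in> carrier N" using assms by auto
  show ?thesis using N.minus_equality[OF e c(2) c(1)] by simp
qed

lemma hom_minus:
  assumes "right_module L M" "right_module L N" "f \<in> mod_hom L M N" "x \<in> carrier M" "y \<in> carrier M"
  shows "f (x \<ominus>\<^bsub>M\<^esub> y) = f x \<ominus>\<^bsub>N\<^esub> f y"
proof -
  interpret M: rmod L M by (rule rmod.intro) fact
  have "f (x \<ominus>\<^bsub>M\<^esub> y) = f x \<oplus>\<^bsub>N\<^esub> f (\<ominus>\<^bsub>M\<^esub> y)"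
    unfolding a_minus_def by (rule hom_add[OF assms(3)]) (simp_all add: assms)
  thus ?thesis using hom_neg[OF assms(1-3,5)] by (simp add: a_minus_def)
qed

lemma rmod_add_closed: "right_module L M \<Longrightarrow> x \<in> carrier M \<Longrightarrow> y \<in> carrier M \<Longrightarrow> x \<oplus>\<^bsub>M\<^esub> y \<in> carrier M"
  by (rule abelian_monoid.a_closed) (simp_all add: right_module_def abelian_group_def)
lemma rmod_smult_closed: "right_module L M \<Longrightarrow> x \<in> carrier M \<Longrightarrow> a \<in> carrier L \<Longrightarrow> rsmult M x a \<in> carrier M"
  unfolding right_module_def by blast

lemma hom_comp:
  "right_module L M \<Longrightarrow> f \<in> mod_hom L M N \<Longrightarrow> g \<in> mod_hom L N P \<Longrightarrow> (\<lambda>x\<in>carrier M. g (f x)) \<in> mod_hom L M P"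
  by (rule mod_homI) (simp_all add: hom_add hom_smult hom_closed rmod_add_closed rmod_smult_closed)

lemma hom_id: "right_module L M \<Longrightarrow> (\<lambda>x\<in>carrier M. x) \<in> mod_hom L M M"
  by (rule mod_homI) (simp_all add: rmod_add_closed rmod_smult_closed)

lemma hom_addf:
  assumes "right_module L M" "right_module L N" "f \<in> mod_hom L M N" "g \<in> mod_hom L M N"
  shows "(\<lambda>x\<in>carrier M. f x \<oplus>\<^bsub>N\<^esub> g x) \<in> mod_hom L M N"
proof -
  interpret M: rmod L M by (rule rmod.intro) fact
  interpret N: rmod L N by (rule rmod.intro) fact
  show ?thesis
  proof (rule mod_homI, goal_cases)
    case (1 x) then show ?case using assms by auto
  next
    case (2 x) then show ?case by simp
  next
    case (3 x y)
    have c: "f x \<in> carrier N" "f y \<in> carrier N" "g x \<in> carrier N" "g y \<in> carrier N" using 3 assms by auto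
    have "f (x \<oplus>\<^bsub>M\<^esub> y) \<oplus>\<^bsub>N\<^esub> g (x \<oplus>\<^bsub>M\<^esub> y) = (f x \<oplus>\<^bsub>N\<^esub> f y) \<oplus>\<^bsub>N\<^esub> (g x \<oplus>\<^bsub>N\<^esub> g y)"
      using 3 assms by (simp add: hom_add)
    also have "\<dots> = (f x \<oplus>\<^bsub>N\<^esub> g x) \<oplus>\<^bsub>N\<^esub> (f y \<oplus>\<^bsub>N\<^esub> g y)" using c by (simp add: N.a_ac)
    finally show ?case using 3 by simp
  next
    case (4 x a) then show ?case using assms
      by (simp add: hom_smult hom_closed N.smult_add1)
  qed
qed

lemma rmod_smult_neg:
  assumes "right_module L M" "x \<in> carrier M" "a \<in> carrier L"
  shows "rsmult M (\<ominus>\<^bsub>M\<^esub> x) a = \<ominus>\<^bsub>M\<^esub> rsmult M x a"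
proof -
  interpret M: rmod L M by (rule rmod.intro) fact
  have e: "rsmult M (\<ominus>\<^bsub>M\<^esub> x) a \<oplus>\<^bsub>M\<^esub> rsmult M x a = \<zero>\<^bsub>M\<^esub>"
    using M.smult_add1[of "\<ominus>\<^bsub>M\<^esub> x" x a, symmetric] assms by (simp add: M.l_neg)
  have c: "rsmult M (\<ominus>\<^bsub>M\<^esub> x) a \<in> carrier M" "rsmult M x a \<in> carrier M" using assms by auto
  show ?thesis using M.minus_equality[OF e c(2) c(1)] by simp
qed

lemma hom_negf:
  assumes "right_module L M" "right_module L N" "f \<in> mod_hom L M N"
  shows "(\<lambda>x\<in>carrier M. \<ominus>\<^bsub>N\<^esub> f x) \<in> mod_hom L M N"
proof -
  interpret M: rmod L M by (rule rmod.intro) fact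
  interpret N: rmod L N by (rule rmod.intro) fact
  show ?thesis
  proof (rule mod_homI, goal_cases)
    case (1 x) then show ?case using assms by auto
  next
    case (2 x) then show ?case by simp
  next
    case (3 x y)
    have c: "f x \<in> carrier N" "f y \<in> carrier N" using 3 assms by auto
    show ?case using 3 assms c by (simp add: hom_add N.minus_add N.a_comm)
  next
    case (4 x a) then show ?case using assms
      by (simp add: hom_smult hom_closed rmod_smult_neg)
  qed
qed

lemma hom_minusf:
  assumes "right_module L M" "right_module L N" "f \<in> mod_hom L M N" "g \<in> mod_hom L M N"
  shows "(\<lambda>x\<in>carrier M. f x \<ominus>\<^bsub>N\<^esub> g x) \<in> mod_hom L M N"
proof -
  have "(\<lambda>x\<in>carrier M. f x \<oplus>\<^bsub>N\<^esub> (\<lambda>x\<in>carrier M. \<ominus>\<^bsub>N\<^esub> g x) x) \<in> mod_hom L M N"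
    by (rule hom_addf[OF assms(1,2,3) hom_negf[OF assms(1,2,4)]])
  moreover have "(\<lambda>x\<in>carrier M. f x \<oplus>\<^bsub>N\<^esub> (\<lambda>x\<in>carrier M. \<ominus>\<^bsub>N\<^esub> g x) x) = (\<lambda>x\<in>carrier M. f x \<ominus>\<^bsub>N\<^esub> g x)"
    by (rule ext) (simp add: a_minus_def)
  ultimately show ?thesis by simp
qed

lemma hom_restrict_dom:
  assumes "f \<in> mod_hom L M N" "submodule L S M"
  shows "restrict f S \<in> mod_hom L (M\<lparr>carrier := S\<rparr>) N"
proof -
  have S: "S \<subseteq> carrier M" "\<And>x y. x \<in> S \<Longrightarrow> y \<in> S \<Longrightarrow> x \<oplus>\<^bsub>M\<^esub> y \<in> S"
     "\<And>x a. x \<in> S \<Longrightarrow> a \<in> carrier L \<Longrightarrow> rsmult M x a \<in> S"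
    using assms(2) unfolding submodule_def by blast+
  show ?thesis
  proof (rule mod_homI, goal_cases)
    case (1 x) then show ?case using assms(1) S(1) by (simp add: hom_closed subsetD)
  next
    case (2 x) then show ?case by simp
  next
    case (3 x y) then show ?case using assms(1) S by (simp add: hom_add subsetD)
  next
    case (4 x a) then show ?case using assms(1) S by (simp add: hom_smult subsetD)
  qed
qed

lemma hom_restrict_cod:
  assumes "f \<in> mod_hom L M N" "\<And>x. x \<in> carrier M \<Longrightarrow> f x \<in> S"
  shows "f \<in> mod_hom L M (N\<lparr>carrier := S\<rparr>)"
proof (rule mod_homI, goal_cases)
  case (1 x) then show ?case using assms by simp
next
  case (2 x) then show ?case using assms(1) by (rule hom_ext[rotated])
next
  case (3 x y) then show ?case using assms(1) by (simp add: hom_add)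
next
  case (4 x a) then show ?case using assms(1) by (simp add: hom_smult)
qed

lemma hom_extend_cod:
  assumes "f \<in> mod_hom L M (N\<lparr>carrier := S\<rparr>)" "S \<subseteq> carrier N"
  shows "f \<in> mod_hom L M N"
proof (rule mod_homI, goal_cases)
  case (1 x) then show ?case using assms hom_closed[OF assms(1)] by force
next
  case (2 x) then show ?case using assms(1) by (rule hom_ext[rotated])
next
  case (3 x y) then show ?case using hom_add[OF assms(1)] by simp
next
  case (4 x a) then show ?case using hom_smult[OF assms(1)] by simp
qed

lemma free_add_closed: "ring L \<Longrightarrow> x \<in> carrier (free_mod L m) \<Longrightarrow> y \<in> carrier (free_mod L m) \<Longrightarrow>
   x \<oplus>\<^bsub>free_mod L m\<^esub> y \<in> carrier (free_mod L m)"
  unfolding free_mod_def by (auto simp: PiE_iff ring.ring_simprules)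

lemma free_smult_closed: "ring L \<Longrightarrow> x \<in> carrier (free_mod L m) \<Longrightarrow> a \<in> carrier L \<Longrightarrow>
   rsmult (free_mod L m) x a \<in> carrier (free_mod L m)"
  unfolding free_mod_def by (auto simp: PiE_iff ring.ring_simprules)

lemma hom_comp':
  assumes "\<And>x y. x \<in> carrier M \<Longrightarrow> y \<in> carrier M \<Longrightarrow> x \<oplus>\<^bsub>M\<^esub> y \<in> carrier M"
    "\<And>x a. x \<in> carrier M \<Longrightarrow> a \<in> carrier L \<Longrightarrow> rsmult M x a \<in> carrier M"
    "f \<in> mod_hom L M N" "g \<in> mod_hom L N P"
  shows "(\<lambda>x\<in>carrier M. g (f x)) \<in> mod_hom L M P"
  by (rule mod_homI) (simp_all add: assms(1,2) hom_add[OF assms(3)] hom_add[OF assms(4)] hom_smult[OF assms(3)] hom_smult[OF assms(4)] hom_closed[OF assms(3)] hom_closed[OF assms(4)])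

lemma fgp_rmod: "fg_projective L M \<Longrightarrow> right_module L M"
  unfolding fg_projective_def by simp

lemma sub_fgp:
  assumes fg: "fg_projective L M" and sub: "submodule L S M" and e: "e \<in> mod_hom L M M"
    and eS: "\<And>x. x \<in> carrier M \<Longrightarrow> e x \<in> S" and eid: "\<And>x. x \<in> S \<Longrightarrow> e x = x"
  shows "fg_projective L (M\<lparr>carrier := S\<rparr>)"
proof -
  have rm: "right_module L M" using fg by (rule fgp_rmod)
  have rL: "ring L" using rm unfolding right_module_def by simp
  obtain m p s where p: "p \<in> mod_hom L (free_mod L m) M" and s: "s \<in> mod_hom L M (free_mod L m)"
    and ps: "\<forall>x\<in>carrier M. p (s x) = x" using fg unfolding fg_projective_def by blast
  have SM: "S \<subseteq> carrier M" using sub unfolding submodule_def by blast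
  define p' where "p' = (\<lambda>v\<in>carrier (free_mod L m). e (p v))"
  have p'h: "p' \<in> mod_hom L (free_mod L m) M" unfolding p'_def
    by (rule hom_comp'[OF free_add_closed[OF rL] free_smult_closed[OF rL] p e])
  have p'h2: "p' \<in> mod_hom L (free_mod L m) (M\<lparr>carrier := S\<rparr>)"
    by (rule hom_restrict_cod[OF p'h]) (simp add: p'_def eS hom_closed[OF p])
  have s'h: "restrict s S \<in> mod_hom L (M\<lparr>carrier := S\<rparr>) (free_mod L m)"
    by (rule hom_restrict_dom[OF s sub])
  have "\<forall>x\<in>carrier (M\<lparr>carrier := S\<rparr>). p' (restrict s S x) = x"
  proof
    fix x assume x: "x \<in> carrier (M\<lparr>carrier := S\<rparr>)"
    hence xS: "x \<in> S" by simp
    hence xM: "x \<in> carrier M" using SM by blast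
    have "s x \<in> carrier (free_mod L m)" using s xM by (rule hom_closed)
    thus "p' (restrict s S x) = x" using xS xM ps eid by (simp add: p'_def)
  qed
  moreover have "right_module L (M\<lparr>carrier := S\<rparr>)" by (rule rmodI_sub[OF rm sub])
  ultimately show ?thesis unfolding fg_projective_def using p'h2 s'h by blast
qed

lemma mod_transfer:
  assumes rm: "right_module L M" and bij: "bij_betw \<phi> (carrier M) (carrier N)"
    and add: "\<And>x y. x \<in> carrier M \<Longrightarrow> y \<in> carrier M \<Longrightarrow> \<phi> (x \<oplus>\<^bsub>M\<^esub> y) = \<phi> x \<oplus>\<^bsub>N\<^esub> \<phi> y"
    and sm: "\<And>x a. x \<in> carrier M \<Longrightarrow> a \<in> carrier L \<Longrightarrow> \<phi> (rsmult M x a) = rsmult N (\<phi> x) a"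
    and z: "\<zero>\<^bsub>N\<^esub> = \<phi> \<zero>\<^bsub>M\<^esub>"
  shows "right_module L N" and "fg_projective L M \<Longrightarrow> fg_projective L N"
proof -
  interpret M: rmod L M by (rule rmod.intro) fact
  define \<psi> where "\<psi> = inv_into (carrier M) \<phi>"
  have \<phi>c: "\<And>x. x \<in> carrier M \<Longrightarrow> \<phi> x \<in> carrier N" using bij bij_betwE by blast
  have \<psi>c: "\<And>y. y \<in> carrier N \<Longrightarrow> \<psi> y \<in> carrier M" unfolding \<psi>_def
    by (metis bij bij_betw_def inv_into_into)
  have \<phi>\<psi>: "\<And>y. y \<in> carrier N \<Longrightarrow> \<phi> (\<psi> y) = y" unfolding \<psi>_def
    by (meson bij bij_betw_inv_into_right)
  have \<psi>\<phi>: "\<And>x. x \<in> carrier M \<Longrightarrow> \<psi> (\<phi> x) = x" unfolding \<psi>_def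
    by (meson bij bij_betw_inv_into_left)
  have addN: "\<And>u v. u \<in> carrier N \<Longrightarrow> v \<in> carrier N \<Longrightarrow> u \<oplus>\<^bsub>N\<^esub> v = \<phi> (\<psi> u \<oplus>\<^bsub>M\<^esub> \<psi> v)"
    using add \<psi>c \<phi>\<psi> by simp
  have smN: "\<And>u a. u \<in> carrier N \<Longrightarrow> a \<in> carrier L \<Longrightarrow> rsmult N u a = \<phi> (rsmult M (\<psi> u) a)"
    using sm \<psi>c \<phi>\<psi> by simp
  have \<psi>add: "\<And>u v. u \<in> carrier N \<Longrightarrow> v \<in> carrier N \<Longrightarrow> \<psi> (u \<oplus>\<^bsub>N\<^esub> v) = \<psi> u \<oplus>\<^bsub>M\<^esub> \<psi> v"
    using addN \<psi>\<phi> \<psi>c by simp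
  have \<psi>sm: "\<And>u a. u \<in> carrier N \<Longrightarrow> a \<in> carrier L \<Longrightarrow> \<psi> (rsmult N u a) = rsmult M (\<psi> u) a"
    using smN \<psi>\<phi> \<psi>c by simp
  have \<psi>z: "\<psi> \<zero>\<^bsub>N\<^esub> = \<zero>\<^bsub>M\<^esub>" using z \<psi>\<phi> by simp
  have \<psi>inj: "\<And>u v. u \<in> carrier N \<Longrightarrow> v \<in> carrier N \<Longrightarrow> \<psi> u = \<psi> v \<Longrightarrow> u = v"
    using \<phi>\<psi> by metis
  have addc: "\<And>u v. u \<in> carrier N \<Longrightarrow> v \<in> carrier N \<Longrightarrow> u \<oplus>\<^bsub>N\<^esub> v \<in> carrier N"
    using addN \<psi>c \<phi>c by simp
  have ag: "abelian_group N"
  proof (rule abelian_groupI, goal_cases)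
    case (1 x y) then show ?case using addN \<psi>c \<phi>c by simp
  next
    case 2 then show ?case using z \<phi>c by simp
  next
    case (3 x y z)
    have c: "x \<oplus>\<^bsub>N\<^esub> y \<in> carrier N" "y \<oplus>\<^bsub>N\<^esub> z \<in> carrier N" using 3 addN \<psi>c \<phi>c by simp_all
    show ?case by (rule \<psi>inj) (use 3 c in \<open>simp_all add: \<psi>add \<psi>c M.a_assoc addc\<close>)
  next
    case (4 x y)
    show ?case using 4 by (simp add: addN \<psi>c M.a_comm)
  next
    case (5 x) then show ?case using addN \<psi>z \<phi>\<psi> \<psi>c z \<phi>c by simp
  next
    case (6 x)
    show ?case
    proof (rule bexI[of _ "\<phi> (\<ominus>\<^bsub>M\<^esub> \<psi> x)"])
      show "\<phi> (\<ominus>\<^bsub>M\<^esub> \<psi> x) \<oplus>\<^bsub>N\<^esub> x = \<zero>\<^bsub>N\<^esub>"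
        using 6 addN[of "\<phi> (\<ominus>\<^bsub>M\<^esub> \<psi> x)" x] \<phi>c \<psi>c \<psi>\<phi> z by (simp add: M.l_neg)
      show "\<phi> (\<ominus>\<^bsub>M\<^esub> \<psi> x) \<in> carrier N" using 6 \<phi>c \<psi>c by simp
    qed
  qed
  show rN: "right_module L N" unfolding right_module_def
  proof (intro conjI ballI)
    show "ring L" by (rule M.ringL)
    show "abelian_group N" by (rule ag)
  next
    fix x a assume "x \<in> carrier N" "a \<in> carrier L"
    thus "rsmult N x a \<in> carrier N" using smN \<psi>c \<phi>c by simp
  next
    fix x y a assume "x \<in> carrier N" "y \<in> carrier N" "a \<in> carrier L"
    thus "rsmult N (x \<oplus>\<^bsub>N\<^esub> y) a = rsmult N x a \<oplus>\<^bsub>N\<^esub> rsmult N y a"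
      using smN addN \<psi>c \<phi>c \<psi>\<phi> M.smult_add1 by simp
  next
    fix x a b assume "x \<in> carrier N" "a \<in> carrier L" "b \<in> carrier L"
    thus "rsmult N x (a \<oplus>\<^bsub>L\<^esub> b) = rsmult N x a \<oplus>\<^bsub>N\<^esub> rsmult N x b"
      using smN addN \<psi>c \<phi>c \<psi>\<phi> rm unfolding right_module_def
      by (simp add: ring.ring_simprules(1)[OF M.ringL])
  next
    fix x a b assume "x \<in> carrier N" "a \<in> carrier L" "b \<in> carrier L"
    thus "rsmult N x (a \<otimes>\<^bsub>L\<^esub> b) = rsmult N (rsmult N x a) b"
      using smN \<psi>c \<phi>c \<psi>\<phi> rm unfolding right_module_def
      by (simp add: ring.ring_simprules(5)[OF M.ringL])
  next
    fix x assume "x \<in> carrier N"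
    thus "rsmult N x \<one>\<^bsub>L\<^esub> = x"
      using smN \<psi>c \<phi>c \<phi>\<psi> rm unfolding right_module_def
      by (simp add: ring.ring_simprules(6)[OF M.ringL])
  qed
  assume fg: "fg_projective L M"
  obtain m p s where p: "p \<in> mod_hom L (free_mod L m) M" and s: "s \<in> mod_hom L M (free_mod L m)"
    and ps: "\<forall>x\<in>carrier M. p (s x) = x" using fg unfolding fg_projective_def by blast
  have \<phi>h: "restrict \<phi> (carrier M) \<in> mod_hom L M N"
    by (rule mod_homI) (simp_all add: \<phi>c add sm)
  have \<psi>h: "restrict \<psi> (carrier N) \<in> mod_hom L N M"
    by (rule mod_homI) (simp_all add: \<psi>c \<psi>add \<psi>sm rmod_add_closed[OF rN] rmod_smult_closed[OF rN])
  have p'h: "(\<lambda>v\<in>carrier (free_mod L m). restrict \<phi> (carrier M) (p v)) \<in> mod_hom L (free_mod L m) N"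
    by (rule hom_comp'[OF free_add_closed[OF M.ringL] free_smult_closed[OF M.ringL] p \<phi>h])
  have s'h: "(\<lambda>v\<in>carrier N. s (restrict \<psi> (carrier N) v)) \<in> mod_hom L N (free_mod L m)"
    by (rule hom_comp[OF rN \<psi>h s])
  have "\<forall>x\<in>carrier N. (\<lambda>v\<in>carrier (free_mod L m). restrict \<phi> (carrier M) (p v))
          ((\<lambda>v\<in>carrier N. s (restrict \<psi> (carrier N) v)) x) = x"
  proof
    fix x assume x: "x \<in> carrier N"
    have "s (\<psi> x) \<in> carrier (free_mod L m)" using s \<psi>c[OF x] by (rule hom_closed)
    thus "(\<lambda>v\<in>carrier (free_mod L m). restrict \<phi> (carrier M) (p v))
          ((\<lambda>v\<in>carrier N. s (restrict \<psi> (carrier N) v)) x) = x"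
      using x ps \<psi>c \<phi>\<psi> by simp
  qed
  thus "fg_projective L N" unfolding fg_projective_def using rN p'h s'h by blast
qed

lemma cplx_rmod: "is_complex L X \<Longrightarrow> right_module L (obj X i)"
  unfolding is_complex_def by blast
lemma cplx_diff: "is_complex L X \<Longrightarrow> diff X i \<in> mod_hom L (obj X i) (obj X (i+1))"
  unfolding is_complex_def by blast
lemma cplx_dd: "is_complex L X \<Longrightarrow> x \<in> carrier (obj X i) \<Longrightarrow> diff X (i+1) (diff X i x) = \<zero>\<^bsub>obj X (i+2)\<^esub>"
  unfolding is_complex_def by blast
lemma inCn_cplx: "in_Cn L n X \<Longrightarrow> is_complex L X"
  unfolding in_Cn_def by blast
lemma inCn_fgp: "in_Cn L n X \<Longrightarrow> fg_projective L (obj X i)"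
  unfolding in_Cn_def by blast
lemma inCn_zero: "in_Cn L n X \<Longrightarrow> i < 1 \<or> int n < i \<Longrightarrow> zero_mod (obj X i)"
  unfolding in_Cn_def by blast

lemma chain_hom: "chain_map L X Y f \<Longrightarrow> f i \<in> mod_hom L (obj X i) (obj Y i)"
  unfolding chain_map_def by blast
lemma chain_comm: "chain_map L X Y f \<Longrightarrow> x \<in> carrier (obj X i) \<Longrightarrow> f (i + 1) (diff X i x) = diff Y i (f i x)"
  unfolding chain_map_def by blast

lemma cmp_apply[simp]: "x \<in> carrier (obj X i) \<Longrightarrow> cmp X g h i x = g i (h i x)"
  unfolding cmp_def by simp
lemma cid_apply[simp]: "x \<in> carrier (obj X i) \<Longrightarrow> cid X i x = x"
  unfolding cid_def by simp

lemma chain_cmp: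
  assumes "is_complex L X" "chain_map L X Y f" "chain_map L Y Z g"
  shows "chain_map L X Z (cmp X g f)"
  unfolding chain_map_def
proof (intro allI conjI ballI)
  fix i
  have "(\<lambda>x\<in>carrier (obj X i). g i (f i x)) \<in> mod_hom L (obj X i) (obj Z i)"
    by (rule hom_comp[OF cplx_rmod[OF assms(1)] chain_hom[OF assms(2)] chain_hom[OF assms(3)]])
  thus "cmp X g f i \<in> mod_hom L (obj X i) (obj Z i)" unfolding cmp_def by simp
  fix x assume x: "x \<in> carrier (obj X i)"
  have dx: "diff X i x \<in> carrier (obj X (i+1))" using cplx_diff[OF assms(1)] x by (rule hom_closed)
  have fx: "f i x \<in> carrier (obj Y i)" using chain_hom[OF assms(2)] x by (rule hom_closed)
  show "cmp X g f (i + 1) (diff X i x) = diff Z i (cmp X g f i x)"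
    using x dx fx by (simp add: chain_comm[OF assms(2)] chain_comm[OF assms(3)])
qed

lemma chain_cid: "is_complex L X \<Longrightarrow> chain_map L X X (cid X)"
  unfolding chain_map_def cid_def
  by (auto simp: hom_id cplx_rmod hom_closed[OF cplx_diff])

lemma chain_eqI:
  assumes "chain_map L X Y f" "chain_map L X Y' g" "\<And>i x. x \<in> carrier (obj X i) \<Longrightarrow> f i x = g i x"
  shows "f = g"
proof (rule ext)
  fix i show "f i = g i"
    by (rule hom_eqI[OF chain_hom[OF assms(1)] chain_hom[OF assms(2)]]) (simp add: assms(3))
qed

lemma cmp_eq_cid_iff:
  assumes "chain_map L X X h"
  shows "(h = cid X) \<longleftrightarrow> (\<forall>i. \<forall>x\<in>carrier (obj X i). h i x = x)"
proof
  assume "h = cid X" thus "\<forall>i. \<forall>x\<in>carrier (obj X i). h i x = x" by simp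
next
  assume a: "\<forall>i. \<forall>x\<in>carrier (obj X i). h i x = x"
  show "h = cid X"
  proof (rule ext)
    fix i show "h i = cid X i"
    proof (rule ext)
      fix x show "h i x = cid X i x"
        using a hom_ext[OF chain_hom[OF assms]] by (cases "x \<in> carrier (obj X i)") (simp_all add: cid_def)
    qed
  qed
qed

lemma rmod_zero_closed: "right_module L M \<Longrightarrow> \<zero>\<^bsub>M\<^esub> \<in> carrier M"
  by (rule abelian_monoid.zero_closed) (simp_all add: right_module_def abelian_group_def)

lemma rmod_neg_closed: "right_module L M \<Longrightarrow> x \<in> carrier M \<Longrightarrow> \<ominus>\<^bsub>M\<^esub> x \<in> carrier M"
  by (rule abelian_group.a_inv_closed) (simp_all add: right_module_def)

locale ctrans =
  fixes L :: "('r,'y) ring_scheme" and X :: "('a,'r) cplx" and Y :: "('b,'r) cplx"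
    and \<phi> :: "int \<Rightarrow> 'a \<Rightarrow> 'b"
  assumes cX: "is_complex L X"
    and bij: "\<And>i. bij_betw (\<phi> i) (carrier (obj X i)) (carrier (obj Y i))"
    and addp: "\<And>i x y. x \<in> carrier (obj X i) \<Longrightarrow> y \<in> carrier (obj X i) \<Longrightarrow>
          \<phi> i (x \<oplus>\<^bsub>obj X i\<^esub> y) = \<phi> i x \<oplus>\<^bsub>obj Y i\<^esub> \<phi> i y"
    and smp: "\<And>i x a. x \<in> carrier (obj X i) \<Longrightarrow> a \<in> carrier L \<Longrightarrow>
          \<phi> i (rsmult (obj X i) x a) = rsmult (obj Y i) (\<phi> i x) a"
    and zp: "\<And>i. \<zero>\<^bsub>obj Y i\<^esub> = \<phi> i \<zero>\<^bsub>obj X i\<^esub>"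
    and difp: "\<And>i x. x \<in> carrier (obj X i) \<Longrightarrow> \<phi> (i+1) (diff X i x) = diff Y i (\<phi> i x)"
    and dext: "\<And>i. diff Y i \<in> extensional (carrier (obj Y i))"
begin

definition \<psi> where "\<psi> i = inv_into (carrier (obj X i)) (\<phi> i)"

lemma \<phi>c: "x \<in> carrier (obj X i) \<Longrightarrow> \<phi> i x \<in> carrier (obj Y i)"
  using bij bij_betwE by blast
lemma \<psi>c: "y \<in> carrier (obj Y i) \<Longrightarrow> \<psi> i y \<in> carrier (obj X i)"
  unfolding \<psi>_def by (metis bij bij_betw_def inv_into_into)
lemma \<phi>\<psi>: "y \<in> carrier (obj Y i) \<Longrightarrow> \<phi> i (\<psi> i y) = y"
  unfolding \<psi>_def by (meson bij bij_betw_inv_into_right)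
lemma \<psi>\<phi>: "x \<in> carrier (obj X i) \<Longrightarrow> \<psi> i (\<phi> i x) = x"
  unfolding \<psi>_def by (meson bij bij_betw_inv_into_left)
lemma \<phi>inj: "x \<in> carrier (obj X i) \<Longrightarrow> x' \<in> carrier (obj X i) \<Longrightarrow> \<phi> i x = \<phi> i x' \<Longrightarrow> x = x'"
  using \<psi>\<phi> by metis

lemma rmX: "right_module L (obj X i)" using cX by (rule cplx_rmod)

lemma rmY: "right_module L (obj Y i)"
  by (rule mod_transfer(1)[OF rmX bij addp smp zp])

lemma fgY: "fg_projective L (obj X i) \<Longrightarrow> fg_projective L (obj Y i)"
  by (rule mod_transfer(2)[OF rmX bij addp smp zp])

lemma \<phi>hom: "restrict (\<phi> i) (carrier (obj X i)) \<in> mod_hom L (obj X i) (obj Y i)"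
  by (rule mod_homI) (simp_all add: \<phi>c addp smp rmod_add_closed[OF rmX] rmod_smult_closed[OF rmX])

lemma chain: "chain_map L X Y (\<lambda>i. restrict (\<phi> i) (carrier (obj X i)))"
  unfolding chain_map_def
  by (auto simp: \<phi>hom difp hom_closed[OF cplx_diff[OF cX]])

lemma cY: "is_complex L Y"
  unfolding is_complex_def
proof (intro allI conjI ballI)
  fix i
  show "right_module L (obj Y i)" by (rule rmY)
  show "diff Y i \<in> mod_hom L (obj Y i) (obj Y (i + 1))"
  proof (rule mod_homI, goal_cases)
    case (1 y)
    have "diff Y i y = \<phi> (i+1) (diff X i (\<psi> i y))" using 1 by (simp add: difp \<psi>c \<phi>\<psi>)
    thus ?case using \<phi>c hom_closed[OF cplx_diff[OF cX] \<psi>c[OF 1]] by simp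
  next
    case (2 y) then show ?case using dext unfolding extensional_def by blast
  next
    case (3 u v)
    have "u \<oplus>\<^bsub>obj Y i\<^esub> v = \<phi> i (\<psi> i u \<oplus>\<^bsub>obj X i\<^esub> \<psi> i v)" using 3 by (simp add: addp \<psi>c \<phi>\<psi>)
    hence "diff Y i (u \<oplus>\<^bsub>obj Y i\<^esub> v) = \<phi> (i+1) (diff X i (\<psi> i u \<oplus>\<^bsub>obj X i\<^esub> \<psi> i v))"
      using 3 by (simp add: difp \<psi>c rmod_add_closed[OF rmX])
    also have "\<dots> = \<phi> (i+1) (diff X i (\<psi> i u)) \<oplus>\<^bsub>obj Y (i+1)\<^esub> \<phi> (i+1) (diff X i (\<psi> i v))"
      using 3 by (simp add: hom_add[OF cplx_diff[OF cX]] \<psi>c addp hom_closed[OF cplx_diff[OF cX]])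
    also have "\<dots> = diff Y i u \<oplus>\<^bsub>obj Y (i+1)\<^esub> diff Y i v" using 3 by (simp add: difp \<psi>c \<phi>\<psi>)
    finally show ?case .
  next
    case (4 u a)
    have "rsmult (obj Y i) u a = \<phi> i (rsmult (obj X i) (\<psi> i u) a)" using 4 by (simp add: smp \<psi>c \<phi>\<psi>)
    hence "diff Y i (rsmult (obj Y i) u a) = \<phi> (i+1) (diff X i (rsmult (obj X i) (\<psi> i u) a))"
      using 4 by (simp add: difp \<psi>c rmod_smult_closed[OF rmX])
    also have "\<dots> = rsmult (obj Y (i+1)) (\<phi> (i+1) (diff X i (\<psi> i u))) a"
      using 4 by (simp add: hom_smult[OF cplx_diff[OF cX]] \<psi>c smp hom_closed[OF cplx_diff[OF cX]])
    also have "\<dots> = rsmult (obj Y (i+1)) (diff Y i u) a" using 4 by (simp add: difp \<psi>c \<phi>\<psi>)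
    finally show ?case .
  qed
next
  fix i y assume y: "y \<in> carrier (obj Y i)"
  have dx: "diff X i (\<psi> i y) \<in> carrier (obj X (i+1))" using hom_closed[OF cplx_diff[OF cX] \<psi>c[OF y]] .
  have "diff Y (i+1) (diff Y i y) = diff Y (i+1) (\<phi> (i+1) (diff X i (\<psi> i y)))" using y by (simp add: difp \<psi>c \<phi>\<psi>)
  also have "\<dots> = \<phi> (i+2) (diff X (i+1) (diff X i (\<psi> i y)))"
  proof -
    have ii: "i+1+1 = i+2" by simp
    show ?thesis using difp[OF dx] unfolding ii by simp
  qed
  also have "\<dots> = \<phi> (i+2) \<zero>\<^bsub>obj X (i+2)\<^esub>" using cplx_dd[OF cX \<psi>c[OF y]] by simp
  also have "\<dots> = \<zero>\<^bsub>obj Y (i+2)\<^esub>" by (simp add: zp)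
  finally show "diff Y (i + 1) (diff Y i y) = \<zero>\<^bsub>obj Y (i + 2)\<^esub>" .
qed

lemma zero_modY: "zero_mod (obj X i) \<Longrightarrow> zero_mod (obj Y i)"
proof -
  assume "zero_mod (obj X i)"
  hence "carrier (obj X i) = {\<zero>\<^bsub>obj X i\<^esub>}" unfolding zero_mod_def .
  moreover have "carrier (obj Y i) = \<phi> i ` carrier (obj X i)" using bij[of i] by (simp add: bij_betw_def)
  ultimately have "carrier (obj Y i) = {\<phi> i \<zero>\<^bsub>obj X i\<^esub>}" by simp
  thus ?thesis unfolding zero_mod_def by (simp add: zp)
qed

lemma zero_modX: "zero_mod (obj Y i) \<Longrightarrow> zero_mod (obj X i)"
proof -
  assume "zero_mod (obj Y i)"
  hence c: "carrier (obj Y i) = {\<phi> i \<zero>\<^bsub>obj X i\<^esub>}" unfolding zero_mod_def by (simp add: zp)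
  have z: "\<zero>\<^bsub>obj X i\<^esub> \<in> carrier (obj X i)" by (rule rmod_zero_closed[OF rmX])
  have "carrier (obj X i) = {\<zero>\<^bsub>obj X i\<^esub>}"
  proof
    show "carrier (obj X i) \<subseteq> {\<zero>\<^bsub>obj X i\<^esub>}"
    proof
      fix x assume x: "x \<in> carrier (obj X i)"
      hence "\<phi> i x = \<phi> i \<zero>\<^bsub>obj X i\<^esub>" using \<phi>c c by blast
      thus "x \<in> {\<zero>\<^bsub>obj X i\<^esub>}" using \<phi>inj[OF x z] by simp
    qed
  qed (simp add: z)
  thus ?thesis unfolding zero_mod_def .
qed

lemma inCnY: "in_Cn L n X \<Longrightarrow> in_Cn L n Y"
  unfolding in_Cn_def using cY fgY zero_modY by blast


lemma negp: "x \<in> carrier (obj X i) \<Longrightarrow> \<phi> i (\<ominus>\<^bsub>obj X i\<^esub> x) = \<ominus>\<^bsub>obj Y i\<^esub> \<phi> i x"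
proof -
  assume x: "x \<in> carrier (obj X i)"
  have "restrict (\<phi> i) (carrier (obj X i)) (\<ominus>\<^bsub>obj X i\<^esub> x) = \<ominus>\<^bsub>obj Y i\<^esub> restrict (\<phi> i) (carrier (obj X i)) x"
    by (rule hom_neg[OF rmX rmY \<phi>hom x])
  moreover have "\<ominus>\<^bsub>obj X i\<^esub> x \<in> carrier (obj X i)"
    using x by (rule rmod_neg_closed[OF rmX])
  ultimately show ?thesis using x by simp
qed

lemma sub_pull:
  assumes S: "submodule L S (obj Y i)"
  shows "submodule L {x\<in>carrier (obj X i). \<phi> i x \<in> S} (obj X i)"
proof -
  have S': "\<zero>\<^bsub>obj Y i\<^esub> \<in> S" "\<And>x y. x \<in> S \<Longrightarrow> y \<in> S \<Longrightarrow> x \<oplus>\<^bsub>obj Y i\<^esub> y \<in> S"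
    "\<And>x. x \<in> S \<Longrightarrow> \<ominus>\<^bsub>obj Y i\<^esub> x \<in> S" "\<And>x a. x \<in> S \<Longrightarrow> a \<in> carrier L \<Longrightarrow> rsmult (obj Y i) x a \<in> S"
    using S unfolding submodule_def by blast+
  interpret rmod L "obj X i" by (rule rmod.intro[OF rmX])
  show ?thesis unfolding submodule_def
    using S' by (auto simp: zp[symmetric] addp smp negp)
qed

lemma pull_zero:
  assumes S: "submodule L S (obj Y i)" and z: "{x\<in>carrier (obj X i). \<phi> i x \<in> S} = {\<zero>\<^bsub>obj X i\<^esub>}"
  shows "S = {\<zero>\<^bsub>obj Y i\<^esub>}"
proof
  have SY: "S \<subseteq> carrier (obj Y i)" "\<zero>\<^bsub>obj Y i\<^esub> \<in> S" using S unfolding submodule_def by blast+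
  show "{\<zero>\<^bsub>obj Y i\<^esub>} \<subseteq> S" using SY by simp
  show "S \<subseteq> {\<zero>\<^bsub>obj Y i\<^esub>}"
  proof
    fix y assume y: "y \<in> S"
    hence yc: "y \<in> carrier (obj Y i)" using SY by blast
    have "\<psi> i y \<in> {x\<in>carrier (obj X i). \<phi> i x \<in> S}" using y yc by (simp add: \<psi>c \<phi>\<psi>)
    hence "\<psi> i y = \<zero>\<^bsub>obj X i\<^esub>" using z by blast
    hence "y = \<phi> i \<zero>\<^bsub>obj X i\<^esub>" using \<phi>\<psi>[OF yc] by simp
    thus "y \<in> {\<zero>\<^bsub>obj Y i\<^esub>}" by (simp add: zp)
  qed
qed

lemma indecY:
  assumes ind: "indecomposable L X"
  shows "indecomposable L Y"
  unfolding indecomposable_def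
proof (intro conjI allI impI)
  show "is_complex L Y" by (rule cY)
  show "\<not> (\<forall>i. zero_mod (obj Y i))" using ind zero_modX unfolding indecomposable_def by blast
  fix A B :: "int \<Rightarrow> 'b set"
  assume H: "\<forall>i. submodule L (A i) (obj Y i) \<and> submodule L (B i) (obj Y i) \<and>
             diff Y i ` A i \<subseteq> A (i + 1) \<and> diff Y i ` B i \<subseteq> B (i + 1) \<and>
             A i \<inter> B i = {\<zero>\<^bsub>obj Y i\<^esub>} \<and>
             carrier (obj Y i) = {a \<oplus>\<^bsub>obj Y i\<^esub> b | a b. a \<in> A i \<and> b \<in> B i}"
  define A' where "A' i = {x\<in>carrier (obj X i). \<phi> i x \<in> A i}" for i
  define B' where "B' i = {x\<in>carrier (obj X i). \<phi> i x \<in> B i}" for i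
  have H': "\<forall>i. submodule L (A' i) (obj X i) \<and> submodule L (B' i) (obj X i) \<and>
             diff X i ` A' i \<subseteq> A' (i + 1) \<and> diff X i ` B' i \<subseteq> B' (i + 1) \<and>
             A' i \<inter> B' i = {\<zero>\<^bsub>obj X i\<^esub>} \<and>
             carrier (obj X i) = {a \<oplus>\<^bsub>obj X i\<^esub> b | a b. a \<in> A' i \<and> b \<in> B' i}"
  proof (intro allI conjI)
    fix i
    have Hi: "submodule L (A i) (obj Y i)" "submodule L (B i) (obj Y i)"
             "diff Y i ` A i \<subseteq> A (i + 1)" "diff Y i ` B i \<subseteq> B (i + 1)"
             "A i \<inter> B i = {\<zero>\<^bsub>obj Y i\<^esub>}"
             "carrier (obj Y i) = {a \<oplus>\<^bsub>obj Y i\<^esub> b | a b. a \<in> A i \<and> b \<in> B i}"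
      using H by blast+
    show "submodule L (A' i) (obj X i)" unfolding A'_def by (rule sub_pull[OF Hi(1)])
    show "submodule L (B' i) (obj X i)" unfolding B'_def by (rule sub_pull[OF Hi(2)])
    show "diff X i ` A' i \<subseteq> A' (i + 1)" unfolding A'_def using Hi(3)
      by (auto simp: difp hom_closed[OF cplx_diff[OF cX]])
    show "diff X i ` B' i \<subseteq> B' (i + 1)" unfolding B'_def using Hi(4)
      by (auto simp: difp hom_closed[OF cplx_diff[OF cX]])
    have z0: "\<zero>\<^bsub>obj X i\<^esub> \<in> carrier (obj X i)" by (rule rmod_zero_closed[OF rmX])
    show "A' i \<inter> B' i = {\<zero>\<^bsub>obj X i\<^esub>}"
    proof
      show "A' i \<inter> B' i \<subseteq> {\<zero>\<^bsub>obj X i\<^esub>}"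
      proof
        fix x assume x: "x \<in> A' i \<inter> B' i"
        hence xc: "x \<in> carrier (obj X i)" and "\<phi> i x \<in> A i \<inter> B i" unfolding A'_def B'_def by auto
        hence "\<phi> i x = \<phi> i \<zero>\<^bsub>obj X i\<^esub>" using Hi(5) zp by simp
        thus "x \<in> {\<zero>\<^bsub>obj X i\<^esub>}" using \<phi>inj[OF xc z0] by simp
      qed
      show "{\<zero>\<^bsub>obj X i\<^esub>} \<subseteq> A' i \<inter> B' i" using Hi(5) z0 zp unfolding A'_def B'_def by auto
    qed
    show "carrier (obj X i) = {a \<oplus>\<^bsub>obj X i\<^esub> b | a b. a \<in> A' i \<and> b \<in> B' i}"
    proof
      show "carrier (obj X i) \<subseteq> {a \<oplus>\<^bsub>obj X i\<^esub> b | a b. a \<in> A' i \<and> b \<in> B' i}"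
      proof
        fix x assume xc: "x \<in> carrier (obj X i)"
        hence "\<phi> i x \<in> carrier (obj Y i)" by (rule \<phi>c)
        then obtain a b where ab: "\<phi> i x = a \<oplus>\<^bsub>obj Y i\<^esub> b" "a \<in> A i" "b \<in> B i" using Hi(6) by blast
        have ac: "a \<in> carrier (obj Y i)" "b \<in> carrier (obj Y i)"
          using ab Hi(1,2) unfolding submodule_def by blast+
        have "\<phi> i (\<psi> i a \<oplus>\<^bsub>obj X i\<^esub> \<psi> i b) = \<phi> i x" using ab ac by (simp add: addp \<psi>c \<phi>\<psi>)
        hence "x = \<psi> i a \<oplus>\<^bsub>obj X i\<^esub> \<psi> i b"
          using \<phi>inj[OF xc rmod_add_closed[OF rmX \<psi>c[OF ac(1)] \<psi>c[OF ac(2)]]] by simp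
        moreover have "\<psi> i a \<in> A' i" "\<psi> i b \<in> B' i" unfolding A'_def B'_def using ab ac by (simp_all add: \<psi>c \<phi>\<psi>)
        ultimately show "x \<in> {a \<oplus>\<^bsub>obj X i\<^esub> b | a b. a \<in> A' i \<and> b \<in> B' i}" by blast
      qed
      show "{a \<oplus>\<^bsub>obj X i\<^esub> b | a b. a \<in> A' i \<and> b \<in> B' i} \<subseteq> carrier (obj X i)"
        unfolding A'_def B'_def using rmod_add_closed[OF rmX] by blast
    qed
  qed
  hence "(\<forall>i. A' i = {\<zero>\<^bsub>obj X i\<^esub>}) \<or> (\<forall>i. B' i = {\<zero>\<^bsub>obj X i\<^esub>})"
    using ind unfolding indecomposable_def by blast
  thus "(\<forall>i. A i = {\<zero>\<^bsub>obj Y i\<^esub>}) \<or> (\<forall>i. B i = {\<zero>\<^bsub>obj Y i\<^esub>})"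
    using pull_zero H unfolding A'_def B'_def by blast
qed

end

lemma chain_iso:
  assumes cX: "is_complex L X" and cY: "is_complex L Y" and f: "chain_map L X Y f"
    and bij: "\<And>i. bij_betw (f i) (carrier (obj X i)) (carrier (obj Y i))"
  shows "\<exists>g. chain_map L Y X g \<and> cmp X g f = cid X \<and> cmp Y f g = cid Y"
proof -
  define g where "g i = restrict (inv_into (carrier (obj X i)) (f i)) (carrier (obj Y i))" for i
  have gc: "\<And>i y. y \<in> carrier (obj Y i) \<Longrightarrow> g i y \<in> carrier (obj X i)" unfolding g_def
    by (metis bij bij_betw_def inv_into_into restrict_apply')
  have fg: "\<And>i y. y \<in> carrier (obj Y i) \<Longrightarrow> f i (g i y) = y" unfolding g_def
    using bij bij_betw_inv_into_right by fastforce
  have gf: "\<And>i x. x \<in> carrier (obj X i) \<Longrightarrow> g i (f i x) = x" unfolding g_def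
    using bij bij_betw_inv_into_left bij_betwE by fastforce
  have finj: "\<And>i x x'. x \<in> carrier (obj X i) \<Longrightarrow> x' \<in> carrier (obj X i) \<Longrightarrow> f i x = f i x' \<Longrightarrow> x = x'"
    using gf by metis
  note fh = chain_hom[OF f]
  have gh: "g i \<in> mod_hom L (obj Y i) (obj X i)" for i
  proof (rule mod_homI, goal_cases)
    case (1 y) then show ?case by (rule gc)
  next
    case (2 y) then show ?case by (simp add: g_def)
  next
    case (3 u v)
    have "f i (g i u \<oplus>\<^bsub>obj X i\<^esub> g i v) = u \<oplus>\<^bsub>obj Y i\<^esub> v" using 3 by (simp add: hom_add[OF fh] gc fg)
    hence "f i (g i u \<oplus>\<^bsub>obj X i\<^esub> g i v) = f i (g i (u \<oplus>\<^bsub>obj Y i\<^esub> v))"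
      using 3 by (simp add: fg rmod_add_closed[OF cplx_rmod[OF cY]])
    thus ?case using finj[OF rmod_add_closed[OF cplx_rmod[OF cX] gc[OF 3(1)] gc[OF 3(2)]]
       gc[OF rmod_add_closed[OF cplx_rmod[OF cY] 3]]] by simp
  next
    case (4 u a)
    have "f i (rsmult (obj X i) (g i u) a) = rsmult (obj Y i) u a" using 4 by (simp add: hom_smult[OF fh] gc fg)
    hence "f i (rsmult (obj X i) (g i u) a) = f i (g i (rsmult (obj Y i) u a))"
      using 4 by (simp add: fg rmod_smult_closed[OF cplx_rmod[OF cY]])
    thus ?case using finj[OF rmod_smult_closed[OF cplx_rmod[OF cX] gc[OF 4(1)] 4(2)]
       gc[OF rmod_smult_closed[OF cplx_rmod[OF cY] 4]]] by simp
  qed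
  have gch: "chain_map L Y X g" unfolding chain_map_def
  proof (intro allI conjI ballI)
    fix i show "g i \<in> mod_hom L (obj Y i) (obj X i)" by (rule gh)
    fix y assume y: "y \<in> carrier (obj Y i)"
    have dy: "diff Y i y \<in> carrier (obj Y (i+1))" using hom_closed[OF cplx_diff[OF cY] y] .
    have dgy: "diff X i (g i y) \<in> carrier (obj X (i+1))" using hom_closed[OF cplx_diff[OF cX] gc[OF y]] .
    have "f (i+1) (diff X i (g i y)) = diff Y i y" using chain_comm[OF f gc[OF y]] fg[OF y] by simp
    hence "f (i+1) (g (i+1) (diff Y i y)) = f (i+1) (diff X i (g i y))" using fg[OF dy] by simp
    thus "g (i + 1) (diff Y i y) = diff X i (g i y)" using finj[OF gc[OF dy] dgy] by simp
  qed
  have "cmp X g f = cid X"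
    by (rule iffD2[OF cmp_eq_cid_iff[OF chain_cmp[OF cX f gch]]]) (simp add: gf)
  moreover have "cmp Y f g = cid Y"
    by (rule iffD2[OF cmp_eq_cid_iff[OF chain_cmp[OF cY gch f]]]) (simp add: fg)
  ultimately show ?thesis using gch by blast
qed

lemma transport:
  fixes Z :: "('z, 'r) cplx" and L :: "('r,'y) ring_scheme"
  assumes Z: "in_Cn L n Z"
  shows "\<exists>(Z' :: (nat \<Rightarrow> 'r, 'r) cplx) \<iota> \<kappa>. in_Cn L n Z' \<and> chain_map L Z Z' \<iota> \<and> chain_map L Z' Z \<kappa> \<and>
           cmp Z \<kappa> \<iota> = cid Z \<and> cmp Z' \<iota> \<kappa> = cid Z'"
proof -
  have "\<forall>i. \<exists>s :: 'z \<Rightarrow> (nat \<Rightarrow> 'r). inj_on s (carrier (obj Z i))"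
  proof
    fix i
    obtain m p s where p: "p \<in> mod_hom L (free_mod L m) (obj Z i)" and s: "s \<in> mod_hom L (obj Z i) (free_mod L m)"
      and ps: "\<forall>x\<in>carrier (obj Z i). p (s x) = x" using inCn_fgp[OF Z, of i] unfolding fg_projective_def by blast
    have "inj_on s (carrier (obj Z i))" by (rule inj_on_inverseI[of _ p]) (use ps in blast)
    thus "\<exists>s :: 'z \<Rightarrow> (nat \<Rightarrow> 'r). inj_on s (carrier (obj Z i))" by blast
  qed
  then obtain s :: "int \<Rightarrow> 'z \<Rightarrow> (nat \<Rightarrow> 'r)" where s: "\<And>i. inj_on (s i) (carrier (obj Z i))" by metis
  define \<kappa>0 where "\<kappa>0 i = inv_into (carrier (obj Z i)) (s i)" for i
  define Z' :: "(nat \<Rightarrow> 'r, 'r) cplx" where "Z' = \<lparr> obj = (\<lambda>i. \<lparr> carrier = s i ` carrier (obj Z i),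
      monoid.mult = (\<lambda>u v. undefined), one = undefined, zero = s i \<zero>\<^bsub>obj Z i\<^esub>,
      add = (\<lambda>u v. s i (\<kappa>0 i u \<oplus>\<^bsub>obj Z i\<^esub> \<kappa>0 i v)),
      rsmult = (\<lambda>u a. s i (rsmult (obj Z i) (\<kappa>0 i u) a)) \<rparr>),
    diff = (\<lambda>i. \<lambda>u\<in>s i ` carrier (obj Z i). s (i+1) (diff Z i (\<kappa>0 i u))) \<rparr>"
  have k: "\<And>i x. x \<in> carrier (obj Z i) \<Longrightarrow> \<kappa>0 i (s i x) = x" unfolding \<kappa>0_def using s by simp
  have cZ: "is_complex L Z" by (rule inCn_cplx[OF Z])
  interpret ctrans L Z Z' s
  proof (unfold_locales, goal_cases)
    case 1 show ?case by (rule cZ)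
  next
    case (2 i) show ?case unfolding Z'_def using s by (simp add: bij_betw_def)
  next
    case (3 i x y) thus ?case unfolding Z'_def by (simp add: k)
  next
    case (4 i x a) thus ?case unfolding Z'_def by (simp add: k)
  next
    case (5 i) show ?case unfolding Z'_def by simp
  next
    case (6 i x) thus ?case unfolding Z'_def by (simp add: k)
  next
    case (7 i) show ?case unfolding Z'_def by simp
  qed
  have cZ': "in_Cn L n Z'" by (rule inCnY[OF Z])
  obtain \<kappa> where "chain_map L Z' Z \<kappa> \<and> cmp Z \<kappa> (\<lambda>i. restrict (s i) (carrier (obj Z i))) = cid Z \<and>
      cmp Z' (\<lambda>i. restrict (s i) (carrier (obj Z i))) \<kappa> = cid Z'"
    using chain_iso[OF cZ cY chain] bij by (auto simp: bij_betw_def inj_on_def)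
  thus ?thesis using cZ' chain by blast
qed

lemma irr_factor:
  fixes Z :: "('z, 'r) cplx"
  assumes irr: "irreducible L n X Y f" and Z: "in_Cn L n Z" and h: "chain_map L X Z h"
    and g: "chain_map L Z Y g" and fgh: "f = cmp X g h"
  shows "is_section L X Z h \<or> is_retraction L Z Y g"
proof -
  obtain Z' :: "(nat \<Rightarrow> 'r, 'r) cplx" and \<iota> \<kappa> where Z': "in_Cn L n Z'" and \<iota>: "chain_map L Z Z' \<iota>"
    and \<kappa>: "chain_map L Z' Z \<kappa>" and \<kappa>\<iota>: "cmp Z \<kappa> \<iota> = cid Z" and \<iota>\<kappa>: "cmp Z' \<iota> \<kappa> = cid Z'"
    using transport[OF Z] by blast
  have X: "in_Cn L n X" and Y: "in_Cn L n Y" using irr unfolding irreducible_def by blast+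
  note cX = inCn_cplx[OF X] and cY = inCn_cplx[OF Y] and cZ = inCn_cplx[OF Z] and cZ' = inCn_cplx[OF Z']
  have ki: "\<And>i z. z \<in> carrier (obj Z i) \<Longrightarrow> \<kappa> i (\<iota> i z) = z"
    using \<kappa>\<iota> by (metis cid_apply cmp_apply)
  have ik: "\<And>i z. z \<in> carrier (obj Z' i) \<Longrightarrow> \<iota> i (\<kappa> i z) = z"
    using \<iota>\<kappa> by (metis cid_apply cmp_apply)
  define h' where "h' = cmp X \<iota> h"
  define g' where "g' = cmp Z' g \<kappa>"
  have h': "chain_map L X Z' h'" unfolding h'_def by (rule chain_cmp[OF cX h \<iota>])
  have g': "chain_map L Z' Y g'" unfolding g'_def by (rule chain_cmp[OF cZ' \<kappa> g])
  have "f = cmp X g' h'" unfolding fgh cmp_def h'_def g'_def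
    by (intro ext restrict_ext) (simp add: hom_closed[OF chain_hom[OF h]] hom_closed[OF chain_hom[OF \<iota>]] ki)
  hence "is_section L X Z' h' \<or> is_retraction L Z' Y g'"
    using irr Z' h' g' unfolding irreducible_def by blast
  thus ?thesis
  proof
    assume "is_section L X Z' h'"
    then obtain r where r: "chain_map L Z' X r" and rh: "cmp X r h' = cid X" unfolding is_section_def by blast
    have "chain_map L Z X (cmp Z r \<iota>)" by (rule chain_cmp[OF cZ \<iota> r])
    moreover have "cmp X (cmp Z r \<iota>) h = cid X"
    proof -
      have "cmp X (cmp Z r \<iota>) h = cmp X r h'" unfolding h'_def cmp_def
        by (intro ext restrict_ext) (simp add: hom_closed[OF chain_hom[OF h]])
      thus ?thesis using rh by simp
    qed
    ultimately show ?thesis using h unfolding is_section_def by blast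
  next
    assume "is_retraction L Z' Y g'"
    then obtain t where t: "chain_map L Y Z' t" and gt: "cmp Y g' t = cid Y" unfolding is_retraction_def by blast
    have "chain_map L Y Z (cmp Y \<kappa> t)" by (rule chain_cmp[OF cY t \<kappa>])
    moreover have "cmp Y g (cmp Y \<kappa> t) = cid Y"
    proof -
      have "cmp Y g (cmp Y \<kappa> t) = cmp Y g' t" unfolding g'_def cmp_def
        by (intro ext restrict_ext) (simp add: hom_closed[OF chain_hom[OF t]])
      thus ?thesis using gt by simp
    qed
    ultimately show ?thesis using g unfolding is_retraction_def by blast
  qed
qed

context abelian_group begin
lemma ag_minus_self[simp]: "x \<in> carrier G \<Longrightarrow> x \<ominus> x = \<zero>"
  by (simp add: a_minus_def r_neg)
lemma ag_minus_zero[simp]: "x \<in> carrier G \<Longrightarrow> x \<ominus> \<zero> = x"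
  by (simp add: a_minus_def)
lemma ag_zero_minus[simp]: "x \<in> carrier G \<Longrightarrow> \<zero> \<ominus> x = \<ominus> x"
  by (simp add: a_minus_def)
lemma ag_add_minus_cancel[simp]: "x \<in> carrier G \<Longrightarrow> y \<in> carrier G \<Longrightarrow> (x \<oplus> y) \<ominus> y = x"
  by (simp add: a_minus_def a_assoc r_neg)
lemma ag_minus_add_cancel[simp]: "x \<in> carrier G \<Longrightarrow> y \<in> carrier G \<Longrightarrow> (x \<ominus> y) \<oplus> y = x"
  by (simp add: a_minus_def a_assoc l_neg)
lemma ag_add_minus_cancel2[simp]: "x \<in> carrier G \<Longrightarrow> y \<in> carrier G \<Longrightarrow> x \<oplus> (y \<ominus> x) = y"
  by (metis ag_minus_add_cancel a_comm minus_closed)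
lemma ag_add_minus_cancel3[simp]: "x \<in> carrier G \<Longrightarrow> y \<in> carrier G \<Longrightarrow> (x \<oplus> y) \<ominus> x = y"
  by (metis ag_add_minus_cancel a_comm)
lemma ag_minus_eq0: "x \<in> carrier G \<Longrightarrow> y \<in> carrier G \<Longrightarrow> (x \<ominus> y = \<zero>) = (x = y)"
  by (metis ag_minus_add_cancel ag_minus_self l_zero)
lemma ag_eq_minus: "x \<in> carrier G \<Longrightarrow> y \<in> carrier G \<Longrightarrow> z \<in> carrier G \<Longrightarrow> (x = y \<ominus> z) = (x \<oplus> z = y)"
  by (metis ag_add_minus_cancel ag_minus_add_cancel)
lemma ag_minus_minus2[simp]: "x \<in> carrier G \<Longrightarrow> y \<in> carrier G \<Longrightarrow> x \<ominus> (x \<ominus> y) = y"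
  by (metis ag_add_minus_cancel2 ag_eq_minus minus_closed)
lemma ag_sub_sub: "x \<in> carrier G \<Longrightarrow> y \<in> carrier G \<Longrightarrow> z \<in> carrier G \<Longrightarrow> (x \<ominus> y) \<ominus> z = x \<ominus> (y \<oplus> z)"
  by (simp add: a_minus_def minus_add a_ac)
lemma ag_swap: "a \<in> carrier G \<Longrightarrow> b \<in> carrier G \<Longrightarrow> c \<in> carrier G \<Longrightarrow> d \<in> carrier G \<Longrightarrow>
   (a \<oplus> b) \<ominus> (c \<oplus> d) = (a \<ominus> c) \<oplus> (b \<ominus> d)"
  by (simp add: a_minus_def minus_add a_ac)
lemma ag_sub_add: "a \<in> carrier G \<Longrightarrow> b \<in> carrier G \<Longrightarrow> c \<in> carrier G \<Longrightarrow> (a \<ominus> b) \<oplus> c = (a \<oplus> c) \<ominus> b"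
  by (simp add: a_minus_def a_ac)
lemma ag_swap2: "a \<in> carrier G \<Longrightarrow> b \<in> carrier G \<Longrightarrow> c \<in> carrier G \<Longrightarrow> d \<in> carrier G \<Longrightarrow>
   (a \<ominus> b) \<ominus> (c \<ominus> d) = (a \<ominus> c) \<ominus> (b \<ominus> d)"
  by (simp add: a_minus_def minus_add a_ac minus_minus)
lemma ag_add_sub: "a \<in> carrier G \<Longrightarrow> b \<in> carrier G \<Longrightarrow> c \<in> carrier G \<Longrightarrow> a \<oplus> (b \<ominus> c) = (a \<oplus> b) \<ominus> c"
  by (simp add: a_minus_def a_ac)
end

lemma rmod_ag: "right_module L M \<Longrightarrow> abelian_group M"
  unfolding right_module_def by simp

lemma rmod_smult_minus:
  assumes "right_module L M" "x \<in> carrier M" "y \<in> carrier M" "a \<in> carrier L"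
  shows "rsmult M (x \<ominus>\<^bsub>M\<^esub> y) a = rsmult M x a \<ominus>\<^bsub>M\<^esub> rsmult M y a"
proof -
  interpret rmod L M by (rule rmod.intro) fact
  show ?thesis using assms by (simp add: a_minus_def smult_add1 rmod_smult_neg)
qed

lemma ker_sub:
  assumes "right_module L M" "right_module L N" "f \<in> mod_hom L M N"
  shows "submodule L {x\<in>carrier M. f x = \<zero>\<^bsub>N\<^esub>} M"
proof -
  interpret M: rmod L M by (rule rmod.intro) fact
  interpret N: rmod L N by (rule rmod.intro) fact
  show ?thesis unfolding submodule_def
    using assms by (auto simp: hom_zero hom_add hom_neg hom_smult)
qed

lemma ker_obj[simp]: "obj (ker_cplx X Y f) i = (obj X i)\<lparr>carrier := {x\<in>carrier (obj X i). f i x = \<zero>\<^bsub>obj Y i\<^esub>}\<rparr>"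
  unfolding ker_cplx_def Let_def by simp
lemma ker_diff[simp]: "diff (ker_cplx X Y f) i = (\<lambda>x\<in>{x\<in>carrier (obj X i). f i x = \<zero>\<^bsub>obj Y i\<^esub>}. diff X i x)"
  unfolding ker_cplx_def Let_def by simp

lemma ker_complex:
  assumes cX: "is_complex L X" and cY: "is_complex L Y" and f: "chain_map L X Y f"
  shows "is_complex L (ker_cplx X Y f)"
  unfolding is_complex_def
proof (intro allI conjI ballI)
  fix i
  define Ki where "Ki j = {x\<in>carrier (obj X j). f j x = \<zero>\<^bsub>obj Y j\<^esub>}" for j
  have sub: "submodule L (Ki j) (obj X j)" for j unfolding Ki_def
    by (rule ker_sub[OF cplx_rmod[OF cX] cplx_rmod[OF cY] chain_hom[OF f]])
  show "right_module L (obj (ker_cplx X Y f) i)" using rmodI_sub[OF cplx_rmod[OF cX] sub] by (simp add: Ki_def)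
  have dK: "diff X i x \<in> Ki (i+1)" if "x \<in> Ki i" for x
  proof -
    have x: "x \<in> carrier (obj X i)" "f i x = \<zero>\<^bsub>obj Y i\<^esub>" using that by (simp_all add: Ki_def)
    have "f (i+1) (diff X i x) = diff Y i \<zero>\<^bsub>obj Y i\<^esub>" using chain_comm[OF f x(1)] x(2) by simp
    also have "\<dots> = \<zero>\<^bsub>obj Y (i+1)\<^esub>" by (rule hom_zero[OF cplx_rmod[OF cY] cplx_rmod[OF cY] cplx_diff[OF cY]])
    finally show ?thesis using hom_closed[OF cplx_diff[OF cX] x(1)] by (simp add: Ki_def)
  qed
  have "restrict (diff X i) (Ki i) \<in> mod_hom L ((obj X i)\<lparr>carrier := Ki i\<rparr>) (obj X (i+1))"
    by (rule hom_restrict_dom[OF cplx_diff[OF cX] sub])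
  hence "restrict (diff X i) (Ki i) \<in> mod_hom L ((obj X i)\<lparr>carrier := Ki i\<rparr>) ((obj X (i+1))\<lparr>carrier := Ki (i+1)\<rparr>)"
    by (rule hom_restrict_cod) (simp add: dK)
  thus "diff (ker_cplx X Y f) i \<in> mod_hom L (obj (ker_cplx X Y f) i) (obj (ker_cplx X Y f) (i + 1))"
    by (simp add: Ki_def)
  fix x assume "x \<in> carrier (obj (ker_cplx X Y f) i)"
  hence x: "x \<in> Ki i" by (simp add: Ki_def)
  show "diff (ker_cplx X Y f) (i + 1) (diff (ker_cplx X Y f) i x) = \<zero>\<^bsub>obj (ker_cplx X Y f) (i + 2)\<^esub>"
    using x dK[OF x] cplx_dd[OF cX, of x i] by (simp add: Ki_def)
qed


lemma ker_inCn:
  assumes X: "in_Cn L n X" and Y: "in_Cn L n Y" and f: "chain_map L X Y f"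
    and ret: "\<And>i. mod_retraction L (obj X i) (obj Y i) (f i)"
  shows "in_Cn L n (ker_cplx X Y f)"
  unfolding in_Cn_def
proof (intro conjI allI impI)
  note cX = inCn_cplx[OF X] and cY = inCn_cplx[OF Y]
  show "is_complex L (ker_cplx X Y f)" by (rule ker_complex[OF cX cY f])
  fix i
  define Ki where "Ki = {x\<in>carrier (obj X i). f i x = \<zero>\<^bsub>obj Y i\<^esub>}"
  note rX = cplx_rmod[OF cX, of i] and rY = cplx_rmod[OF cY, of i] and fh = chain_hom[OF f, of i]
  interpret Xi: rmod L "obj X i" by (rule rmod.intro) fact
  interpret Yi: rmod L "obj Y i" by (rule rmod.intro) fact
  have sub: "submodule L Ki (obj X i)" unfolding Ki_def by (rule ker_sub[OF rX rY fh])
  obtain t where t: "t \<in> mod_hom L (obj Y i) (obj X i)" and ft: "\<And>y. y \<in> carrier (obj Y i) \<Longrightarrow> f i (t y) = y"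
    using ret[of i] unfolding mod_retraction_def by blast
  define e where "e = (\<lambda>x\<in>carrier (obj X i). (\<lambda>x\<in>carrier (obj X i). x) x \<ominus>\<^bsub>obj X i\<^esub> (\<lambda>x\<in>carrier (obj X i). t (f i x)) x)"
  have eh: "e \<in> mod_hom L (obj X i) (obj X i)" unfolding e_def
    by (rule hom_minusf[OF rX rX hom_id[OF rX] hom_comp[OF rX fh t]])
  have ev: "\<And>x. x \<in> carrier (obj X i) \<Longrightarrow> e x = x \<ominus>\<^bsub>obj X i\<^esub> t (f i x)" unfolding e_def by simp
  have tc: "\<And>x. x \<in> carrier (obj X i) \<Longrightarrow> t (f i x) \<in> carrier (obj X i)" using t fh by (blast intro: hom_closed)
  have eS: "e x \<in> Ki" if x: "x \<in> carrier (obj X i)" for x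
  proof -
    have "f i (e x) = f i x \<ominus>\<^bsub>obj Y i\<^esub> f i (t (f i x))" using x tc by (simp add: ev hom_minus[OF rX rY fh])
    also have "\<dots> = \<zero>\<^bsub>obj Y i\<^esub>" using x ft hom_closed[OF fh x] by simp
    finally show ?thesis using x tc by (simp add: Ki_def ev)
  qed
  have eid: "e x = x" if x: "x \<in> Ki" for x
    using x hom_zero[OF rY rX t] by (simp add: Ki_def ev)
  have "fg_projective L ((obj X i)\<lparr>carrier := Ki\<rparr>)"
    by (rule sub_fgp[OF inCn_fgp[OF X] sub eh eS eid])
  thus "fg_projective L (obj (ker_cplx X Y f) i)" by (simp add: Ki_def)
next
  fix i :: int assume "i < 1 \<or> int n < i"
  hence z: "carrier (obj X i) = {\<zero>\<^bsub>obj X i\<^esub>}" using inCn_zero[OF X] unfolding zero_mod_def by blast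
  have "f i \<zero>\<^bsub>obj X i\<^esub> = \<zero>\<^bsub>obj Y i\<^esub>"
    by (rule hom_zero[OF cplx_rmod[OF inCn_cplx[OF X]] cplx_rmod[OF inCn_cplx[OF Y]] chain_hom[OF f]])
  thus "zero_mod (obj (ker_cplx X Y f) i)" unfolding zero_mod_def using z by auto
qed

lemma bij_chain_section:
  assumes cX: "is_complex L X" and cY: "is_complex L Y" and f: "chain_map L X Y f"
    and bij: "\<And>i. bij_betw (f i) (carrier (obj X i)) (carrier (obj Y i))"
  shows "is_section L X Y f" "is_retraction L X Y f"
  using chain_iso[OF assms] f unfolding is_section_def is_retraction_def by blast+

lemma ker_nonzero:
  assumes X: "in_Cn L n X" and Y: "in_Cn L n Y" and f: "chain_map L X Y f"
    and ret: "\<And>i. mod_retraction L (obj X i) (obj Y i) (f i)"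
    and nsec: "\<not> is_section L X Y f"
  shows "\<not> (\<forall>i. zero_mod (obj (ker_cplx X Y f) i))"
proof
  assume z: "\<forall>i. zero_mod (obj (ker_cplx X Y f) i)"
  note cX = inCn_cplx[OF X] and cY = inCn_cplx[OF Y]
  have "bij_betw (f i) (carrier (obj X i)) (carrier (obj Y i))" for i
  proof -
    note rX = cplx_rmod[OF cX, of i] and rY = cplx_rmod[OF cY, of i] and fh = chain_hom[OF f, of i]
    interpret Xi: rmod L "obj X i" by (rule rmod.intro) fact
    interpret Yi: rmod L "obj Y i" by (rule rmod.intro) fact
    obtain t where t: "t \<in> mod_hom L (obj Y i) (obj X i)" and ft: "\<And>y. y \<in> carrier (obj Y i) \<Longrightarrow> f i (t y) = y"
      using ret[of i] unfolding mod_retraction_def by blast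
    have K: "{x\<in>carrier (obj X i). f i x = \<zero>\<^bsub>obj Y i\<^esub>} = {\<zero>\<^bsub>obj X i\<^esub>}"
      using z unfolding zero_mod_def by simp
    have inj: "inj_on (f i) (carrier (obj X i))"
    proof (rule inj_onI)
      fix x y assume x: "x \<in> carrier (obj X i)" and y: "y \<in> carrier (obj X i)" and e: "f i x = f i y"
      have "f i (x \<ominus>\<^bsub>obj X i\<^esub> y) = \<zero>\<^bsub>obj Y i\<^esub>" using x y e hom_closed[OF fh y] by (simp add: hom_minus[OF rX rY fh])
      hence "x \<ominus>\<^bsub>obj X i\<^esub> y = \<zero>\<^bsub>obj X i\<^esub>" using K x y by blast
      thus "x = y" using x y Xi.ag_minus_eq0 by blast
    qed
    have "f i ` carrier (obj X i) = carrier (obj Y i)"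
    proof
      show "f i ` carrier (obj X i) \<subseteq> carrier (obj Y i)" using fh by (blast intro: hom_closed)
      show "carrier (obj Y i) \<subseteq> f i ` carrier (obj X i)"
      proof
        fix y assume y: "y \<in> carrier (obj Y i)"
        hence "y = f i (t y)" using ft by simp
        thus "y \<in> f i ` carrier (obj X i)" using hom_closed[OF t y] by blast
      qed
    qed
    thus ?thesis using inj by (simp add: bij_betw_def)
  qed
  hence "is_section L X Y f" by (rule bij_chain_section(1)[OF cX cY f])
  thus False using nsec by simp
qed

locale kdec =
  fixes L :: "('r,'y) ring_scheme" and n :: nat and X :: "('a,'r) cplx" and Y :: "('b,'r) cplx"
    and f :: "int \<Rightarrow> 'a \<Rightarrow> 'b" and t :: "int \<Rightarrow> 'b \<Rightarrow> 'a" and A B :: "int \<Rightarrow> 'a set"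
  assumes X: "in_Cn L n X" and Y: "in_Cn L n Y" and f: "chain_map L X Y f"
    and t: "\<And>i. t i \<in> mod_hom L (obj Y i) (obj X i)"
    and ft: "\<And>i y. y \<in> carrier (obj Y i) \<Longrightarrow> f i (t i y) = y"
    and Asub: "\<And>i. submodule L (A i) (obj X i)" and Bsub: "\<And>i. submodule L (B i) (obj X i)"
    and AK: "\<And>i a. a \<in> A i \<Longrightarrow> f i a = \<zero>\<^bsub>obj Y i\<^esub>" and BK: "\<And>i b. b \<in> B i \<Longrightarrow> f i b = \<zero>\<^bsub>obj Y i\<^esub>"
    and Ad: "\<And>i. diff X i ` A i \<subseteq> A (i+1)" and Bd: "\<And>i. diff X i ` B i \<subseteq> B (i+1)"
    and AB: "\<And>i. A i \<inter> B i = {\<zero>\<^bsub>obj X i\<^esub>}"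
    and sum: "\<And>i k. k \<in> carrier (obj X i) \<Longrightarrow> f i k = \<zero>\<^bsub>obj Y i\<^esub> \<Longrightarrow> \<exists>a\<in>A i. \<exists>b\<in>B i. k = a \<oplus>\<^bsub>obj X i\<^esub> b"
begin

lemma cX: "is_complex L X" by (rule inCn_cplx[OF X])
lemma cY: "is_complex L Y" by (rule inCn_cplx[OF Y])
lemma rX: "right_module L (obj X i)" by (rule cplx_rmod[OF cX])
lemma rY: "right_module L (obj Y i)" by (rule cplx_rmod[OF cY])
lemma fh: "f i \<in> mod_hom L (obj X i) (obj Y i)" by (rule chain_hom[OF f])
lemma dh: "diff X i \<in> mod_hom L (obj X i) (obj X (i+1))" by (rule cplx_diff[OF cX])

lemma swap: "kdec L n X Y f t B A"
  by (unfold_locales) (use X Y f t ft Asub Bsub AK BK Ad Bd AB sum in \<open>auto simp: Int_commute\<close>,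
      metis (no_types, lifting) abelian_monoid.a_comm abelian_group_def rmod_ag rX submodule_def subsetD)

lemma Ac: "a \<in> A i \<Longrightarrow> a \<in> carrier (obj X i)" using Asub unfolding submodule_def by blast
lemma Bc: "b \<in> B i \<Longrightarrow> b \<in> carrier (obj X i)" using Bsub unfolding submodule_def by blast
lemma A0: "\<zero>\<^bsub>obj X i\<^esub> \<in> A i" using Asub unfolding submodule_def by blast
lemma B0: "\<zero>\<^bsub>obj X i\<^esub> \<in> B i" using Bsub unfolding submodule_def by blast
lemma Aadd: "a \<in> A i \<Longrightarrow> a' \<in> A i \<Longrightarrow> a \<oplus>\<^bsub>obj X i\<^esub> a' \<in> A i" using Asub unfolding submodule_def by blast
lemma Badd: "a \<in> B i \<Longrightarrow> a' \<in> B i \<Longrightarrow> a \<oplus>\<^bsub>obj X i\<^esub> a' \<in> B i" using Bsub unfolding submodule_def by blast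
lemma Aneg: "a \<in> A i \<Longrightarrow> \<ominus>\<^bsub>obj X i\<^esub> a \<in> A i" using Asub unfolding submodule_def by blast
lemma Bneg: "a \<in> B i \<Longrightarrow> \<ominus>\<^bsub>obj X i\<^esub> a \<in> B i" using Bsub unfolding submodule_def by blast
lemma Asm: "a \<in> A i \<Longrightarrow> c \<in> carrier L \<Longrightarrow> rsmult (obj X i) a c \<in> A i" using Asub unfolding submodule_def by blast
lemma Bsm: "a \<in> B i \<Longrightarrow> c \<in> carrier L \<Longrightarrow> rsmult (obj X i) a c \<in> B i" using Bsub unfolding submodule_def by blast
lemma Aminus: "a \<in> A i \<Longrightarrow> a' \<in> A i \<Longrightarrow> a \<ominus>\<^bsub>obj X i\<^esub> a' \<in> A i" by (simp add: a_minus_def Aadd Aneg)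
lemma Bminus: "a \<in> B i \<Longrightarrow> a' \<in> B i \<Longrightarrow> a \<ominus>\<^bsub>obj X i\<^esub> a' \<in> B i" by (simp add: a_minus_def Badd Bneg)

definition pA where "pA i k = (THE a. a \<in> A i \<and> k \<ominus>\<^bsub>obj X i\<^esub> a \<in> B i)"

lemma pA_unique:
  assumes k: "k \<in> carrier (obj X i)" and a: "a \<in> A i" "k \<ominus>\<^bsub>obj X i\<^esub> a \<in> B i"
  shows "pA i k = a"
  unfolding pA_def
proof (rule the_equality)
  show "a \<in> A i \<and> k \<ominus>\<^bsub>obj X i\<^esub> a \<in> B i" using a by simp
  interpret Xi: rmod L "obj X i" by (rule rmod.intro[OF rX])
  fix a' assume a': "a' \<in> A i \<and> k \<ominus>\<^bsub>obj X i\<^esub> a' \<in> B i"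
  have ac: "a \<in> carrier (obj X i)" "a' \<in> carrier (obj X i)" using a a' Ac by auto
  have "(k \<ominus>\<^bsub>obj X i\<^esub> a) \<ominus>\<^bsub>obj X i\<^esub> (k \<ominus>\<^bsub>obj X i\<^esub> a') = \<ominus>\<^bsub>obj X i\<^esub> (a \<ominus>\<^bsub>obj X i\<^esub> a')"
    by (subst Xi.ag_swap2) (use k ac in simp_all)
  then have "\<ominus>\<^bsub>obj X i\<^esub> (a \<ominus>\<^bsub>obj X i\<^esub> a') \<in> B i" using Bminus a a' by metis
  hence "\<ominus>\<^bsub>obj X i\<^esub> (\<ominus>\<^bsub>obj X i\<^esub> (a \<ominus>\<^bsub>obj X i\<^esub> a')) \<in> B i" by (rule Bneg)
  hence "a \<ominus>\<^bsub>obj X i\<^esub> a' \<in> B i" using ac by (simp add: Xi.minus_minus)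
  moreover have "a \<ominus>\<^bsub>obj X i\<^esub> a' \<in> A i" using a a' Aminus by blast
  ultimately have "a \<ominus>\<^bsub>obj X i\<^esub> a' = \<zero>\<^bsub>obj X i\<^esub>" using AB by blast
  thus "a' = a" using ac Xi.ag_minus_eq0 by metis
qed

lemma pA_ex:
  assumes k: "k \<in> carrier (obj X i)" "f i k = \<zero>\<^bsub>obj Y i\<^esub>"
  shows "pA i k \<in> A i" "k \<ominus>\<^bsub>obj X i\<^esub> pA i k \<in> B i"
proof -
  interpret Xi: rmod L "obj X i" by (rule rmod.intro[OF rX])
  obtain a b where ab: "a \<in> A i" "b \<in> B i" "k = a \<oplus>\<^bsub>obj X i\<^esub> b" using sum[OF k] by blast
  have "k \<ominus>\<^bsub>obj X i\<^esub> a = b" using ab Ac Bc by simp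
  hence "pA i k = a" using pA_unique[OF k(1) ab(1)] ab(2) by simp
  thus "pA i k \<in> A i" "k \<ominus>\<^bsub>obj X i\<^esub> pA i k \<in> B i" using ab \<open>k \<ominus>\<^bsub>obj X i\<^esub> a = b\<close> by simp_all
qed

lemma pA_A: "a \<in> A i \<Longrightarrow> pA i a = a"
proof -
  assume a: "a \<in> A i"
  interpret Xi: rmod L "obj X i" by (rule rmod.intro[OF rX])
  show ?thesis by (rule pA_unique) (use a Ac B0 in simp_all)
qed

lemma pA_B: "b \<in> B i \<Longrightarrow> pA i b = \<zero>\<^bsub>obj X i\<^esub>"
proof -
  assume b: "b \<in> B i"
  interpret Xi: rmod L "obj X i" by (rule rmod.intro[OF rX])
  show ?thesis by (rule pA_unique) (use b Bc A0 in simp_all)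
qed

definition eK where "eK i = (\<lambda>x\<in>carrier (obj X i). x \<ominus>\<^bsub>obj X i\<^esub> t i (f i x))"

lemma tfc: "x \<in> carrier (obj X i) \<Longrightarrow> t i (f i x) \<in> carrier (obj X i)"
  using hom_closed[OF t hom_closed[OF fh]] by blast

lemma eK_hom: "eK i \<in> mod_hom L (obj X i) (obj X i)"
proof -
  have "(\<lambda>x\<in>carrier (obj X i). (\<lambda>x\<in>carrier (obj X i). x) x \<ominus>\<^bsub>obj X i\<^esub> (\<lambda>x\<in>carrier (obj X i). t i (f i x)) x)
     \<in> mod_hom L (obj X i) (obj X i)"
    by (rule hom_minusf[OF rX rX hom_id[OF rX] hom_comp[OF rX fh t]])
  moreover have "(\<lambda>x\<in>carrier (obj X i). (\<lambda>x\<in>carrier (obj X i). x) x \<ominus>\<^bsub>obj X i\<^esub> (\<lambda>x\<in>carrier (obj X i). t i (f i x)) x) = eK i"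
    unfolding eK_def by (rule restrict_ext) simp
  ultimately show ?thesis by simp
qed

lemma eK_ker: "x \<in> carrier (obj X i) \<Longrightarrow> f i (eK i x) = \<zero>\<^bsub>obj Y i\<^esub>"
proof -
  assume x: "x \<in> carrier (obj X i)"
  interpret Yi: rmod L "obj Y i" by (rule rmod.intro[OF rY])
  have "f i (eK i x) = f i x \<ominus>\<^bsub>obj Y i\<^esub> f i (t i (f i x))" using x tfc by (simp add: eK_def hom_minus[OF rX rY fh])
  thus ?thesis using x ft hom_closed[OF fh x] by simp
qed

lemma eK_id: "x \<in> carrier (obj X i) \<Longrightarrow> f i x = \<zero>\<^bsub>obj Y i\<^esub> \<Longrightarrow> eK i x = x"
proof -
  assume x: "x \<in> carrier (obj X i)" "f i x = \<zero>\<^bsub>obj Y i\<^esub>"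
  interpret Xi: rmod L "obj X i" by (rule rmod.intro[OF rX])
  show ?thesis using x hom_zero[OF rY rX t] by (simp add: eK_def)
qed

lemma eKc: "x \<in> carrier (obj X i) \<Longrightarrow> eK i x \<in> carrier (obj X i)" using hom_closed[OF eK_hom] .

definition \<pi>A where "\<pi>A i = (\<lambda>x\<in>carrier (obj X i). pA i (eK i x))"

lemma \<pi>A_A: "x \<in> carrier (obj X i) \<Longrightarrow> \<pi>A i x \<in> A i"
  unfolding \<pi>A_def using pA_ex(1)[OF eKc eK_ker] by simp

lemma \<pi>A_c: "x \<in> carrier (obj X i) \<Longrightarrow> \<pi>A i x \<in> carrier (obj X i)"
  using \<pi>A_A Ac by blast

lemma \<pi>A_onA: "a \<in> A i \<Longrightarrow> \<pi>A i a = a"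
  unfolding \<pi>A_def using Ac AK eK_id pA_A by simp

lemma \<pi>A_onB: "b \<in> B i \<Longrightarrow> \<pi>A i b = \<zero>\<^bsub>obj X i\<^esub>"
  unfolding \<pi>A_def using Bc BK eK_id pA_B by simp

lemma \<pi>A_ker: "x \<in> carrier (obj X i) \<Longrightarrow> f i x = \<zero>\<^bsub>obj Y i\<^esub> \<Longrightarrow> \<pi>A i x = pA i x"
  unfolding \<pi>A_def using eK_id by simp

lemma \<pi>A_idem: "x \<in> carrier (obj X i) \<Longrightarrow> \<pi>A i (\<pi>A i x) = \<pi>A i x"
  using \<pi>A_onA \<pi>A_A by blast

lemma \<pi>A_hom: "\<pi>A i \<in> mod_hom L (obj X i) (obj X i)"
proof -
  interpret Xi: rmod L "obj X i" by (rule rmod.intro[OF rX])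
  have Kx: "\<And>x. x \<in> carrier (obj X i) \<Longrightarrow> eK i x \<in> carrier (obj X i) \<and> f i (eK i x) = \<zero>\<^bsub>obj Y i\<^esub>"
    using eKc eK_ker by blast
  show ?thesis
  proof (rule mod_homI, goal_cases)
    case (1 x) then show ?case by (rule \<pi>A_c)
  next
    case (2 x) then show ?case by (simp add: \<pi>A_def)
  next
    case (3 x y)
    let ?k = "eK i x" and ?l = "eK i y"
    have k: "?k \<in> carrier (obj X i)" "?l \<in> carrier (obj X i)" using 3 Kx by blast+
    have a: "pA i ?k \<in> A i" "pA i ?l \<in> A i" "?k \<ominus>\<^bsub>obj X i\<^esub> pA i ?k \<in> B i" "?l \<ominus>\<^bsub>obj X i\<^esub> pA i ?l \<in> B i"
      using pA_ex Kx 3 by blast+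
    have ac: "pA i ?k \<in> carrier (obj X i)" "pA i ?l \<in> carrier (obj X i)" using a Ac by blast+
    have e: "eK i (x \<oplus>\<^bsub>obj X i\<^esub> y) = ?k \<oplus>\<^bsub>obj X i\<^esub> ?l" using 3 by (simp add: hom_add[OF eK_hom])
    have "pA i (?k \<oplus>\<^bsub>obj X i\<^esub> ?l) = pA i ?k \<oplus>\<^bsub>obj X i\<^esub> pA i ?l"
    proof (rule pA_unique)
      show "?k \<oplus>\<^bsub>obj X i\<^esub> ?l \<in> carrier (obj X i)" using k by simp
      show "pA i ?k \<oplus>\<^bsub>obj X i\<^esub> pA i ?l \<in> A i" using a Aadd by blast
      have "(?k \<oplus>\<^bsub>obj X i\<^esub> ?l) \<ominus>\<^bsub>obj X i\<^esub> (pA i ?k \<oplus>\<^bsub>obj X i\<^esub> pA i ?l)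
          = (?k \<ominus>\<^bsub>obj X i\<^esub> pA i ?k) \<oplus>\<^bsub>obj X i\<^esub> (?l \<ominus>\<^bsub>obj X i\<^esub> pA i ?l)"
        using k ac by (simp add: Xi.ag_swap)
      thus "(?k \<oplus>\<^bsub>obj X i\<^esub> ?l) \<ominus>\<^bsub>obj X i\<^esub> (pA i ?k \<oplus>\<^bsub>obj X i\<^esub> pA i ?l) \<in> B i" using a Badd by simp
    qed
    thus ?case using 3 e by (simp add: \<pi>A_def)
  next
    case (4 x c)
    let ?k = "eK i x"
    have k: "?k \<in> carrier (obj X i)" using 4 Kx by blast
    have a: "pA i ?k \<in> A i" "?k \<ominus>\<^bsub>obj X i\<^esub> pA i ?k \<in> B i" using pA_ex Kx 4 by blast+
    have ac: "pA i ?k \<in> carrier (obj X i)" using a Ac by blast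
    have e: "eK i (rsmult (obj X i) x c) = rsmult (obj X i) ?k c" using 4 by (simp add: hom_smult[OF eK_hom])
    have "pA i (rsmult (obj X i) ?k c) = rsmult (obj X i) (pA i ?k) c"
    proof (rule pA_unique)
      show "rsmult (obj X i) ?k c \<in> carrier (obj X i)" using k 4 by simp
      show "rsmult (obj X i) (pA i ?k) c \<in> A i" using a 4 Asm by blast
      have "rsmult (obj X i) ?k c \<ominus>\<^bsub>obj X i\<^esub> rsmult (obj X i) (pA i ?k) c = rsmult (obj X i) (?k \<ominus>\<^bsub>obj X i\<^esub> pA i ?k) c"
        using k ac 4 by (simp add: rmod_smult_minus[OF rX])
      thus "rsmult (obj X i) ?k c \<ominus>\<^bsub>obj X i\<^esub> rsmult (obj X i) (pA i ?k) c \<in> B i" using a 4 Bsm by simp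
    qed
    thus ?case using 4 e by (simp add: \<pi>A_def)
  qed
qed

lemma \<pi>A_ker0: "x \<in> carrier (obj X i) \<Longrightarrow> f i (\<pi>A i x) = \<zero>\<^bsub>obj Y i\<^esub>"
  using AK \<pi>A_A by blast

lemma \<pi>A_dA: "x \<in> carrier (obj X i) \<Longrightarrow> \<pi>A (i+1) (diff X i (\<pi>A i x)) = diff X i (\<pi>A i x)"
  using \<pi>A_onA Ad \<pi>A_A by blast

end

context kdec begin

definition CAc where "CAc i = {x\<in>carrier (obj X i). \<pi>A i x = \<zero>\<^bsub>obj X i\<^esub>}"
definition hA where "hA i = (\<lambda>x\<in>carrier (obj X i). x \<ominus>\<^bsub>obj X i\<^esub> \<pi>A i x)"
definition CA :: "('a, 'r) cplx" where
  "CA = \<lparr> obj = (\<lambda>i. (obj X i)\<lparr>carrier := CAc i\<rparr>), diff = (\<lambda>i. \<lambda>x\<in>CAc i. hA (i+1) (diff X i x)) \<rparr>"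
definition gA where "gA i = restrict (f i) (CAc i)"

lemma CA_obj[simp]: "obj CA i = (obj X i)\<lparr>carrier := CAc i\<rparr>" by (simp add: CA_def)
lemma CA_diff: "diff CA i = (\<lambda>x\<in>CAc i. hA (i+1) (diff X i x))" by (simp add: CA_def)

lemma CA_sub: "submodule L (CAc i) (obj X i)" unfolding CAc_def by (rule ker_sub[OF rX rX \<pi>A_hom])
lemma CAc_c: "x \<in> CAc i \<Longrightarrow> x \<in> carrier (obj X i)" by (simp add: CAc_def)

lemma hA_hom: "hA i \<in> mod_hom L (obj X i) (obj X i)"
proof -
  have "(\<lambda>x\<in>carrier (obj X i). (\<lambda>x\<in>carrier (obj X i). x) x \<ominus>\<^bsub>obj X i\<^esub> \<pi>A i x) \<in> mod_hom L (obj X i) (obj X i)"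
    by (rule hom_minusf[OF rX rX hom_id[OF rX] \<pi>A_hom])
  moreover have "(\<lambda>x\<in>carrier (obj X i). (\<lambda>x\<in>carrier (obj X i). x) x \<ominus>\<^bsub>obj X i\<^esub> \<pi>A i x) = hA i"
    unfolding hA_def by (rule restrict_ext) simp
  ultimately show ?thesis by simp
qed

lemma hA_c: "x \<in> carrier (obj X i) \<Longrightarrow> hA i x \<in> carrier (obj X i)" using hom_closed[OF hA_hom] .

lemma hA_in: "x \<in> carrier (obj X i) \<Longrightarrow> hA i x \<in> CAc i"
proof -
  assume x: "x \<in> carrier (obj X i)"
  interpret Xi: rmod L "obj X i" by (rule rmod.intro[OF rX])
  have "\<pi>A i (hA i x) = \<pi>A i x \<ominus>\<^bsub>obj X i\<^esub> \<pi>A i (\<pi>A i x)"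
    using x \<pi>A_c by (simp add: hA_def hom_minus[OF rX rX \<pi>A_hom])
  also have "\<dots> = \<zero>\<^bsub>obj X i\<^esub>" using x \<pi>A_c \<pi>A_idem by simp
  finally show ?thesis using hA_c[OF x] by (simp add: CAc_def)
qed

lemma hA_id: "x \<in> CAc i \<Longrightarrow> hA i x = x"
proof -
  assume x: "x \<in> CAc i"
  interpret Xi: rmod L "obj X i" by (rule rmod.intro[OF rX])
  show ?thesis using x by (simp add: CAc_def hA_def)
qed

lemma hA_onA: "a \<in> A i \<Longrightarrow> hA i a = \<zero>\<^bsub>obj X i\<^esub>"
proof -
  assume a: "a \<in> A i"
  interpret Xi: rmod L "obj X i" by (rule rmod.intro[OF rX])
  show ?thesis using a Ac \<pi>A_onA by (simp add: hA_def)
qed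

lemma dhA: "x \<in> carrier (obj X i) \<Longrightarrow> hA (i+1) (diff X i (hA i x)) = hA (i+1) (diff X i x)"
proof -
  assume x: "x \<in> carrier (obj X i)"
  interpret Xi: rmod L "obj X (i+1)" by (rule rmod.intro[OF rX])
  have px: "\<pi>A i x \<in> carrier (obj X i)" using \<pi>A_c[OF x] .
  have dx: "diff X i x \<in> carrier (obj X (i+1))" using hom_closed[OF dh x] .
  have dpx: "diff X i (\<pi>A i x) \<in> carrier (obj X (i+1))" using hom_closed[OF dh px] .
  have "diff X i (hA i x) = diff X i x \<ominus>\<^bsub>obj X (i+1)\<^esub> diff X i (\<pi>A i x)"
    using x px by (simp add: hA_def hom_minus[OF rX rX dh])
  hence "hA (i+1) (diff X i (hA i x)) = hA (i+1) (diff X i x) \<ominus>\<^bsub>obj X (i+1)\<^esub> hA (i+1) (diff X i (\<pi>A i x))"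
    using dx dpx by (simp add: hom_minus[OF rX rX hA_hom])
  also have "hA (i+1) (diff X i (\<pi>A i x)) = \<zero>\<^bsub>obj X (i+1)\<^esub>"
    using hA_onA Ad \<pi>A_A[OF x] by blast
  finally show ?thesis using hA_c[OF dx] by simp
qed

lemma CA_cplx: "is_complex L CA"
  unfolding is_complex_def
proof (intro allI conjI ballI)
  fix i
  show rCA: "right_module L (obj CA i)" using rmodI_sub[OF rX CA_sub] by simp
  have h0: "restrict (diff X i) (CAc i) \<in> mod_hom L (obj CA i) (obj X (i+1))"
    using hom_restrict_dom[OF dh CA_sub] by simp
  have h1: "(\<lambda>x\<in>carrier (obj CA i). hA (i+1) (restrict (diff X i) (CAc i) x)) \<in> mod_hom L (obj CA i) (obj X (i+1))"
    by (rule hom_comp[OF rCA h0 hA_hom])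
  have e: "(\<lambda>x\<in>carrier (obj CA i). hA (i+1) (restrict (diff X i) (CAc i) x)) = diff CA i"
    unfolding CA_diff by (rule ext) (simp add: restrict_def)
  have "diff CA i \<in> mod_hom L (obj CA i) (obj X (i+1))" using h1 e by simp
  hence "diff CA i \<in> mod_hom L (obj CA i) ((obj X (i+1))\<lparr>carrier := CAc (i+1)\<rparr>)"
    by (rule hom_restrict_cod) (simp add: CA_diff hA_in hom_closed[OF dh] CAc_c)
  thus "diff CA i \<in> mod_hom L (obj CA i) (obj CA (i + 1))" by simp
  fix x assume "x \<in> carrier (obj CA i)"
  hence x: "x \<in> CAc i" by simp
  have dx: "diff X i x \<in> carrier (obj X (i+1))" using hom_closed[OF dh CAc_c[OF x]] .
  have "diff CA (i+1) (diff CA i x) = hA (i+1+1) (diff X (i+1) (hA (i+1) (diff X i x)))"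
    using x hA_in[OF dx] by (simp add: CA_diff)
  also have "\<dots> = hA (i+1+1) (diff X (i+1) (diff X i x))" using dhA[OF dx] by simp
  also have "\<dots> = \<zero>\<^bsub>obj X (i+2)\<^esub>"
  proof -
    have ii: "i+1+1 = i+2" by simp
    show ?thesis unfolding ii using cplx_dd[OF cX CAc_c[OF x]] hom_zero[OF rX rX hA_hom] by simp
  qed
  finally show "diff CA (i + 1) (diff CA i x) = \<zero>\<^bsub>obj CA (i + 2)\<^esub>" by simp
qed

lemma CA_inCn: "in_Cn L n CA"
  unfolding in_Cn_def
proof (intro conjI allI impI)
  show "is_complex L CA" by (rule CA_cplx)
  fix i
  have "fg_projective L ((obj X i)\<lparr>carrier := CAc i\<rparr>)"
    by (rule sub_fgp[OF inCn_fgp[OF X] CA_sub hA_hom hA_in hA_id])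
  thus "fg_projective L (obj CA i)" by simp
next
  fix i :: int assume "i < 1 \<or> int n < i"
  hence z: "carrier (obj X i) = {\<zero>\<^bsub>obj X i\<^esub>}" using inCn_zero[OF X] unfolding zero_mod_def by blast
  have "\<zero>\<^bsub>obj X i\<^esub> \<in> CAc i" using CA_sub unfolding submodule_def by blast
  thus "zero_mod (obj CA i)" unfolding zero_mod_def using z CAc_c by auto
qed

lemma hA_chain: "chain_map L X CA hA"
  unfolding chain_map_def
proof (intro allI conjI ballI)
  fix i
  have "hA i \<in> mod_hom L (obj X i) ((obj X i)\<lparr>carrier := CAc i\<rparr>)" by (rule hom_restrict_cod[OF hA_hom hA_in])
  thus "hA i \<in> mod_hom L (obj X i) (obj CA i)" by simp
  fix x assume x: "x \<in> carrier (obj X i)"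
  show "hA (i + 1) (diff X i x) = diff CA i (hA i x)"
    using hA_in[OF x] dhA[OF x] by (simp add: CA_diff)
qed

lemma gA_chain: "chain_map L CA Y gA"
  unfolding chain_map_def
proof (intro allI conjI ballI)
  fix i
  show "gA i \<in> mod_hom L (obj CA i) (obj Y i)" unfolding gA_def using hom_restrict_dom[OF fh CA_sub] by simp
  fix x assume "x \<in> carrier (obj CA i)"
  hence x: "x \<in> CAc i" by simp
  have dx: "diff X i x \<in> carrier (obj X (i+1))" using hom_closed[OF dh CAc_c[OF x]] .
  interpret Yi: rmod L "obj Y (i+1)" by (rule rmod.intro[OF rY])
  have "f (i+1) (hA (i+1) (diff X i x)) = f (i+1) (diff X i x) \<ominus>\<^bsub>obj Y (i+1)\<^esub> f (i+1) (\<pi>A (i+1) (diff X i x))"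
    using dx \<pi>A_c by (simp add: hA_def hom_minus[OF rX rY fh])
  also have "\<dots> = f (i+1) (diff X i x)" using dx \<pi>A_ker0 hom_closed[OF fh dx] by simp
  finally show "gA (i + 1) (diff CA i x) = diff Y i (gA i x)"
    using x hA_in[OF dx] chain_comm[OF f CAc_c[OF x]] by (simp add: gA_def CA_diff)
qed

lemma f_fact: "f = cmp X gA hA"
proof (rule chain_eqI[OF f chain_cmp[OF cX hA_chain gA_chain]])
  fix i x assume x: "x \<in> carrier (obj X i)"
  interpret Yi: rmod L "obj Y i" by (rule rmod.intro[OF rY])
  have "f i (hA i x) = f i x \<ominus>\<^bsub>obj Y i\<^esub> f i (\<pi>A i x)" using x \<pi>A_c by (simp add: hA_def hom_minus[OF rX rY fh])
  also have "\<dots> = f i x" using x \<pi>A_ker0 hom_closed[OF fh x] by simp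
  finally show "f i x = cmp X gA hA i x" using x hA_in[OF x] by (simp add: gA_def)
qed

lemma hA_nsec:
  assumes nz: "\<exists>i. A i \<noteq> {\<zero>\<^bsub>obj X i\<^esub>}"
  shows "\<not> is_section L X CA hA"
proof
  assume "is_section L X CA hA"
  then obtain r where r: "chain_map L CA X r" and rh: "cmp X r hA = cid X" unfolding is_section_def by blast
  obtain i where i: "A i \<noteq> {\<zero>\<^bsub>obj X i\<^esub>}" using nz by blast
  then obtain a where a: "a \<in> A i" "a \<noteq> \<zero>\<^bsub>obj X i\<^esub>" using A0 by blast
  have "a = cmp X r hA i a" using rh Ac[OF a(1)] by simp
  also have "\<dots> = r i (hA i a)" using Ac[OF a(1)] by simp
  also have "\<dots> = r i (hA i \<zero>\<^bsub>obj X i\<^esub>)" using hA_onA[OF a(1)] hA_onA[OF A0] by simp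
  also have "\<dots> = cmp X r hA i \<zero>\<^bsub>obj X i\<^esub>" using rmod_zero_closed[OF rX] by simp
  also have "\<dots> = \<zero>\<^bsub>obj X i\<^esub>" using rh rmod_zero_closed[OF rX] by simp
  finally show False using a(2) by simp
qed

lemma exA:
  assumes irr: "irreducible L n X Y f" and nz: "\<exists>i. A i \<noteq> {\<zero>\<^bsub>obj X i\<^esub>}"
  shows "\<exists>s. chain_map L Y CA s \<and> (\<forall>i y. y \<in> carrier (obj Y i) \<longrightarrow> f i (s i y) = y)"
proof -
  have "is_section L X CA hA \<or> is_retraction L CA Y gA"
    by (rule irr_factor[OF irr CA_inCn hA_chain gA_chain f_fact])
  hence "is_retraction L CA Y gA" using hA_nsec[OF nz] by blast
  then obtain s where s: "chain_map L Y CA s" and gs: "cmp Y gA s = cid Y" unfolding is_retraction_def by blast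
  have "f i (s i y) = y" if y: "y \<in> carrier (obj Y i)" for i y
  proof -
    have sy: "s i y \<in> CAc i" using hom_closed[OF chain_hom[OF s] y] by simp
    have "y = cmp Y gA s i y" using gs y by simp
    also have "\<dots> = f i (s i y)" using y sy by (simp add: gA_def)
    finally show ?thesis by simp
  qed
  thus ?thesis using s by blast
qed

end

context kdec begin

lemma sA_facts:
  assumes s: "chain_map L Y CA s" and y: "y \<in> carrier (obj Y i)"
  shows "s i y \<in> CAc i" "s i y \<in> carrier (obj X i)"
    "diff X i (s i y) \<ominus>\<^bsub>obj X (i+1)\<^esub> \<pi>A (i+1) (diff X i (s i y)) = s (i+1) (diff Y i y)"
proof -
  show sc: "s i y \<in> CAc i" using hom_closed[OF chain_hom[OF s] y] by simp
  thus sX: "s i y \<in> carrier (obj X i)" by (rule CAc_c)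
  have "s (i+1) (diff Y i y) = diff CA i (s i y)" using chain_comm[OF s y] .
  also have "\<dots> = hA (i+1) (diff X i (s i y))" using sc by (simp add: CA_diff)
  also have "\<dots> = diff X i (s i y) \<ominus>\<^bsub>obj X (i+1)\<^esub> \<pi>A (i+1) (diff X i (s i y))"
    using hom_closed[OF dh sX] by (simp add: hA_def)
  finally show "diff X i (s i y) \<ominus>\<^bsub>obj X (i+1)\<^esub> \<pi>A (i+1) (diff X i (s i y)) = s (i+1) (diff Y i y)" by simp
qed

lemma sA_homX: "chain_map L Y CA s \<Longrightarrow> s i \<in> mod_hom L (obj Y i) (obj X i)"
proof -
  assume s: "chain_map L Y CA s"
  have "s i \<in> mod_hom L (obj Y i) ((obj X i)\<lparr>carrier := CAc i\<rparr>)" using chain_hom[OF s, of i] by simp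
  thus ?thesis by (rule hom_extend_cod) (auto simp: CAc_def)
qed

lemma ret_of_two:
  assumes irr: "irreducible L n X Y f" and nzA: "\<exists>i. A i \<noteq> {\<zero>\<^bsub>obj X i\<^esub>}"
    and nzB: "\<exists>i. B i \<noteq> {\<zero>\<^bsub>obj X i\<^esub>}"
  shows "is_retraction L X Y f"
proof -
  interpret S: kdec L n X Y f t B A by (rule swap)
  obtain sA where sA: "chain_map L Y CA sA" and fsA: "\<And>i y. y \<in> carrier (obj Y i) \<Longrightarrow> f i (sA i y) = y"
    using exA[OF irr nzA] by blast
  obtain sB where sB: "chain_map L Y S.CA sB" and fsB: "\<And>i y. y \<in> carrier (obj Y i) \<Longrightarrow> f i (sB i y) = y"
    using S.exA[OF irr nzB] by blast
  define qA where "qA i = (\<lambda>x\<in>carrier (obj X i). S.hA i x \<ominus>\<^bsub>obj X i\<^esub> sB i (f i x))" for i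
  have sBX: "\<And>i x. x \<in> carrier (obj X i) \<Longrightarrow> sB i (f i x) \<in> carrier (obj X i)"
    using S.sA_facts(2)[OF sB hom_closed[OF fh]] by blast
  have qA_hom: "qA i \<in> mod_hom L (obj X i) (obj X i)" for i
  proof -
    have "(\<lambda>x\<in>carrier (obj X i). S.hA i x \<ominus>\<^bsub>obj X i\<^esub> (\<lambda>x\<in>carrier (obj X i). sB i (f i x)) x) \<in> mod_hom L (obj X i) (obj X i)"
      by (rule hom_minusf[OF rX rX S.hA_hom hom_comp[OF rX fh S.sA_homX[OF sB]]])
    moreover have "(\<lambda>x\<in>carrier (obj X i). S.hA i x \<ominus>\<^bsub>obj X i\<^esub> (\<lambda>x\<in>carrier (obj X i). sB i (f i x)) x) = qA i"
      unfolding qA_def by (rule restrict_ext) simp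
    ultimately show ?thesis by simp
  qed
  have qA_c: "\<And>i x. x \<in> carrier (obj X i) \<Longrightarrow> qA i x \<in> carrier (obj X i)" using hom_closed[OF qA_hom] .
  have qA_A: "qA i x \<in> A i" if x: "x \<in> carrier (obj X i)" for i x
  proof -
    interpret Xi: rmod L "obj X i" by (rule rmod.intro[OF rX])
    interpret Yi: rmod L "obj Y i" by (rule rmod.intro[OF rY])
    have hx: "S.hA i x \<in> carrier (obj X i)" using S.hA_c[OF x] .
    have fh1: "f i (S.hA i x) = f i x"
    proof -
      have "f i (S.hA i x) = f i x \<ominus>\<^bsub>obj Y i\<^esub> f i (S.\<pi>A i x)" using x S.\<pi>A_c by (simp add: S.hA_def hom_minus[OF rX rY fh])
      thus ?thesis using x S.\<pi>A_ker0 hom_closed[OF fh x] by simp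
    qed
    have fk: "f i (qA i x) = \<zero>\<^bsub>obj Y i\<^esub>"
      using x hx sBX[OF x] fh1 fsB[OF hom_closed[OF fh x]] hom_closed[OF fh x]
      by (simp add: qA_def hom_minus[OF rX rY fh])
    have "S.\<pi>A i (qA i x) = S.\<pi>A i (S.hA i x) \<ominus>\<^bsub>obj X i\<^esub> S.\<pi>A i (sB i (f i x))"
      using x hx sBX[OF x] by (simp add: qA_def hom_minus[OF rX rX S.\<pi>A_hom])
    also have "\<dots> = \<zero>\<^bsub>obj X i\<^esub>"
      using S.hA_in[OF x] S.sA_facts(1)[OF sB hom_closed[OF fh x]] by (simp add: S.CAc_def)
    finally have p0: "S.\<pi>A i (qA i x) = \<zero>\<^bsub>obj X i\<^esub>" .
    have "qA i x \<ominus>\<^bsub>obj X i\<^esub> S.pA i (qA i x) \<in> A i" by (rule S.pA_ex(2)[OF qA_c[OF x] fk])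
    thus ?thesis using p0 S.\<pi>A_ker[OF qA_c[OF x] fk] qA_c[OF x] by simp
  qed
  have qA_onA: "qA i a = a" if a: "a \<in> A i" for i a
  proof -
    interpret Xi: rmod L "obj X i" by (rule rmod.intro[OF rX])
    have ac: "a \<in> carrier (obj X i)" by (rule Ac[OF a])
    have "S.hA i a = a" using ac S.\<pi>A_onB[OF a] by (simp add: S.hA_def)
    moreover have "sB i (f i a) = \<zero>\<^bsub>obj X i\<^esub>"
      using AK[OF a] hom_zero[OF rY rX S.sA_homX[OF sB]] by simp
    ultimately show ?thesis using ac by (simp add: qA_def)
  qed
  have qA_chain: "qA (i+1) (diff X i x) = diff X i (qA i x)" if x: "x \<in> carrier (obj X i)" for i x
  proof -
    interpret Xi: rmod L "obj X (i+1)" by (rule rmod.intro[OF rX])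
    have dx: "diff X i x \<in> carrier (obj X (i+1))" using hom_closed[OF dh x] .
    have fx: "f i x \<in> carrier (obj Y i)" using hom_closed[OF fh x] .
    have hx: "S.hA i x \<in> carrier (obj X i)" using S.hA_c[OF x] .
    have sfx: "sB i (f i x) \<in> carrier (obj X i)" using sBX[OF x] .
    have e1: "S.hA (i+1) (diff X i x) = S.hA (i+1) (diff X i (S.hA i x))" using S.dhA[OF x] by simp
    have e2: "sB (i+1) (f (i+1) (diff X i x)) = S.hA (i+1) (diff X i (sB i (f i x)))"
    proof -
      have "sB (i+1) (f (i+1) (diff X i x)) = sB (i+1) (diff Y i (f i x))" using chain_comm[OF f x] by simp
      also have "\<dots> = diff X i (sB i (f i x)) \<ominus>\<^bsub>obj X (i+1)\<^esub> S.\<pi>A (i+1) (diff X i (sB i (f i x)))"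
        using S.sA_facts(3)[OF sB fx] by simp
      also have "\<dots> = S.hA (i+1) (diff X i (sB i (f i x)))"
        using hom_closed[OF dh sfx] by (simp add: S.hA_def)
      finally show ?thesis .
    qed
    have "qA (i+1) (diff X i x) = S.hA (i+1) (diff X i (S.hA i x)) \<ominus>\<^bsub>obj X (i+1)\<^esub> S.hA (i+1) (diff X i (sB i (f i x)))"
      using dx e1 e2 by (simp add: qA_def)
    also have "\<dots> = S.hA (i+1) (diff X i (qA i x))"
      using x hx sfx hom_closed[OF dh hx] hom_closed[OF dh sfx]
      by (simp add: qA_def hom_minus[OF rX rX dh] hom_minus[OF rX rX S.hA_hom])
    also have "\<dots> = diff X i (qA i x)"
    proof -
      have dq: "diff X i (qA i x) \<in> A (i+1)" using Ad qA_A[OF x] by blast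
      show ?thesis using Ac[OF dq] S.\<pi>A_onB[OF dq] by (simp add: S.hA_def)
    qed
    finally show ?thesis .
  qed
  define \<sigma> where "\<sigma> i = (\<lambda>y\<in>carrier (obj Y i). sA i y \<ominus>\<^bsub>obj X i\<^esub> qA i (sA i y))" for i
  have \<sigma>_hom: "\<sigma> i \<in> mod_hom L (obj Y i) (obj X i)" for i
  proof -
    have "(\<lambda>y\<in>carrier (obj Y i). sA i y \<ominus>\<^bsub>obj X i\<^esub> (\<lambda>y\<in>carrier (obj Y i). qA i (sA i y)) y) \<in> mod_hom L (obj Y i) (obj X i)"
      by (rule hom_minusf[OF rY rX sA_homX[OF sA] hom_comp[OF rY sA_homX[OF sA] qA_hom]])
    moreover have "(\<lambda>y\<in>carrier (obj Y i). sA i y \<ominus>\<^bsub>obj X i\<^esub> (\<lambda>y\<in>carrier (obj Y i). qA i (sA i y)) y) = \<sigma> i"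
      unfolding \<sigma>_def by (rule restrict_ext) simp
    ultimately show ?thesis by simp
  qed
  have \<sigma>_chain: "chain_map L Y X \<sigma>"
    unfolding chain_map_def
  proof (intro allI conjI ballI)
    fix i show "\<sigma> i \<in> mod_hom L (obj Y i) (obj X i)" by (rule \<sigma>_hom)
    fix y assume y: "y \<in> carrier (obj Y i)"
    interpret Xi: rmod L "obj X (i+1)" by (rule rmod.intro[OF rX])
    let ?u = "sA i y"
    let ?w = "\<pi>A (i+1) (diff X i ?u)"
    have dy: "diff Y i y \<in> carrier (obj Y (i+1))" using hom_closed[OF cplx_diff[OF cY] y] .
    have u: "?u \<in> carrier (obj X i)" using sA_facts(2)[OF sA y] .
    have du: "diff X i ?u \<in> carrier (obj X (i+1))" using hom_closed[OF dh u] .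
    have wA: "?w \<in> A (i+1)" using \<pi>A_A[OF du] .
    have wc: "?w \<in> carrier (obj X (i+1))" using Ac[OF wA] .
    have sdy: "sA (i+1) (diff Y i y) \<in> carrier (obj X (i+1))" using sA_facts(2)[OF sA dy] .
    have qsdy: "qA (i+1) (sA (i+1) (diff Y i y)) \<in> carrier (obj X (i+1))" using qA_c[OF sdy] .
    define W where "W = ?w"
    have WA: "W \<in> A (i+1)" and Wc: "W \<in> carrier (obj X (i+1))" using wA wc by (simp_all add: W_def)
    have "sA (i+1) (diff Y i y) \<oplus>\<^bsub>obj X (i+1)\<^esub> W = (diff X i ?u \<ominus>\<^bsub>obj X (i+1)\<^esub> W) \<oplus>\<^bsub>obj X (i+1)\<^esub> W"
      using sA_facts(3)[OF sA y] by (simp add: W_def)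
    hence du_eq: "diff X i ?u = sA (i+1) (diff Y i y) \<oplus>\<^bsub>obj X (i+1)\<^esub> W"
      using du Wc by simp
    have "diff X i (\<sigma> i y) = diff X i ?u \<ominus>\<^bsub>obj X (i+1)\<^esub> diff X i (qA i ?u)"
      using y u qA_c[OF u] by (simp add: \<sigma>_def hom_minus[OF rX rX dh])
    also have "\<dots> = diff X i ?u \<ominus>\<^bsub>obj X (i+1)\<^esub> qA (i+1) (diff X i ?u)" using qA_chain[OF u] by simp
    also have "\<dots> = (sA (i+1) (diff Y i y) \<oplus>\<^bsub>obj X (i+1)\<^esub> W) \<ominus>\<^bsub>obj X (i+1)\<^esub>
                     qA (i+1) (sA (i+1) (diff Y i y) \<oplus>\<^bsub>obj X (i+1)\<^esub> W)"
      by (simp only: du_eq)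
    also have "qA (i+1) (sA (i+1) (diff Y i y) \<oplus>\<^bsub>obj X (i+1)\<^esub> W) = qA (i+1) (sA (i+1) (diff Y i y)) \<oplus>\<^bsub>obj X (i+1)\<^esub> W"
      using sdy Wc qA_onA[OF WA] by (simp add: hom_add[OF qA_hom])
    also have "(sA (i+1) (diff Y i y) \<oplus>\<^bsub>obj X (i+1)\<^esub> W) \<ominus>\<^bsub>obj X (i+1)\<^esub> (qA (i+1) (sA (i+1) (diff Y i y)) \<oplus>\<^bsub>obj X (i+1)\<^esub> W)
        = sA (i+1) (diff Y i y) \<ominus>\<^bsub>obj X (i+1)\<^esub> qA (i+1) (sA (i+1) (diff Y i y))"
      by (subst Xi.ag_swap) (use sdy qsdy Wc in simp_all)
    finally show "\<sigma> (i + 1) (diff Y i y) = diff X i (\<sigma> i y)" using dy by (simp add: \<sigma>_def)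
  qed
  have f\<sigma>: "f i (\<sigma> i y) = y" if y: "y \<in> carrier (obj Y i)" for i y
  proof -
    interpret Yi: rmod L "obj Y i" by (rule rmod.intro[OF rY])
    have u: "sA i y \<in> carrier (obj X i)" using sA_facts(2)[OF sA y] .
    have "f i (\<sigma> i y) = f i (sA i y) \<ominus>\<^bsub>obj Y i\<^esub> f i (qA i (sA i y))"
      using y u qA_c[OF u] by (simp add: \<sigma>_def hom_minus[OF rX rY fh])
    thus ?thesis using fsA[OF y] AK[OF qA_A[OF u]] y by simp
  qed
  have "cmp Y f \<sigma> = cid Y"
    by (rule iffD2[OF cmp_eq_cid_iff[OF chain_cmp[OF cY \<sigma>_chain f]]]) (simp add: f\<sigma>)
  thus ?thesis using \<sigma>_chain f unfolding is_retraction_def by blast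
qed

end

lemma sub_neg:
  assumes rm: "right_module L M" and S: "submodule L S M" and x: "x \<in> S"
  shows "\<ominus>\<^bsub>M\<lparr>carrier := S\<rparr>\<^esub> x = \<ominus>\<^bsub>M\<^esub> x"
proof -
  interpret M: rmod L M by (rule rmod.intro[OF rm])
  interpret Sg: abelian_group "M\<lparr>carrier := S\<rparr>" by (rule rmod_ag[OF rmodI_sub[OF rm S]])
  have SS: "S \<subseteq> carrier M" "\<ominus>\<^bsub>M\<^esub> x \<in> S" using S x unfolding submodule_def by blast+
  have "\<ominus>\<^bsub>M\<^esub> x \<oplus>\<^bsub>M\<lparr>carrier := S\<rparr>\<^esub> x = \<zero>\<^bsub>M\<lparr>carrier := S\<rparr>\<^esub>"
    using SS x by (simp add: M.l_neg subsetD)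
  thus ?thesis using Sg.minus_equality SS x by simp
qed

lemma submod_of_sub:
  assumes rm: "right_module L M" and S: "submodule L S M" and T: "submodule L T (M\<lparr>carrier := S\<rparr>)"
  shows "submodule L T M"
proof -
  have TS: "T \<subseteq> S" using T unfolding submodule_def by simp
  have "\<forall>x\<in>T. \<ominus>\<^bsub>M\<^esub> x \<in> T"
  proof
    fix x assume x: "x \<in> T"
    hence "\<ominus>\<^bsub>M\<lparr>carrier := S\<rparr>\<^esub> x \<in> T" using T unfolding submodule_def by blast
    moreover have "\<ominus>\<^bsub>M\<lparr>carrier := S\<rparr>\<^esub> x = \<ominus>\<^bsub>M\<^esub> x" using sub_neg[OF rm S] x TS by blast
    ultimately show "\<ominus>\<^bsub>M\<^esub> x \<in> T" by simp
  qed
  thus ?thesis using T S TS unfolding submodule_def by auto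
qed

lemma part_a:
  fixes L :: "('r,'y) ring_scheme" and X :: "('a,'r) cplx" and Y :: "('b,'r) cplx" and f :: "int \<Rightarrow> 'a \<Rightarrow> 'b"
  assumes ret: "type_ret L n X Y f"
  shows "in_Cn L n (ker_cplx X Y f) \<and> indecomposable L (ker_cplx X Y f)"
proof -
  have irr: "irreducible L n X Y f" and rets: "\<And>i. mod_retraction L (obj X i) (obj Y i) (f i)"
    using ret unfolding type_ret_def by blast+
  have X: "in_Cn L n X" and Y: "in_Cn L n Y" and f: "chain_map L X Y f"
    and nsec: "\<not> is_section L X Y f" and nret: "\<not> is_retraction L X Y f"
    using irr unfolding irreducible_def by blast+
  note cX = inCn_cplx[OF X] and cY = inCn_cplx[OF Y]
  have KC: "in_Cn L n (ker_cplx X Y f)" by (rule ker_inCn[OF X Y f rets])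
  have "\<forall>i. \<exists>t. t \<in> mod_hom L (obj Y i) (obj X i) \<and> (\<forall>y\<in>carrier (obj Y i). f i (t y) = y)"
    using rets unfolding mod_retraction_def by blast
  then obtain t where t: "\<And>i. t i \<in> mod_hom L (obj Y i) (obj X i)"
    and ft: "\<And>i y. y \<in> carrier (obj Y i) \<Longrightarrow> f i (t i y) = y" by metis
  have "indecomposable L (ker_cplx X Y f)"
    unfolding indecomposable_def
  proof (intro conjI allI impI)
    show "is_complex L (ker_cplx X Y f)" by (rule inCn_cplx[OF KC])
    show "\<not> (\<forall>i. zero_mod (obj (ker_cplx X Y f) i))" by (rule ker_nonzero[OF X Y f rets nsec])
    fix A B :: "int \<Rightarrow> 'a set"
    assume H: "\<forall>i. submodule L (A i) (obj (ker_cplx X Y f) i) \<and> submodule L (B i) (obj (ker_cplx X Y f) i) \<and>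
             diff (ker_cplx X Y f) i ` A i \<subseteq> A (i + 1) \<and> diff (ker_cplx X Y f) i ` B i \<subseteq> B (i + 1) \<and>
             A i \<inter> B i = {\<zero>\<^bsub>obj (ker_cplx X Y f) i\<^esub>} \<and>
             carrier (obj (ker_cplx X Y f) i) = {a \<oplus>\<^bsub>obj (ker_cplx X Y f) i\<^esub> b | a b. a \<in> A i \<and> b \<in> B i}"
    define Ki where "Ki i = {x\<in>carrier (obj X i). f i x = \<zero>\<^bsub>obj Y i\<^esub>}" for i
    have HA: "submodule L (A i) ((obj X i)\<lparr>carrier := Ki i\<rparr>)" for i
    proof -
      have "submodule L (A i) (obj (ker_cplx X Y f) i)" using H by blast
      thus ?thesis by (simp only: ker_obj Ki_def)
    qed
    have HB: "submodule L (B i) ((obj X i)\<lparr>carrier := Ki i\<rparr>)" for i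
    proof -
      have "submodule L (B i) (obj (ker_cplx X Y f) i)" using H by blast
      thus ?thesis by (simp only: ker_obj Ki_def)
    qed
    have AKi: "A i \<subseteq> Ki i" for i using HA[of i] unfolding submodule_def by simp
    have BKi: "B i \<subseteq> Ki i" for i using HB[of i] unfolding submodule_def by simp
    have sub_conv: "submodule L S (obj X i)" if "submodule L S ((obj X i)\<lparr>carrier := Ki i\<rparr>)" for S i
      by (rule submod_of_sub[OF cplx_rmod[OF cX] _ that])
         (unfold Ki_def, rule ker_sub[OF cplx_rmod[OF cX] cplx_rmod[OF cY] chain_hom[OF f]])
    interpret kdec L n X Y f t A B
    proof (unfold_locales, goal_cases)
      case 1 show ?case by (rule X)
    next case 2 show ?case by (rule Y)
    next case 3 show ?case by (rule f)
    next case (4 i) show ?case by (rule t)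
    next case (5 i y) thus ?case by (rule ft)
    next case (6 i) show ?case by (rule sub_conv[OF HA])
    next case (7 i) show ?case by (rule sub_conv[OF HB])
    next case (8 i a) thus ?case using AKi by (auto simp: Ki_def)
    next case (9 i b) thus ?case using BKi by (auto simp: Ki_def)
    next case (10 i)
      have "diff (ker_cplx X Y f) i ` A i \<subseteq> A (i + 1)" using H by blast
      thus ?case using AKi[of i] by (auto simp: Ki_def)
    next case (11 i)
      have "diff (ker_cplx X Y f) i ` B i \<subseteq> B (i + 1)" using H by blast
      thus ?case using BKi[of i] by (auto simp: Ki_def)
    next case (12 i)
      have "A i \<inter> B i = {\<zero>\<^bsub>obj (ker_cplx X Y f) i\<^esub>}" using H by blast
      thus ?case by simp
    next case (13 i k)
      have e: "carrier (obj (ker_cplx X Y f) i) = {a \<oplus>\<^bsub>obj (ker_cplx X Y f) i\<^esub> b | a b. a \<in> A i \<and> b \<in> B i}"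
        using H by blast
      have "k \<in> carrier (obj (ker_cplx X Y f) i)" using 13 by simp
      hence "k \<in> {a \<oplus>\<^bsub>obj (ker_cplx X Y f) i\<^esub> b | a b. a \<in> A i \<and> b \<in> B i}" using e by blast
      thus ?case by auto
    qed
    show "(\<forall>i. A i = {\<zero>\<^bsub>obj (ker_cplx X Y f) i\<^esub>}) \<or> (\<forall>i. B i = {\<zero>\<^bsub>obj (ker_cplx X Y f) i\<^esub>})"
    proof (rule ccontr)
      assume "\<not> ?thesis"
      hence nzA: "\<exists>i. A i \<noteq> {\<zero>\<^bsub>obj X i\<^esub>}" and nzB: "\<exists>i. B i \<noteq> {\<zero>\<^bsub>obj X i\<^esub>}" by simp_all
      have "is_retraction L X Y f" by (rule ret_of_two[OF irr nzA nzB])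
      thus False using nret by simp
    qed
  qed
  thus ?thesis using KC by simp
qed

locale cbase =
  fixes L :: "('r,'y) ring_scheme" and n :: nat and X :: "('a,'r) cplx" and Y :: "('b,'r) cplx"
    and f :: "int \<Rightarrow> 'a \<Rightarrow> 'b" and r :: "int \<Rightarrow> 'b \<Rightarrow> 'a"
  assumes X: "in_Cn L n X" and Y: "in_Cn L n Y" and f: "chain_map L X Y f"
    and r: "\<And>i. r i \<in> mod_hom L (obj Y i) (obj X i)"
    and rf: "\<And>i x. x \<in> carrier (obj X i) \<Longrightarrow> r i (f i x) = x"
begin

lemma cX: "is_complex L X" by (rule inCn_cplx[OF X])
lemma cY: "is_complex L Y" by (rule inCn_cplx[OF Y])
lemma rX: "right_module L (obj X i)" by (rule cplx_rmod[OF cX])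
lemma rY: "right_module L (obj Y i)" by (rule cplx_rmod[OF cY])
lemma fh: "f i \<in> mod_hom L (obj X i) (obj Y i)" by (rule chain_hom[OF f])
lemma dY: "diff Y i \<in> mod_hom L (obj Y i) (obj Y (i+1))" by (rule cplx_diff[OF cY])
lemma dX: "diff X i \<in> mod_hom L (obj X i) (obj X (i+1))" by (rule cplx_diff[OF cX])

definition Dc where "Dc i = {y\<in>carrier (obj Y i). r i y = \<zero>\<^bsub>obj X i\<^esub>}"
definition eD where "eD i = (\<lambda>y\<in>carrier (obj Y i). y \<ominus>\<^bsub>obj Y i\<^esub> f i (r i y))"

lemma D_sub: "submodule L (Dc i) (obj Y i)" unfolding Dc_def by (rule ker_sub[OF rY rX r])
lemma Dc_c: "y \<in> Dc i \<Longrightarrow> y \<in> carrier (obj Y i)" by (simp add: Dc_def)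

lemma frc: "y \<in> carrier (obj Y i) \<Longrightarrow> f i (r i y) \<in> carrier (obj Y i)"
  using hom_closed[OF fh hom_closed[OF r]] by blast

lemma eD_hom: "eD i \<in> mod_hom L (obj Y i) (obj Y i)"
proof -
  have "(\<lambda>y\<in>carrier (obj Y i). (\<lambda>y\<in>carrier (obj Y i). y) y \<ominus>\<^bsub>obj Y i\<^esub> (\<lambda>y\<in>carrier (obj Y i). f i (r i y)) y)
     \<in> mod_hom L (obj Y i) (obj Y i)"
    by (rule hom_minusf[OF rY rY hom_id[OF rY] hom_comp[OF rY r fh]])
  moreover have "(\<lambda>y\<in>carrier (obj Y i). (\<lambda>y\<in>carrier (obj Y i). y) y \<ominus>\<^bsub>obj Y i\<^esub> (\<lambda>y\<in>carrier (obj Y i). f i (r i y)) y) = eD i"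
    unfolding eD_def by (rule restrict_ext) simp
  ultimately show ?thesis by simp
qed

lemma eDc: "y \<in> carrier (obj Y i) \<Longrightarrow> eD i y \<in> carrier (obj Y i)" using hom_closed[OF eD_hom] .

lemma eD_in: "y \<in> carrier (obj Y i) \<Longrightarrow> eD i y \<in> Dc i"
proof -
  assume y: "y \<in> carrier (obj Y i)"
  interpret Xi: rmod L "obj X i" by (rule rmod.intro[OF rX])
  have "r i (eD i y) = r i y \<ominus>\<^bsub>obj X i\<^esub> r i (f i (r i y))" using y frc by (simp add: eD_def hom_minus[OF rY rX r])
  also have "\<dots> = \<zero>\<^bsub>obj X i\<^esub>" using y rf hom_closed[OF r y] by simp
  finally show ?thesis using eDc[OF y] by (simp add: Dc_def)
qed

lemma eD_id: "y \<in> Dc i \<Longrightarrow> eD i y = y"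
proof -
  assume y: "y \<in> Dc i"
  interpret Yi: rmod L "obj Y i" by (rule rmod.intro[OF rY])
  show ?thesis using y hom_zero[OF rX rY fh] by (simp add: Dc_def eD_def)
qed

lemma eD_f: "x \<in> carrier (obj X i) \<Longrightarrow> eD i (f i x) = \<zero>\<^bsub>obj Y i\<^esub>"
proof -
  assume x: "x \<in> carrier (obj X i)"
  interpret Yi: rmod L "obj Y i" by (rule rmod.intro[OF rY])
  show ?thesis using x hom_closed[OF fh x] by (simp add: eD_def rf)
qed

lemma eD_d: "y \<in> carrier (obj Y i) \<Longrightarrow> eD (i+1) (diff Y i y) = eD (i+1) (diff Y i (eD i y))"
proof -
  assume y: "y \<in> carrier (obj Y i)"
  interpret Yi: rmod L "obj Y (i+1)" by (rule rmod.intro[OF rY])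
  have ry: "r i y \<in> carrier (obj X i)" using hom_closed[OF r y] .
  have "diff Y i (eD i y) = diff Y i y \<ominus>\<^bsub>obj Y (i+1)\<^esub> diff Y i (f i (r i y))"
    using y frc by (simp add: eD_def hom_minus[OF rY rY dY])
  also have "diff Y i (f i (r i y)) = f (i+1) (diff X i (r i y))" using chain_comm[OF f ry] by simp
  finally have "eD (i+1) (diff Y i (eD i y)) = eD (i+1) (diff Y i y) \<ominus>\<^bsub>obj Y (i+1)\<^esub> eD (i+1) (f (i+1) (diff X i (r i y)))"
    using hom_closed[OF dY y] hom_closed[OF fh hom_closed[OF dX ry]] by (simp add: hom_minus[OF rY rY eD_hom])
  also have "\<dots> = eD (i+1) (diff Y i y)"
    using eD_f[OF hom_closed[OF dX ry]] eDc[OF hom_closed[OF dY y]] by simp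
  finally show ?thesis by simp
qed

definition D :: "('b, 'r) cplx" where
  "D = \<lparr> obj = (\<lambda>i. (obj Y i)\<lparr>carrier := Dc i\<rparr>), diff = (\<lambda>i. \<lambda>y\<in>Dc i. eD (i+1) (diff Y i y)) \<rparr>"

lemma D_obj[simp]: "obj D i = (obj Y i)\<lparr>carrier := Dc i\<rparr>" by (simp add: D_def)
lemma D_diff: "diff D i = (\<lambda>y\<in>Dc i. eD (i+1) (diff Y i y))" by (simp add: D_def)

lemma D_cplx: "is_complex L D"
  unfolding is_complex_def
proof (intro allI conjI ballI)
  fix i
  show rD: "right_module L (obj D i)" using rmodI_sub[OF rY D_sub] by simp
  have h0: "restrict (diff Y i) (Dc i) \<in> mod_hom L (obj D i) (obj Y (i+1))"
    using hom_restrict_dom[OF dY D_sub] by simp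
  have h1: "(\<lambda>x\<in>carrier (obj D i). eD (i+1) (restrict (diff Y i) (Dc i) x)) \<in> mod_hom L (obj D i) (obj Y (i+1))"
    by (rule hom_comp[OF rD h0 eD_hom])
  have e: "(\<lambda>x\<in>carrier (obj D i). eD (i+1) (restrict (diff Y i) (Dc i) x)) = diff D i"
    unfolding D_diff by (rule ext) (simp add: restrict_def)
  have "diff D i \<in> mod_hom L (obj D i) (obj Y (i+1))" using h1 e by simp
  hence "diff D i \<in> mod_hom L (obj D i) ((obj Y (i+1))\<lparr>carrier := Dc (i+1)\<rparr>)"
    by (rule hom_restrict_cod) (simp add: D_diff eD_in hom_closed[OF dY] Dc_c)
  thus "diff D i \<in> mod_hom L (obj D i) (obj D (i + 1))" by simp
  fix y assume "y \<in> carrier (obj D i)"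
  hence y: "y \<in> Dc i" by simp
  have dy: "diff Y i y \<in> carrier (obj Y (i+1))" using hom_closed[OF dY Dc_c[OF y]] .
  have "diff D (i+1) (diff D i y) = eD (i+1+1) (diff Y (i+1) (eD (i+1) (diff Y i y)))"
    using y eD_in[OF dy] by (simp add: D_diff)
  also have "\<dots> = eD (i+1+1) (diff Y (i+1) (diff Y i y))" using eD_d[OF dy] by simp
  also have "\<dots> = \<zero>\<^bsub>obj Y (i+2)\<^esub>"
  proof -
    have ii: "i+1+1 = i+2" by simp
    show ?thesis unfolding ii using cplx_dd[OF cY Dc_c[OF y]] hom_zero[OF rY rY eD_hom] by simp
  qed
  finally show "diff D (i + 1) (diff D i y) = \<zero>\<^bsub>obj D (i + 2)\<^esub>" by simp
qed

lemma D_inCn: "in_Cn L n D"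
  unfolding in_Cn_def
proof (intro conjI allI impI)
  show "is_complex L D" by (rule D_cplx)
  fix i
  have "fg_projective L ((obj Y i)\<lparr>carrier := Dc i\<rparr>)"
    by (rule sub_fgp[OF inCn_fgp[OF Y] D_sub eD_hom eD_in eD_id])
  thus "fg_projective L (obj D i)" by simp
next
  fix i :: int assume "i < 1 \<or> int n < i"
  hence z: "carrier (obj Y i) = {\<zero>\<^bsub>obj Y i\<^esub>}" using inCn_zero[OF Y] unfolding zero_mod_def by blast
  have "\<zero>\<^bsub>obj Y i\<^esub> \<in> Dc i" using D_sub unfolding submodule_def by blast
  thus "zero_mod (obj D i)" unfolding zero_mod_def using z Dc_c by auto
qed

end

lemma coker_carrier[simp]: "carrier (obj (coker_cplx X Y f) i) = coset_of X Y f i ` carrier (obj Y i)"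
  by (simp add: coker_cplx_def)
lemma coker_zero[simp]: "\<zero>\<^bsub>obj (coker_cplx X Y f) i\<^esub> = coset_of X Y f i \<zero>\<^bsub>obj Y i\<^esub>"
  by (simp add: coker_cplx_def)
lemma coker_add[simp]: "U \<oplus>\<^bsub>obj (coker_cplx X Y f) i\<^esub> V = {u \<oplus>\<^bsub>obj Y i\<^esub> v | u v. u \<in> U \<and> v \<in> V}"
  by (simp add: coker_cplx_def)
lemma coker_smult[simp]: "rsmult (obj (coker_cplx X Y f) i) U a = (\<Union>u\<in>U. coset_of X Y f i (rsmult (obj Y i) u a))"
  by (simp add: coker_cplx_def)
lemma coker_diff: "diff (coker_cplx X Y f) i = (\<lambda>U\<in>coset_of X Y f i ` carrier (obj Y i). \<Union>u\<in>U. coset_of X Y f (i + 1) (diff Y i u))"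
  by (simp add: coker_cplx_def)

context cbase begin

abbreviation cs where "cs i y \<equiv> coset_of X Y f i y"

lemma cs_def': "cs i y = {y \<oplus>\<^bsub>obj Y i\<^esub> f i x | x. x \<in> carrier (obj X i)}"
  unfolding coset_of_def by blast

lemma cs_mem: "y \<in> carrier (obj Y i) \<Longrightarrow> y \<in> cs i y"
proof -
  assume y: "y \<in> carrier (obj Y i)"
  interpret Yi: rmod L "obj Y i" by (rule rmod.intro[OF rY])
  have "y = y \<oplus>\<^bsub>obj Y i\<^esub> f i \<zero>\<^bsub>obj X i\<^esub>" using y hom_zero[OF rX rY fh] by simp
  thus ?thesis unfolding cs_def' using rmod_zero_closed[OF rX] by blast
qed

lemma cs_shift: "y \<in> carrier (obj Y i) \<Longrightarrow> x \<in> carrier (obj X i) \<Longrightarrow> cs i (y \<oplus>\<^bsub>obj Y i\<^esub> f i x) = cs i y"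
proof -
  assume y: "y \<in> carrier (obj Y i)" and x: "x \<in> carrier (obj X i)"
  interpret Yi: rmod L "obj Y i" by (rule rmod.intro[OF rY])
  interpret Xi: rmod L "obj X i" by (rule rmod.intro[OF rX])
  have fx: "f i x \<in> carrier (obj Y i)" using hom_closed[OF fh x] .
  show ?thesis unfolding cs_def'
  proof (intro equalityI subsetI)
    fix u assume "u \<in> {y \<oplus>\<^bsub>obj Y i\<^esub> f i x \<oplus>\<^bsub>obj Y i\<^esub> f i x' | x'. x' \<in> carrier (obj X i)}"
    then obtain x' where x': "x' \<in> carrier (obj X i)" "u = y \<oplus>\<^bsub>obj Y i\<^esub> f i x \<oplus>\<^bsub>obj Y i\<^esub> f i x'" by blast
    have "u = y \<oplus>\<^bsub>obj Y i\<^esub> f i (x \<oplus>\<^bsub>obj X i\<^esub> x')"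
      using x' x y fx hom_closed[OF fh x'(1)] by (simp add: hom_add[OF fh] Yi.a_assoc)
    thus "u \<in> {y \<oplus>\<^bsub>obj Y i\<^esub> f i x' | x'. x' \<in> carrier (obj X i)}" using x x' by blast
  next
    fix u assume "u \<in> {y \<oplus>\<^bsub>obj Y i\<^esub> f i x' | x'. x' \<in> carrier (obj X i)}"
    then obtain x' where x': "x' \<in> carrier (obj X i)" "u = y \<oplus>\<^bsub>obj Y i\<^esub> f i x'" by blast
    have "f i (x' \<ominus>\<^bsub>obj X i\<^esub> x) = f i x' \<ominus>\<^bsub>obj Y i\<^esub> f i x" using x x' by (simp add: hom_minus[OF rX rY fh])
    hence "u = y \<oplus>\<^bsub>obj Y i\<^esub> f i x \<oplus>\<^bsub>obj Y i\<^esub> f i (x' \<ominus>\<^bsub>obj X i\<^esub> x)"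
      using x' x y fx hom_closed[OF fh x'(1)] by (simp add: Yi.a_assoc)
    thus "u \<in> {y \<oplus>\<^bsub>obj Y i\<^esub> f i x \<oplus>\<^bsub>obj Y i\<^esub> f i x' | x'. x' \<in> carrier (obj X i)}" using x x' by blast
  qed
qed

lemma cs_elem: "u \<in> cs i y \<Longrightarrow> \<exists>x\<in>carrier (obj X i). u = y \<oplus>\<^bsub>obj Y i\<^esub> f i x"
  unfolding cs_def' by blast

lemma cs_same: "y \<in> carrier (obj Y i) \<Longrightarrow> u \<in> cs i y \<Longrightarrow> cs i u = cs i y"
  using cs_elem cs_shift by blast

lemma cs_eD: "y \<in> carrier (obj Y i) \<Longrightarrow> cs i (eD i y) = cs i y"
proof -
  assume y: "y \<in> carrier (obj Y i)"
  have ry: "r i y \<in> carrier (obj X i)" using hom_closed[OF r y] .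
  have "eD i y = y \<oplus>\<^bsub>obj Y i\<^esub> f i (\<ominus>\<^bsub>obj X i\<^esub> r i y)"
    using y ry by (simp add: eD_def a_minus_def hom_neg[OF rX rY fh])
  thus ?thesis using cs_shift[OF y rmod_neg_closed[OF rX ry]] by simp
qed

lemma cs_inj: "y \<in> Dc i \<Longrightarrow> y' \<in> Dc i \<Longrightarrow> cs i y = cs i y' \<Longrightarrow> y = y'"
proof -
  assume y: "y \<in> Dc i" and y': "y' \<in> Dc i" and e: "cs i y = cs i y'"
  interpret Xi: rmod L "obj X i" by (rule rmod.intro[OF rX])
  have "y \<in> cs i y'" using e cs_mem[OF Dc_c[OF y]] by simp
  then obtain x where x: "x \<in> carrier (obj X i)" "y = y' \<oplus>\<^bsub>obj Y i\<^esub> f i x" using cs_elem by blast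
  have "r i y = r i y' \<oplus>\<^bsub>obj X i\<^esub> r i (f i x)" using x Dc_c[OF y'] hom_closed[OF fh x(1)] by (simp add: hom_add[OF r])
  hence "x = \<zero>\<^bsub>obj X i\<^esub>" using x y y' rf by (simp add: Dc_def)
  thus "y = y'" using x Dc_c[OF y'] hom_zero[OF rX rY fh]
    by (simp add: abelian_monoid.r_zero[OF abelian_group.axioms(1)[OF rmod_ag[OF rY]]])
qed

lemma cs_add: "y \<in> carrier (obj Y i) \<Longrightarrow> y' \<in> carrier (obj Y i) \<Longrightarrow>
   cs i (y \<oplus>\<^bsub>obj Y i\<^esub> y') = {u \<oplus>\<^bsub>obj Y i\<^esub> v | u v. u \<in> cs i y \<and> v \<in> cs i y'}"
proof -
  assume y: "y \<in> carrier (obj Y i)" and y': "y' \<in> carrier (obj Y i)"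
  interpret Yi: rmod L "obj Y i" by (rule rmod.intro[OF rY])
  show ?thesis
  proof (intro equalityI subsetI)
    fix w assume "w \<in> cs i (y \<oplus>\<^bsub>obj Y i\<^esub> y')"
    then obtain x where x: "x \<in> carrier (obj X i)" "w = (y \<oplus>\<^bsub>obj Y i\<^esub> y') \<oplus>\<^bsub>obj Y i\<^esub> f i x" using cs_elem by blast
    have "w = (y \<oplus>\<^bsub>obj Y i\<^esub> f i x) \<oplus>\<^bsub>obj Y i\<^esub> y'" using x y y' hom_closed[OF fh x(1)] by (simp add: Yi.a_ac)
    moreover have "y \<oplus>\<^bsub>obj Y i\<^esub> f i x \<in> cs i y" using x unfolding cs_def' by blast
    ultimately show "w \<in> {u \<oplus>\<^bsub>obj Y i\<^esub> v | u v. u \<in> cs i y \<and> v \<in> cs i y'}" using cs_mem[OF y'] by blast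
  next
    fix w assume "w \<in> {u \<oplus>\<^bsub>obj Y i\<^esub> v | u v. u \<in> cs i y \<and> v \<in> cs i y'}"
    then obtain u v where uv: "u \<in> cs i y" "v \<in> cs i y'" "w = u \<oplus>\<^bsub>obj Y i\<^esub> v" by blast
    obtain x where x: "x \<in> carrier (obj X i)" "u = y \<oplus>\<^bsub>obj Y i\<^esub> f i x" using cs_elem[OF uv(1)] by blast
    obtain x' where x': "x' \<in> carrier (obj X i)" "v = y' \<oplus>\<^bsub>obj Y i\<^esub> f i x'" using cs_elem[OF uv(2)] by blast
    have "w = (y \<oplus>\<^bsub>obj Y i\<^esub> y') \<oplus>\<^bsub>obj Y i\<^esub> f i (x \<oplus>\<^bsub>obj X i\<^esub> x')"
      using uv x x' y y' hom_closed[OF fh x(1)] hom_closed[OF fh x'(1)] by (simp add: hom_add[OF fh] Yi.a_ac)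
    thus "w \<in> cs i (y \<oplus>\<^bsub>obj Y i\<^esub> y')" unfolding cs_def' using x x' rmod_add_closed[OF rX] by blast
  qed
qed

lemma union_cs: "y \<in> carrier (obj Y i) \<Longrightarrow> (\<And>u. u \<in> cs i y \<Longrightarrow> cs j (g u) = cs j (g y)) \<Longrightarrow>
    (\<Union>u\<in>cs i y. cs j (g u)) = cs j (g y)"
  using cs_mem by blast

lemma cs_smult: "y \<in> carrier (obj Y i) \<Longrightarrow> a \<in> carrier L \<Longrightarrow>
   cs i (rsmult (obj Y i) y a) = (\<Union>u\<in>cs i y. cs i (rsmult (obj Y i) u a))"
proof -
  assume y: "y \<in> carrier (obj Y i)" and a: "a \<in> carrier L"
  interpret Yi: rmod L "obj Y i" by (rule rmod.intro[OF rY])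
  have "(\<Union>u\<in>cs i y. cs i (rsmult (obj Y i) u a)) = cs i (rsmult (obj Y i) y a)"
  proof (rule union_cs[OF y])
    fix u assume "u \<in> cs i y"
    then obtain x where x: "x \<in> carrier (obj X i)" "u = y \<oplus>\<^bsub>obj Y i\<^esub> f i x" using cs_elem by blast
    have "rsmult (obj Y i) u a = rsmult (obj Y i) y a \<oplus>\<^bsub>obj Y i\<^esub> f i (rsmult (obj X i) x a)"
      using x y a hom_closed[OF fh x(1)] by (simp add: Yi.smult_add1 hom_smult[OF fh])
    thus "cs i (rsmult (obj Y i) u a) = cs i (rsmult (obj Y i) y a)"
      using cs_shift y a x rmod_smult_closed[OF rX] by simp
  qed
  thus ?thesis by simp
qed

lemma cs_diff: "y \<in> carrier (obj Y i) \<Longrightarrow> (\<Union>u\<in>cs i y. cs (i+1) (diff Y i u)) = cs (i+1) (diff Y i y)"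
proof (rule union_cs)
  fix u assume y: "y \<in> carrier (obj Y i)" and "u \<in> cs i y"
  then obtain x where x: "x \<in> carrier (obj X i)" "u = y \<oplus>\<^bsub>obj Y i\<^esub> f i x" using cs_elem by blast
  have "diff Y i u = diff Y i y \<oplus>\<^bsub>obj Y (i+1)\<^esub> f (i+1) (diff X i x)"
    using x y hom_closed[OF fh x(1)] by (simp add: hom_add[OF dY] chain_comm[OF f])
  thus "cs (i+1) (diff Y i u) = cs (i+1) (diff Y i y)"
    using cs_shift[OF hom_closed[OF dY y] hom_closed[OF dX x(1)]] by simp
qed

lemma coker_trans: "ctrans L D (coker_cplx X Y f) (\<lambda>i y. coset_of X Y f i y)"
proof (unfold_locales, goal_cases)
  case 1 show ?case by (rule D_cplx)
next
  case (2 i)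
  show ?case unfolding bij_betw_def
  proof
    show "inj_on (cs i) (carrier (obj D i))" using cs_inj by (auto intro!: inj_onI)
    show "cs i ` carrier (obj D i) = carrier (obj (coker_cplx X Y f) i)"
    proof (intro equalityI subsetI)
      fix U assume "U \<in> cs i ` carrier (obj D i)"
      thus "U \<in> carrier (obj (coker_cplx X Y f) i)" using Dc_c by auto
    next
      fix U assume "U \<in> carrier (obj (coker_cplx X Y f) i)"
      then obtain y where y: "y \<in> carrier (obj Y i)" "U = cs i y" by auto
      hence "U = cs i (eD i y)" using cs_eD by simp
      thus "U \<in> cs i ` carrier (obj D i)" using eD_in[OF y(1)] by simp
    qed
  qed
next
  case (3 i x y) thus ?case using cs_add Dc_c by simp
next
  case (4 i x a) thus ?case using cs_smult Dc_c by simp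
next
  case (5 i) show ?case by simp
next
  case (6 i y)
  hence y: "y \<in> Dc i" by simp
  have dy: "diff Y i y \<in> carrier (obj Y (i+1))" using hom_closed[OF dY Dc_c[OF y]] .
  have "cs (i+1) (diff D i y) = cs (i+1) (diff Y i y)" using y cs_eD[OF dy] by (simp add: D_diff)
  also have "\<dots> = diff (coker_cplx X Y f) i (cs i y)" using cs_diff[OF Dc_c[OF y]] Dc_c[OF y] by (simp add: coker_diff)
  finally show ?case .
next
  case (7 i) show ?case by (simp add: coker_diff)
qed

end

locale cdec = cbase L n X Y f r
  for L :: "('r,'y) ring_scheme" and n :: nat and X :: "('a,'r) cplx" and Y :: "('b,'r) cplx"
    and f :: "int \<Rightarrow> 'a \<Rightarrow> 'b" and r :: "int \<Rightarrow> 'b \<Rightarrow> 'a" +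
  fixes A B :: "int \<Rightarrow> 'b set"
  assumes Asub: "\<And>i. submodule L (A i) (obj Y i)" and Bsub: "\<And>i. submodule L (B i) (obj Y i)"
    and AD: "\<And>i. A i \<subseteq> Dc i" and BD: "\<And>i. B i \<subseteq> Dc i"
    and Ad: "\<And>i a. a \<in> A i \<Longrightarrow> eD (i+1) (diff Y i a) \<in> A (i+1)"
    and Bd: "\<And>i b. b \<in> B i \<Longrightarrow> eD (i+1) (diff Y i b) \<in> B (i+1)"
    and AB: "\<And>i. A i \<inter> B i = {\<zero>\<^bsub>obj Y i\<^esub>}"
    and sum: "\<And>i k. k \<in> Dc i \<Longrightarrow> \<exists>a\<in>A i. \<exists>b\<in>B i. k = a \<oplus>\<^bsub>obj Y i\<^esub> b"
begin

lemma swap: "cdec L n X Y f r B A"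
proof -
  have "cbase L n X Y f r" by unfold_locales
  moreover have "cdec_axioms L X Y f r B A"
  proof (unfold_locales, goal_cases)
    case (1 i) show ?case by (rule Bsub)
  next case (2 i) show ?case by (rule Asub)
  next case (3 i) show ?case by (rule BD)
  next case (4 i) show ?case by (rule AD)
  next case (5 i a) thus ?case by (rule Bd)
  next case (6 i a) thus ?case by (rule Ad)
  next case (7 i) show ?case using AB by blast
  next case (8 i k)
    then obtain a b where ab: "a \<in> A i" "b \<in> B i" "k = a \<oplus>\<^bsub>obj Y i\<^esub> b" using sum by blast
    have "a \<in> carrier (obj Y i)" "b \<in> carrier (obj Y i)" using ab Asub Bsub unfolding submodule_def by blast+
    hence "k = b \<oplus>\<^bsub>obj Y i\<^esub> a" using ab abelian_monoid.a_comm[OF abelian_group.axioms(1)[OF rmod_ag[OF rY]]] by metis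
    thus ?case using ab by blast
  qed
  ultimately show ?thesis by (rule cdec.intro)
qed

lemma Ac: "a \<in> A i \<Longrightarrow> a \<in> carrier (obj Y i)" using Asub unfolding submodule_def by blast
lemma Bc: "b \<in> B i \<Longrightarrow> b \<in> carrier (obj Y i)" using Bsub unfolding submodule_def by blast
lemma A0: "\<zero>\<^bsub>obj Y i\<^esub> \<in> A i" using Asub unfolding submodule_def by blast
lemma B0: "\<zero>\<^bsub>obj Y i\<^esub> \<in> B i" using Bsub unfolding submodule_def by blast
lemma Aadd: "a \<in> A i \<Longrightarrow> a' \<in> A i \<Longrightarrow> a \<oplus>\<^bsub>obj Y i\<^esub> a' \<in> A i" using Asub unfolding submodule_def by blast
lemma Badd: "a \<in> B i \<Longrightarrow> a' \<in> B i \<Longrightarrow> a \<oplus>\<^bsub>obj Y i\<^esub> a' \<in> B i" using Bsub unfolding submodule_def by blast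
lemma Aneg: "a \<in> A i \<Longrightarrow> \<ominus>\<^bsub>obj Y i\<^esub> a \<in> A i" using Asub unfolding submodule_def by blast
lemma Bneg: "a \<in> B i \<Longrightarrow> \<ominus>\<^bsub>obj Y i\<^esub> a \<in> B i" using Bsub unfolding submodule_def by blast
lemma Asm: "a \<in> A i \<Longrightarrow> c \<in> carrier L \<Longrightarrow> rsmult (obj Y i) a c \<in> A i" using Asub unfolding submodule_def by blast
lemma Bsm: "a \<in> B i \<Longrightarrow> c \<in> carrier L \<Longrightarrow> rsmult (obj Y i) a c \<in> B i" using Bsub unfolding submodule_def by blast
lemma Aminus: "a \<in> A i \<Longrightarrow> a' \<in> A i \<Longrightarrow> a \<ominus>\<^bsub>obj Y i\<^esub> a' \<in> A i" by (simp add: a_minus_def Aadd Aneg)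
lemma Bminus: "a \<in> B i \<Longrightarrow> a' \<in> B i \<Longrightarrow> a \<ominus>\<^bsub>obj Y i\<^esub> a' \<in> B i" by (simp add: a_minus_def Badd Bneg)

definition pA where "pA i k = (THE a. a \<in> A i \<and> k \<ominus>\<^bsub>obj Y i\<^esub> a \<in> B i)"

lemma pA_unique:
  assumes k: "k \<in> carrier (obj Y i)" and a: "a \<in> A i" "k \<ominus>\<^bsub>obj Y i\<^esub> a \<in> B i"
  shows "pA i k = a"
  unfolding pA_def
proof (rule the_equality)
  show "a \<in> A i \<and> k \<ominus>\<^bsub>obj Y i\<^esub> a \<in> B i" using a by simp
  interpret Yi: rmod L "obj Y i" by (rule rmod.intro[OF rY])
  fix a' assume a': "a' \<in> A i \<and> k \<ominus>\<^bsub>obj Y i\<^esub> a' \<in> B i"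
  have ac: "a \<in> carrier (obj Y i)" "a' \<in> carrier (obj Y i)" using a a' Ac by auto
  have "(k \<ominus>\<^bsub>obj Y i\<^esub> a) \<ominus>\<^bsub>obj Y i\<^esub> (k \<ominus>\<^bsub>obj Y i\<^esub> a') = \<ominus>\<^bsub>obj Y i\<^esub> (a \<ominus>\<^bsub>obj Y i\<^esub> a')"
    by (subst Yi.ag_swap2) (use k ac in simp_all)
  then have "\<ominus>\<^bsub>obj Y i\<^esub> (a \<ominus>\<^bsub>obj Y i\<^esub> a') \<in> B i" using Bminus a a' by metis
  hence "\<ominus>\<^bsub>obj Y i\<^esub> (\<ominus>\<^bsub>obj Y i\<^esub> (a \<ominus>\<^bsub>obj Y i\<^esub> a')) \<in> B i" by (rule Bneg)
  hence "a \<ominus>\<^bsub>obj Y i\<^esub> a' \<in> B i" using ac by (simp add: Yi.minus_minus)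
  moreover have "a \<ominus>\<^bsub>obj Y i\<^esub> a' \<in> A i" using a a' Aminus by blast
  ultimately have "a \<ominus>\<^bsub>obj Y i\<^esub> a' = \<zero>\<^bsub>obj Y i\<^esub>" using AB by blast
  thus "a' = a" using ac Yi.ag_minus_eq0 by metis
qed

lemma pA_ex:
  assumes k: "k \<in> Dc i"
  shows "pA i k \<in> A i" "k \<ominus>\<^bsub>obj Y i\<^esub> pA i k \<in> B i"
proof -
  interpret Yi: rmod L "obj Y i" by (rule rmod.intro[OF rY])
  obtain a b where ab: "a \<in> A i" "b \<in> B i" "k = a \<oplus>\<^bsub>obj Y i\<^esub> b" using sum[OF k] by blast
  have "k \<ominus>\<^bsub>obj Y i\<^esub> a = b" using ab Ac Bc by simp
  hence "pA i k = a" using pA_unique[OF Dc_c[OF k] ab(1)] ab(2) by simp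
  thus "pA i k \<in> A i" "k \<ominus>\<^bsub>obj Y i\<^esub> pA i k \<in> B i" using ab \<open>k \<ominus>\<^bsub>obj Y i\<^esub> a = b\<close> by simp_all
qed

lemma pA_A: "a \<in> A i \<Longrightarrow> pA i a = a"
proof -
  assume a: "a \<in> A i"
  interpret Yi: rmod L "obj Y i" by (rule rmod.intro[OF rY])
  show ?thesis by (rule pA_unique) (use a Ac B0 in simp_all)
qed

lemma pA_B: "b \<in> B i \<Longrightarrow> pA i b = \<zero>\<^bsub>obj Y i\<^esub>"
proof -
  assume b: "b \<in> B i"
  interpret Yi: rmod L "obj Y i" by (rule rmod.intro[OF rY])
  show ?thesis by (rule pA_unique) (use b Bc A0 in simp_all)
qed

definition \<pi>A where "\<pi>A i = (\<lambda>y\<in>carrier (obj Y i). pA i (eD i y))"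

lemma \<pi>A_A: "y \<in> carrier (obj Y i) \<Longrightarrow> \<pi>A i y \<in> A i"
  unfolding \<pi>A_def using pA_ex(1)[OF eD_in] by simp

lemma \<pi>A_c: "y \<in> carrier (obj Y i) \<Longrightarrow> \<pi>A i y \<in> carrier (obj Y i)"
  using \<pi>A_A Ac by blast

lemma \<pi>A_onA: "a \<in> A i \<Longrightarrow> \<pi>A i a = a"
  unfolding \<pi>A_def using Ac AD eD_id pA_A by fastforce

lemma \<pi>A_onB: "b \<in> B i \<Longrightarrow> \<pi>A i b = \<zero>\<^bsub>obj Y i\<^esub>"
  unfolding \<pi>A_def using Bc BD eD_id pA_B by fastforce

lemma \<pi>A_D: "k \<in> Dc i \<Longrightarrow> \<pi>A i k = pA i k"
  unfolding \<pi>A_def using eD_id Dc_c by simp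

lemma \<pi>A_idem: "y \<in> carrier (obj Y i) \<Longrightarrow> \<pi>A i (\<pi>A i y) = \<pi>A i y"
  using \<pi>A_onA \<pi>A_A by blast

lemma \<pi>A_f: "x \<in> carrier (obj X i) \<Longrightarrow> \<pi>A i (f i x) = \<zero>\<^bsub>obj Y i\<^esub>"
  unfolding \<pi>A_def using eD_f hom_closed[OF fh] pA_B[OF B0] by simp

lemma \<pi>A_hom: "\<pi>A i \<in> mod_hom L (obj Y i) (obj Y i)"
proof -
  interpret Yi: rmod L "obj Y i" by (rule rmod.intro[OF rY])
  show ?thesis
  proof (rule mod_homI, goal_cases)
    case (1 x) then show ?case by (rule \<pi>A_c)
  next
    case (2 x) then show ?case by (simp add: \<pi>A_def)
  next
    case (3 x y)
    let ?k = "eD i x" and ?l = "eD i y"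
    have kD: "?k \<in> Dc i" "?l \<in> Dc i" using 3 eD_in by blast+
    have k: "?k \<in> carrier (obj Y i)" "?l \<in> carrier (obj Y i)" using kD Dc_c by blast+
    have a: "pA i ?k \<in> A i" "pA i ?l \<in> A i" "?k \<ominus>\<^bsub>obj Y i\<^esub> pA i ?k \<in> B i" "?l \<ominus>\<^bsub>obj Y i\<^esub> pA i ?l \<in> B i"
      using pA_ex kD by blast+
    have ac: "pA i ?k \<in> carrier (obj Y i)" "pA i ?l \<in> carrier (obj Y i)" using a Ac by blast+
    have e: "eD i (x \<oplus>\<^bsub>obj Y i\<^esub> y) = ?k \<oplus>\<^bsub>obj Y i\<^esub> ?l" using 3 by (simp add: hom_add[OF eD_hom])
    have "pA i (?k \<oplus>\<^bsub>obj Y i\<^esub> ?l) = pA i ?k \<oplus>\<^bsub>obj Y i\<^esub> pA i ?l"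
    proof (rule pA_unique)
      show "?k \<oplus>\<^bsub>obj Y i\<^esub> ?l \<in> carrier (obj Y i)" using k by simp
      show "pA i ?k \<oplus>\<^bsub>obj Y i\<^esub> pA i ?l \<in> A i" using a Aadd by blast
      have "(?k \<oplus>\<^bsub>obj Y i\<^esub> ?l) \<ominus>\<^bsub>obj Y i\<^esub> (pA i ?k \<oplus>\<^bsub>obj Y i\<^esub> pA i ?l)
          = (?k \<ominus>\<^bsub>obj Y i\<^esub> pA i ?k) \<oplus>\<^bsub>obj Y i\<^esub> (?l \<ominus>\<^bsub>obj Y i\<^esub> pA i ?l)"
        using k ac by (simp add: Yi.ag_swap)
      thus "(?k \<oplus>\<^bsub>obj Y i\<^esub> ?l) \<ominus>\<^bsub>obj Y i\<^esub> (pA i ?k \<oplus>\<^bsub>obj Y i\<^esub> pA i ?l) \<in> B i" using a Badd by simp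
    qed
    thus ?case using 3 e by (simp add: \<pi>A_def)
  next
    case (4 x c)
    let ?k = "eD i x"
    have kD: "?k \<in> Dc i" using 4 eD_in by blast
    have k: "?k \<in> carrier (obj Y i)" using kD Dc_c by blast
    have a: "pA i ?k \<in> A i" "?k \<ominus>\<^bsub>obj Y i\<^esub> pA i ?k \<in> B i" using pA_ex kD by blast+
    have ac: "pA i ?k \<in> carrier (obj Y i)" using a Ac by blast
    have e: "eD i (rsmult (obj Y i) x c) = rsmult (obj Y i) ?k c" using 4 by (simp add: hom_smult[OF eD_hom])
    have "pA i (rsmult (obj Y i) ?k c) = rsmult (obj Y i) (pA i ?k) c"
    proof (rule pA_unique)
      show "rsmult (obj Y i) ?k c \<in> carrier (obj Y i)" using k 4 by simp
      show "rsmult (obj Y i) (pA i ?k) c \<in> A i" using a 4 Asm by blast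
      have "rsmult (obj Y i) ?k c \<ominus>\<^bsub>obj Y i\<^esub> rsmult (obj Y i) (pA i ?k) c = rsmult (obj Y i) (?k \<ominus>\<^bsub>obj Y i\<^esub> pA i ?k) c"
        using k ac 4 by (simp add: rmod_smult_minus[OF rY])
      thus "rsmult (obj Y i) ?k c \<ominus>\<^bsub>obj Y i\<^esub> rsmult (obj Y i) (pA i ?k) c \<in> B i" using a 4 Bsm by simp
    qed
    thus ?case using 4 e by (simp add: \<pi>A_def)
  qed
qed

definition Yc where "Yc i = {y\<in>carrier (obj Y i). \<pi>A i y = \<zero>\<^bsub>obj Y i\<^esub>}"
definition ec where "ec i = (\<lambda>y\<in>carrier (obj Y i). y \<ominus>\<^bsub>obj Y i\<^esub> \<pi>A i y)"

lemma Yc_sub: "submodule L (Yc i) (obj Y i)" unfolding Yc_def by (rule ker_sub[OF rY rY \<pi>A_hom])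
lemma Yc_c: "y \<in> Yc i \<Longrightarrow> y \<in> carrier (obj Y i)" by (simp add: Yc_def)

lemma ec_hom: "ec i \<in> mod_hom L (obj Y i) (obj Y i)"
proof -
  have "(\<lambda>x\<in>carrier (obj Y i). (\<lambda>x\<in>carrier (obj Y i). x) x \<ominus>\<^bsub>obj Y i\<^esub> \<pi>A i x) \<in> mod_hom L (obj Y i) (obj Y i)"
    by (rule hom_minusf[OF rY rY hom_id[OF rY] \<pi>A_hom])
  moreover have "(\<lambda>x\<in>carrier (obj Y i). (\<lambda>x\<in>carrier (obj Y i). x) x \<ominus>\<^bsub>obj Y i\<^esub> \<pi>A i x) = ec i"
    unfolding ec_def by (rule restrict_ext) simp
  ultimately show ?thesis by simp
qed

lemma ec_in: "y \<in> carrier (obj Y i) \<Longrightarrow> ec i y \<in> Yc i"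
proof -
  assume y: "y \<in> carrier (obj Y i)"
  interpret Yi: rmod L "obj Y i" by (rule rmod.intro[OF rY])
  have "\<pi>A i (ec i y) = \<pi>A i y \<ominus>\<^bsub>obj Y i\<^esub> \<pi>A i (\<pi>A i y)"
    using y \<pi>A_c by (simp add: ec_def hom_minus[OF rY rY \<pi>A_hom])
  also have "\<dots> = \<zero>\<^bsub>obj Y i\<^esub>" using y \<pi>A_c \<pi>A_idem by simp
  finally show ?thesis using hom_closed[OF ec_hom y] by (simp add: Yc_def)
qed

lemma ec_id: "y \<in> Yc i \<Longrightarrow> ec i y = y"
proof -
  assume y: "y \<in> Yc i"
  interpret Yi: rmod L "obj Y i" by (rule rmod.intro[OF rY])
  show ?thesis using y by (simp add: Yc_def ec_def)
qed

lemma B_Yc: "b \<in> B i \<Longrightarrow> b \<in> Yc i" using Bc \<pi>A_onB by (simp add: Yc_def)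
lemma f_Yc: "x \<in> carrier (obj X i) \<Longrightarrow> f i x \<in> Yc i" using hom_closed[OF fh] \<pi>A_f by (simp add: Yc_def)

lemma Yc_d: "y \<in> Yc i \<Longrightarrow> diff Y i y \<in> Yc (i+1)"
proof -
  assume y: "y \<in> Yc i"
  interpret Yi: rmod L "obj Y i" by (rule rmod.intro[OF rY])
  have yc: "y \<in> carrier (obj Y i)" by (rule Yc_c[OF y])
  let ?k = "eD i y"
  have kD: "?k \<in> Dc i" using eD_in[OF yc] .
  have "pA i ?k = \<zero>\<^bsub>obj Y i\<^esub>" using y yc by (simp add: Yc_def \<pi>A_def)
  hence kB: "?k \<in> B i" using pA_ex(2)[OF kD] Dc_c[OF kD] by simp
  have dy: "diff Y i y \<in> carrier (obj Y (i+1))" using hom_closed[OF dY yc] .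
  have "\<pi>A (i+1) (diff Y i y) = pA (i+1) (eD (i+1) (diff Y i ?k))" using dy eD_d[OF yc] by (simp add: \<pi>A_def)
  also have "\<dots> = \<zero>\<^bsub>obj Y (i+1)\<^esub>" using pA_B[OF Bd[OF kB]] .
  finally show ?thesis using dy by (simp add: Yc_def)
qed

end

context cdec begin

definition YZ :: "('b, 'r) cplx" where
  "YZ = \<lparr> obj = (\<lambda>i. (obj Y i)\<lparr>carrier := Yc i\<rparr>), diff = (\<lambda>i. restrict (diff Y i) (Yc i)) \<rparr>"
definition inc where "inc i = (\<lambda>y\<in>Yc i. y)"

lemma YZ_obj[simp]: "obj YZ i = (obj Y i)\<lparr>carrier := Yc i\<rparr>" by (simp add: YZ_def)
lemma YZ_diff[simp]: "diff YZ i = restrict (diff Y i) (Yc i)" by (simp add: YZ_def)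

lemma YZ_cplx: "is_complex L YZ"
  unfolding is_complex_def
proof (intro allI conjI ballI)
  fix i
  show "right_module L (obj YZ i)" using rmodI_sub[OF rY Yc_sub] by simp
  have "restrict (diff Y i) (Yc i) \<in> mod_hom L ((obj Y i)\<lparr>carrier := Yc i\<rparr>) (obj Y (i+1))"
    by (rule hom_restrict_dom[OF dY Yc_sub])
  hence "restrict (diff Y i) (Yc i) \<in> mod_hom L ((obj Y i)\<lparr>carrier := Yc i\<rparr>) ((obj Y (i+1))\<lparr>carrier := Yc (i+1)\<rparr>)"
    by (rule hom_restrict_cod) (simp add: Yc_d)
  thus "diff YZ i \<in> mod_hom L (obj YZ i) (obj YZ (i + 1))" by simp
  fix y assume "y \<in> carrier (obj YZ i)"
  hence y: "y \<in> Yc i" by simp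
  show "diff YZ (i + 1) (diff YZ i y) = \<zero>\<^bsub>obj YZ (i + 2)\<^esub>"
    using y Yc_d[OF y] cplx_dd[OF cY Yc_c[OF y]] by simp
qed

lemma YZ_inCn: "in_Cn L n YZ"
  unfolding in_Cn_def
proof (intro conjI allI impI)
  show "is_complex L YZ" by (rule YZ_cplx)
  fix i
  have "fg_projective L ((obj Y i)\<lparr>carrier := Yc i\<rparr>)"
    by (rule sub_fgp[OF inCn_fgp[OF Y] Yc_sub ec_hom ec_in ec_id])
  thus "fg_projective L (obj YZ i)" by simp
next
  fix i :: int assume "i < 1 \<or> int n < i"
  hence z: "carrier (obj Y i) = {\<zero>\<^bsub>obj Y i\<^esub>}" using inCn_zero[OF Y] unfolding zero_mod_def by blast
  have "\<zero>\<^bsub>obj Y i\<^esub> \<in> Yc i" using Yc_sub unfolding submodule_def by blast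
  thus "zero_mod (obj YZ i)" unfolding zero_mod_def using z Yc_c by auto
qed

lemma fZ_chain: "chain_map L X YZ f"
  unfolding chain_map_def
proof (intro allI conjI ballI)
  fix i
  have "f i \<in> mod_hom L (obj X i) ((obj Y i)\<lparr>carrier := Yc i\<rparr>)" by (rule hom_restrict_cod[OF fh f_Yc])
  thus "f i \<in> mod_hom L (obj X i) (obj YZ i)" by simp
  fix x assume x: "x \<in> carrier (obj X i)"
  show "f (i + 1) (diff X i x) = diff YZ i (f i x)" using x f_Yc[OF x] chain_comm[OF f x] by simp
qed

lemma inc_chain: "chain_map L YZ Y inc"
  unfolding chain_map_def
proof (intro allI conjI ballI)
  fix i
  have "restrict (\<lambda>y\<in>carrier (obj Y i). y) (Yc i) \<in> mod_hom L ((obj Y i)\<lparr>carrier := Yc i\<rparr>) (obj Y i)"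
    by (rule hom_restrict_dom[OF hom_id[OF rY] Yc_sub])
  moreover have "restrict (\<lambda>y\<in>carrier (obj Y i). y) (Yc i) = inc i"
    unfolding inc_def by (rule restrict_ext) (simp add: Yc_c)
  ultimately show "inc i \<in> mod_hom L (obj YZ i) (obj Y i)" by simp
  fix y assume "y \<in> carrier (obj YZ i)"
  hence y: "y \<in> Yc i" by simp
  show "inc (i + 1) (diff YZ i y) = diff Y i (inc i y)" using y Yc_d[OF y] by (simp add: inc_def)
qed

lemma f_fact: "f = cmp X inc f"
  by (rule chain_eqI[OF f chain_cmp[OF cX fZ_chain inc_chain]]) (simp add: inc_def f_Yc)

lemma inc_nret:
  assumes nz: "\<exists>i. A i \<noteq> {\<zero>\<^bsub>obj Y i\<^esub>}"
  shows "\<not> is_retraction L YZ Y inc"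
proof
  assume "is_retraction L YZ Y inc"
  then obtain s where s: "chain_map L Y YZ s" and sis: "cmp Y inc s = cid Y" unfolding is_retraction_def by blast
  obtain i where i: "A i \<noteq> {\<zero>\<^bsub>obj Y i\<^esub>}" using nz by blast
  then obtain a where a: "a \<in> A i" "a \<noteq> \<zero>\<^bsub>obj Y i\<^esub>" using A0 by blast
  have sa: "s i a \<in> Yc i" using hom_closed[OF chain_hom[OF s] Ac[OF a(1)]] by simp
  have "a = cmp Y inc s i a" using sis Ac[OF a(1)] by simp
  also have "\<dots> = s i a" using Ac[OF a(1)] sa by (simp add: inc_def)
  finally have "a \<in> Yc i" using sa by simp
  hence "\<pi>A i a = \<zero>\<^bsub>obj Y i\<^esub>" by (simp add: Yc_def)
  thus False using \<pi>A_onA[OF a(1)] a(2) by simp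
qed

lemma ex\<rho>:
  assumes irr: "irreducible L n X Y f" and nz: "\<exists>i. A i \<noteq> {\<zero>\<^bsub>obj Y i\<^esub>}"
  shows "\<exists>\<rho>. chain_map L YZ X \<rho> \<and> (\<forall>i x. x \<in> carrier (obj X i) \<longrightarrow> \<rho> i (f i x) = x)"
proof -
  have "is_section L X YZ f \<or> is_retraction L YZ Y inc"
    by (rule irr_factor[OF irr YZ_inCn fZ_chain inc_chain f_fact])
  hence "is_section L X YZ f" using inc_nret[OF nz] by blast
  then obtain \<rho> where \<rho>: "chain_map L YZ X \<rho>" and \<rho>f: "cmp X \<rho> f = cid X" unfolding is_section_def by blast
  have "\<rho> i (f i x) = x" if x: "x \<in> carrier (obj X i)" for i x
    using \<rho>f x by (metis cid_apply cmp_apply)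
  thus ?thesis using \<rho> by blast
qed

end

context cdec begin

lemma sec_of_two:
  assumes irr: "irreducible L n X Y f" and nzA: "\<exists>i. A i \<noteq> {\<zero>\<^bsub>obj Y i\<^esub>}"
    and nzB: "\<exists>i. B i \<noteq> {\<zero>\<^bsub>obj Y i\<^esub>}"
  shows "is_section L X Y f"
proof -
  interpret S: cdec L n X Y f r B A by (rule swap)
  obtain \<rho>1 where \<rho>1: "chain_map L YZ X \<rho>1" and \<rho>1f: "\<And>i x. x \<in> carrier (obj X i) \<Longrightarrow> \<rho>1 i (f i x) = x"
    using ex\<rho>[OF irr nzA] by blast
  obtain \<rho>2 where \<rho>2: "chain_map L S.YZ X \<rho>2" and \<rho>2f: "\<And>i x. x \<in> carrier (obj X i) \<Longrightarrow> \<rho>2 i (f i x) = x"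
    using S.ex\<rho>[OF irr nzB] by blast
  have \<rho>1h: "\<rho>1 i \<in> mod_hom L ((obj Y i)\<lparr>carrier := Yc i\<rparr>) (obj X i)" for i using chain_hom[OF \<rho>1, of i] by simp
  have \<rho>2h: "\<rho>2 i \<in> mod_hom L ((obj Y i)\<lparr>carrier := S.Yc i\<rparr>) (obj X i)" for i using chain_hom[OF \<rho>2, of i] by simp
  have r1: "right_module L ((obj Y i)\<lparr>carrier := Yc i\<rparr>)" for i by (rule rmodI_sub[OF rY Yc_sub])
  have r2: "right_module L ((obj Y i)\<lparr>carrier := S.Yc i\<rparr>)" for i by (rule rmodI_sub[OF rY S.Yc_sub])
  have \<rho>1d: "\<rho>1 (i+1) (diff Y i y) = diff X i (\<rho>1 i y)" if y: "y \<in> Yc i" for i y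
    using chain_comm[OF \<rho>1, of y i] y by simp
  have \<rho>2d: "\<rho>2 (i+1) (diff Y i y) = diff X i (\<rho>2 i y)" if y: "y \<in> S.Yc i" for i y
    using chain_comm[OF \<rho>2, of y i] y by simp
  have inter: "z = f i (r i z)" if z1: "z \<in> Yc i" and z2: "z \<in> S.Yc i" for i z
  proof -
    interpret Yi: rmod L "obj Y i" by (rule rmod.intro[OF rY])
    have zc: "z \<in> carrier (obj Y i)" using Yc_c[OF z1] .
    have kD: "eD i z \<in> Dc i" using eD_in[OF zc] .
    have kc: "eD i z \<in> carrier (obj Y i)" using Dc_c[OF kD] .
    have "pA i (eD i z) = \<zero>\<^bsub>obj Y i\<^esub>" using z1 zc by (simp add: Yc_def \<pi>A_def)
    hence kB: "eD i z \<in> B i" using pA_ex(2)[OF kD] kc by simp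
    have "S.pA i (eD i z) = \<zero>\<^bsub>obj Y i\<^esub>" using z2 zc by (simp add: S.Yc_def S.\<pi>A_def)
    hence kA: "eD i z \<in> A i" using S.pA_ex(2)[OF kD] kc by simp
    have "eD i z = \<zero>\<^bsub>obj Y i\<^esub>" using kA kB AB by blast
    hence "z \<ominus>\<^bsub>obj Y i\<^esub> f i (r i z) = \<zero>\<^bsub>obj Y i\<^esub>" using zc by (simp add: eD_def)
    thus ?thesis using Yi.ag_minus_eq0 zc frc[OF zc] by blast
  qed
  have wd: "\<rho>1 i (ec i y) \<oplus>\<^bsub>obj X i\<^esub> \<rho>2 i (\<pi>A i y) = \<rho>1 i u \<oplus>\<^bsub>obj X i\<^esub> \<rho>2 i v"
    if u: "u \<in> Yc i" and v: "v \<in> S.Yc i" and y: "y = u \<oplus>\<^bsub>obj Y i\<^esub> v" for i u v y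
  proof -
    interpret Yi: rmod L "obj Y i" by (rule rmod.intro[OF rY])
    interpret Xi: rmod L "obj X i" by (rule rmod.intro[OF rX])
    have uc: "u \<in> carrier (obj Y i)" using Yc_c[OF u] .
    have vc: "v \<in> carrier (obj Y i)" using S.Yc_c[OF v] .
    have yc: "y \<in> carrier (obj Y i)" using uc vc y by simp
    let ?u0 = "ec i y" and ?v0 = "\<pi>A i y"
    have u0: "?u0 \<in> Yc i" using ec_in[OF yc] .
    have v0: "?v0 \<in> S.Yc i" using S.B_Yc[OF \<pi>A_A[OF yc]] .
    have u0c: "?u0 \<in> carrier (obj Y i)" using Yc_c[OF u0] .
    have v0c: "?v0 \<in> carrier (obj Y i)" using \<pi>A_c[OF yc] .
    have yd: "y = ?u0 \<oplus>\<^bsub>obj Y i\<^esub> ?v0" using yc v0c by (simp add: ec_def)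
    define z where "z = u \<ominus>\<^bsub>obj Y i\<^esub> ?u0"
    have zc: "z \<in> carrier (obj Y i)" using uc u0c by (simp add: z_def)
    have uz: "u = ?u0 \<oplus>\<^bsub>obj Y i\<^esub> z" using uc u0c by (simp add: z_def)
    have "?u0 \<oplus>\<^bsub>obj Y i\<^esub> (z \<oplus>\<^bsub>obj Y i\<^esub> v) = (?u0 \<oplus>\<^bsub>obj Y i\<^esub> z) \<oplus>\<^bsub>obj Y i\<^esub> v"
      using u0c zc vc by (simp add: Yi.a_assoc)
    also have "\<dots> = y" using uz y by simp
    also have "\<dots> = ?u0 \<oplus>\<^bsub>obj Y i\<^esub> ?v0" by (rule yd)
    finally have "(?u0 \<oplus>\<^bsub>obj Y i\<^esub> (z \<oplus>\<^bsub>obj Y i\<^esub> v)) \<ominus>\<^bsub>obj Y i\<^esub> ?u0 = (?u0 \<oplus>\<^bsub>obj Y i\<^esub> ?v0) \<ominus>\<^bsub>obj Y i\<^esub> ?u0" by simp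
    hence zv: "z \<oplus>\<^bsub>obj Y i\<^esub> v = ?v0" using u0c zc vc v0c by simp
    have vz: "v = ?v0 \<ominus>\<^bsub>obj Y i\<^esub> z" using zv zc vc by (metis Yi.ag_add_minus_cancel3)
    have z1: "z \<in> Yc i" unfolding z_def using u u0 Yc_sub unfolding submodule_def a_minus_def by blast
    have z2: "z \<in> S.Yc i"
    proof -
      have "?v0 \<ominus>\<^bsub>obj Y i\<^esub> v \<in> S.Yc i" using v v0 S.Yc_sub unfolding submodule_def a_minus_def by blast
      moreover have "?v0 \<ominus>\<^bsub>obj Y i\<^esub> v = z" using vz zc v0c by simp
      ultimately show ?thesis by simp
    qed
    have zf: "z = f i (r i z)" by (rule inter[OF z1 z2])
    have rz: "r i z \<in> carrier (obj X i)" using hom_closed[OF r zc] .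
    have "\<rho>1 i u = \<rho>1 i ?u0 \<oplus>\<^bsub>obj X i\<^esub> \<rho>1 i z" using uz u0 z1 hom_add[OF \<rho>1h[of i], of ?u0 z] by simp
    also have "\<rho>1 i z = r i z" using zf \<rho>1f[OF rz] by metis
    finally have e1: "\<rho>1 i u = \<rho>1 i ?u0 \<oplus>\<^bsub>obj X i\<^esub> r i z" .
    have vz2: "v \<oplus>\<^bsub>obj Y i\<^esub> z = ?v0" using zv zc vc Yi.a_comm by metis
    have "\<rho>2 i v \<oplus>\<^bsub>obj X i\<^esub> \<rho>2 i z = \<rho>2 i ?v0" using hom_add[OF \<rho>2h[of i], of v z] v z2 vz2 by simp
    moreover have "\<rho>2 i z = r i z" using zf \<rho>2f[OF rz] by metis
    ultimately have "\<rho>2 i v \<oplus>\<^bsub>obj X i\<^esub> r i z = \<rho>2 i ?v0" by simp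
    moreover have "\<rho>2 i v \<in> carrier (obj X i)" using hom_closed[OF \<rho>2h[of i], of v] v by simp
    ultimately have e2: "\<rho>2 i v = \<rho>2 i ?v0 \<ominus>\<^bsub>obj X i\<^esub> r i z"
      using rz Xi.ag_eq_minus[of "\<rho>2 i v" "\<rho>2 i ?v0" "r i z"] hom_closed[OF \<rho>2h[of i], of ?v0] v0 by simp
    have a: "\<rho>1 i ?u0 \<in> carrier (obj X i)" using hom_closed[OF \<rho>1h] u0 by simp
    have b: "\<rho>2 i ?v0 \<in> carrier (obj X i)" using hom_closed[OF \<rho>2h] v0 by simp
    show ?thesis unfolding e1 e2 using a b rz
      by (simp add: Xi.ag_add_sub Xi.a_ac)
  qed
  define \<sigma> where "\<sigma> i = (\<lambda>y\<in>carrier (obj Y i). \<rho>1 i (ec i y) \<oplus>\<^bsub>obj X i\<^esub> \<rho>2 i (\<pi>A i y))" for i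
  have \<sigma>h: "\<sigma> i \<in> mod_hom L (obj Y i) (obj X i)" for i
  proof -
    have ech: "ec i \<in> mod_hom L (obj Y i) ((obj Y i)\<lparr>carrier := Yc i\<rparr>)" by (rule hom_restrict_cod[OF ec_hom ec_in])
    have pih: "\<pi>A i \<in> mod_hom L (obj Y i) ((obj Y i)\<lparr>carrier := S.Yc i\<rparr>)"
      by (rule hom_restrict_cod[OF \<pi>A_hom]) (rule S.B_Yc[OF \<pi>A_A])
    have "(\<lambda>y\<in>carrier (obj Y i). (\<lambda>y\<in>carrier (obj Y i). \<rho>1 i (ec i y)) y \<oplus>\<^bsub>obj X i\<^esub> (\<lambda>y\<in>carrier (obj Y i). \<rho>2 i (\<pi>A i y)) y)
        \<in> mod_hom L (obj Y i) (obj X i)"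
      by (rule hom_addf[OF rY rX hom_comp[OF rY ech \<rho>1h] hom_comp[OF rY pih \<rho>2h]])
    moreover have "(\<lambda>y\<in>carrier (obj Y i). (\<lambda>y\<in>carrier (obj Y i). \<rho>1 i (ec i y)) y \<oplus>\<^bsub>obj X i\<^esub> (\<lambda>y\<in>carrier (obj Y i). \<rho>2 i (\<pi>A i y)) y) = \<sigma> i"
      unfolding \<sigma>_def by (rule restrict_ext) simp
    ultimately show ?thesis by simp
  qed
  have \<sigma>_chain: "chain_map L Y X \<sigma>"
    unfolding chain_map_def
  proof (intro allI conjI ballI)
    fix i show "\<sigma> i \<in> mod_hom L (obj Y i) (obj X i)" by (rule \<sigma>h)
    fix y assume y: "y \<in> carrier (obj Y i)"
    interpret Yi: rmod L "obj Y i" by (rule rmod.intro[OF rY])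
    interpret Xi: rmod L "obj X (i+1)" by (rule rmod.intro[OF rX])
    let ?u0 = "ec i y" and ?v0 = "\<pi>A i y"
    have u0: "?u0 \<in> Yc i" using ec_in[OF y] .
    have v0: "?v0 \<in> S.Yc i" using S.B_Yc[OF \<pi>A_A[OF y]] .
    have u0c: "?u0 \<in> carrier (obj Y i)" using Yc_c[OF u0] .
    have v0c: "?v0 \<in> carrier (obj Y i)" using \<pi>A_c[OF y] .
    have yd: "y = ?u0 \<oplus>\<^bsub>obj Y i\<^esub> ?v0" using y v0c by (simp add: ec_def)
    have dyd: "diff Y i y = diff Y i ?u0 \<oplus>\<^bsub>obj Y (i+1)\<^esub> diff Y i ?v0"
      using u0c v0c yd hom_add[OF dY u0c v0c] by simp
    have dy: "diff Y i y \<in> carrier (obj Y (i+1))" using hom_closed[OF dY y] .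
    have "\<sigma> (i+1) (diff Y i y) = \<rho>1 (i+1) (diff Y i ?u0) \<oplus>\<^bsub>obj X (i+1)\<^esub> \<rho>2 (i+1) (diff Y i ?v0)"
      using dy wd[OF Yc_d[OF u0] S.Yc_d[OF v0] dyd] by (simp add: \<sigma>_def)
    also have "\<dots> = diff X i (\<rho>1 i ?u0) \<oplus>\<^bsub>obj X (i+1)\<^esub> diff X i (\<rho>2 i ?v0)"
      using \<rho>1d[OF u0] \<rho>2d[OF v0] by simp
    also have "\<dots> = diff X i (\<sigma> i y)"
      using y hom_closed[OF \<rho>1h, of ?u0 i] hom_closed[OF \<rho>2h[of i], of ?v0] u0 v0
      by (simp add: \<sigma>_def hom_add[OF dX])
    finally show "\<sigma> (i + 1) (diff Y i y) = diff X i (\<sigma> i y)" .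
  qed
  have \<sigma>f: "\<sigma> i (f i x) = x" if x: "x \<in> carrier (obj X i)" for i x
  proof -
    interpret Xi: rmod L "obj X i" by (rule rmod.intro[OF rX])
    have "\<rho>2 i \<zero>\<^bsub>obj Y i\<^esub> = \<zero>\<^bsub>obj X i\<^esub>" using hom_zero[OF r2 rX \<rho>2h] by simp
    thus ?thesis using x hom_closed[OF fh x] ec_id[OF f_Yc[OF x]] \<rho>1f[OF x] \<pi>A_f[OF x]
      by (simp add: \<sigma>_def)
  qed
  have "cmp X \<sigma> f = cid X"
    by (rule iffD2[OF cmp_eq_cid_iff[OF chain_cmp[OF cX f \<sigma>_chain]]]) (simp add: \<sigma>f)
  thus ?thesis using \<sigma>_chain f unfolding is_section_def by blast
qed

end

lemma part_b:
  fixes L :: "('r,'y) ring_scheme" and X :: "('a,'r) cplx" and Y :: "('b,'r) cplx" and f :: "int \<Rightarrow> 'a \<Rightarrow> 'b"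
  assumes sec: "type_sec L n X Y f"
  shows "in_Cn L n (coker_cplx X Y f) \<and> indecomposable L (coker_cplx X Y f)"
proof -
  have irr: "irreducible L n X Y f" and secs: "\<And>i. mod_section L (obj X i) (obj Y i) (f i)"
    using sec unfolding type_sec_def by blast+
  have X: "in_Cn L n X" and Y: "in_Cn L n Y" and f: "chain_map L X Y f"
    and nsec: "\<not> is_section L X Y f" and nret: "\<not> is_retraction L X Y f"
    using irr unfolding irreducible_def by blast+
  have "\<forall>i. \<exists>r. r \<in> mod_hom L (obj Y i) (obj X i) \<and> (\<forall>x\<in>carrier (obj X i). r (f i x) = x)"
    using secs unfolding mod_section_def by blast
  then obtain r where r: "\<And>i. r i \<in> mod_hom L (obj Y i) (obj X i)"
    and rf: "\<And>i x. x \<in> carrier (obj X i) \<Longrightarrow> r i (f i x) = x" by metis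
  interpret cbase L n X Y f r by (unfold_locales) (use X Y f r rf in auto)
  interpret T: ctrans L D "coker_cplx X Y f" "\<lambda>i y. coset_of X Y f i y" by (rule coker_trans)
  have indD: "indecomposable L D"
    unfolding indecomposable_def
  proof (intro conjI allI impI)
    show "is_complex L D" by (rule D_cplx)
    show "\<not> (\<forall>i. zero_mod (obj D i))"
    proof
      assume z: "\<forall>i. zero_mod (obj D i)"
      have "bij_betw (f i) (carrier (obj X i)) (carrier (obj Y i))" for i
      proof -
        interpret Yi: rmod L "obj Y i" by (rule rmod.intro[OF rY])
        have Dz: "Dc i = {\<zero>\<^bsub>obj Y i\<^esub>}" using z unfolding zero_mod_def by simp
        have inj: "inj_on (f i) (carrier (obj X i))" by (rule inj_on_inverseI[of _ "r i"]) (simp add: rf)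
        have "f i ` carrier (obj X i) = carrier (obj Y i)"
        proof
          show "f i ` carrier (obj X i) \<subseteq> carrier (obj Y i)" using fh by (blast intro: hom_closed)
          show "carrier (obj Y i) \<subseteq> f i ` carrier (obj X i)"
          proof
            fix y assume y: "y \<in> carrier (obj Y i)"
            have "eD i y = \<zero>\<^bsub>obj Y i\<^esub>" using eD_in[OF y] Dz by blast
            hence "y \<ominus>\<^bsub>obj Y i\<^esub> f i (r i y) = \<zero>\<^bsub>obj Y i\<^esub>" using y by (simp add: eD_def)
            hence "y = f i (r i y)" using Yi.ag_minus_eq0 y frc[OF y] by blast
            thus "y \<in> f i ` carrier (obj X i)" using hom_closed[OF r y] by blast
          qed
        qed
        thus ?thesis using inj by (simp add: bij_betw_def)
      qed
      hence "is_retraction L X Y f" by (rule bij_chain_section(2)[OF cX cY f])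
      thus False using nret by simp
    qed
    fix A B :: "int \<Rightarrow> 'b set"
    assume H: "\<forall>i. submodule L (A i) (obj D i) \<and> submodule L (B i) (obj D i) \<and>
             diff D i ` A i \<subseteq> A (i + 1) \<and> diff D i ` B i \<subseteq> B (i + 1) \<and>
             A i \<inter> B i = {\<zero>\<^bsub>obj D i\<^esub>} \<and>
             carrier (obj D i) = {a \<oplus>\<^bsub>obj D i\<^esub> b | a b. a \<in> A i \<and> b \<in> B i}"
    have HA: "submodule L (A i) ((obj Y i)\<lparr>carrier := Dc i\<rparr>)" for i
    proof -
      have "submodule L (A i) (obj D i)" using H by blast
      thus ?thesis by (simp only: D_obj)
    qed
    have HB: "submodule L (B i) ((obj Y i)\<lparr>carrier := Dc i\<rparr>)" for i
    proof -
      have "submodule L (B i) (obj D i)" using H by blast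
      thus ?thesis by (simp only: D_obj)
    qed
    have ADi: "A i \<subseteq> Dc i" for i using HA[of i] unfolding submodule_def by simp
    have BDi: "B i \<subseteq> Dc i" for i using HB[of i] unfolding submodule_def by simp
    interpret cdec L n X Y f r A B
    proof (unfold_locales, goal_cases)
      case (1 i) show ?case by (rule submod_of_sub[OF rY D_sub HA])
    next case (2 i) show ?case by (rule submod_of_sub[OF rY D_sub HB])
    next case (3 i) show ?case by (rule ADi)
    next case (4 i) show ?case by (rule BDi)
    next case (5 i a)
      have "diff D i ` A i \<subseteq> A (i + 1)" using H by blast
      thus ?case using 5 ADi[of i] by (auto simp: D_diff)
    next case (6 i b)
      have "diff D i ` B i \<subseteq> B (i + 1)" using H by blast
      thus ?case using 6 BDi[of i] by (auto simp: D_diff)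
    next case (7 i)
      have "A i \<inter> B i = {\<zero>\<^bsub>obj D i\<^esub>}" using H by blast
      thus ?case by simp
    next case (8 i k)
      have e: "carrier (obj D i) = {a \<oplus>\<^bsub>obj D i\<^esub> b | a b. a \<in> A i \<and> b \<in> B i}" using H by blast
      have "k \<in> carrier (obj D i)" using 8 by simp
      hence "k \<in> {a \<oplus>\<^bsub>obj D i\<^esub> b | a b. a \<in> A i \<and> b \<in> B i}" using e by blast
      thus ?case by auto
    qed
    show "(\<forall>i. A i = {\<zero>\<^bsub>obj D i\<^esub>}) \<or> (\<forall>i. B i = {\<zero>\<^bsub>obj D i\<^esub>})"
    proof (rule ccontr)
      assume "\<not> ?thesis"
      hence nzA: "\<exists>i. A i \<noteq> {\<zero>\<^bsub>obj Y i\<^esub>}" and nzB: "\<exists>i. B i \<noteq> {\<zero>\<^bsub>obj Y i\<^esub>}" by simp_all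
      have "is_section L X Y f" by (rule sec_of_two[OF irr nzA nzB])
      thus False using nsec by simp
    qed
  qed
  show ?thesis using T.inCnY[OF D_inCn] T.indecY[OF indD] by simp
qed

theorem theorem2p8:
  fixes R :: "'c ring" and phi :: "'c \<Rightarrow> 'r" and L :: "'r ring" and n :: nat
    and X :: "('a, 'r) cplx" and Y :: "('b, 'r) cplx" and f :: "int \<Rightarrow> 'a \<Rightarrow> 'b"
  assumes "artin_algebra R phi L"
    and "n \<ge> 2"
    and "in_Cn L n X" and "in_Cn L n Y"
    and "irreducible L n X Y f"
    and "indecomposable L X \<or> indecomposable L Y"
  shows "(type_ret L n X Y f \<longrightarrow>
            in_Cn L n (ker_cplx X Y f) \<and> indecomposable L (ker_cplx X Y f))
       \<and> (type_sec L n X Y f \<longrightarrow>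
            in_Cn L n (coker_cplx X Y f) \<and> indecomposable L (coker_cplx X Y f))"
  using part_a part_b by blast

end
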